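(* Let $\Xi\to C$ be a sequent without stoups (regarded, in the context of $\mathcal{M}'_{2018}$, as a sequent all of whose stoups are empty). Then the following are equivalent: (1) $\Xi\to C$ is derivable in $\mathcal{F}_{2018}$ without cut; (2) $\Xi\to C$ is derivable in $\mathcal{F}_{2018}$, possibly using cut; (3) $\Xi\to C$ is derivable in $\mathcal{M}'_{2018}$ extended with the stoup cut rule; (4) $\Xi\to C$ is derivable in $\mathcal{M}'_{2018}$ (without cut). The same equivalence holds with $\mathcal{F}^{-}_{2018}$ in place of $\mathcal{F}_{2018}$ and $\mathcal{M}'^{-}_{2018}$ in place of $\mathcal{M}'_{2018}$.
   Context: Formulae are built from a countable set of variables and $\mathbf1$ by $\backslash,/,\cdot,\wedge,\vee$ and the unary $\langle\rangle$, $[]^{-1}$, $!$. Calculi with stoups: a stoup is a finite multiset of formulae ($\varnothing$ empty); a tree term is a formula or $[\Xi]$; a meta-formula is $\zeta;\Gamma$ ($\zeta$ a stoup, $\Gamma$ a finite sequence of tree terms, empty $\Lambda$), $\varnothing;\Gamma$ written $\Gamma$; comma is concatenation / multiset union; sequents $\Xi\to C$; $\Xi(\Theta)$ designates an occurrence of a meta-formula $\Theta$ which is $\Xi$ itself or the content of a bracket $[\Theta]$ at any depth. Rules of $\mathcal{M}'_{2018}$: axioms $A\to A$, $\Lambda\to\mathbf1$; ($/L$) from $\zeta_1;\Gamma\to B$ and $\Xi(\zeta_2;\Delta_1,C,\Delta_2)\to D$ infer $\Xi(\zeta_1,\zeta_2;\Delta_1,C/B,\Gamma,\Delta_2)\to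 D$; ($/R$) from $\zeta;\Gamma,B\to C$ infer $\zeta;\Gamma\to C/B$; ($\backslash L$) from $\zeta_1;\Gamma\to A$ and $\Xi(\zeta_2;\Delta_1,C,\Delta_2)\to D$ infer $\Xi(\zeta_1,\zeta_2;\Delta_1,\Gamma,A\backslash C,\Delta_2)\to D$; ($\backslash R$) from $\zeta;A,\Gamma\to C$ infer $\zeta;\Gamma\to A\backslash C$; ($\cdot L$) from $\Xi(\zeta;\Delta_1,A,B,\Delta_2)\to D$ infer $\Xi(\zeta;\Delta_1,A\cdot B,\Delta_2)\to D$; ($\cdot R$) from $\zeta_1;\Delta\to A$, $\zeta_2;\Gamma\to B$ infer $\zeta_1,\zeta_2;\Delta,\Gamma\to A\cdot B$; ($\mathbf1L$) from $\Xi(\zeta;\Delta_1,\Delta_2)\to A$ infer $\Xi(\zeta;\Delta_1,\mathbf1,\Delta_2)\to A$; ($\vee L$) from $\Xi(\zeta;\Delta_1,A_1,\Delta_2)\to C$ and $\Xi(\zeta;\Delta_1,A_2,\Delta_2)\to C$ infer $\Xi(\zeta;\Delta_1,A_1\vee A_2,\Delta_2)\to C$; ($\vee R_i$) from $\Xi\to A_i$ infer $\Xi\to A_1\vee A_2$; ($\wedge L_i$) from $\Xi(\zeta;\Delta_1,A_i,\Delta_2)\to C$ infer $\Xi(\zeta;\Delta_1,A_1\wedge A_2,\Delta_2)\to C$; ($\wedge R$) from $\Xi\to A_1$ and $\Xi\to A_2$ infer $\Xi\to A_1\wedge A_2$; ($[]^{-1}L$) from $\Xi(\zeta;\Delta_1,A,\Delta_2)\to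 B$ infer $\Xi(\zeta;\Delta_1,[[]^{-1}A],\Delta_2)\to B$; ($[]^{-1}R$) from $[\Xi]\to A$ infer $\Xi\to[]^{-1}A$; ($\langle\rangle L$) from $\Xi(\zeta;\Delta_1,[A],\Delta_2)\to B$ infer $\Xi(\zeta;\Delta_1,\langle\rangle A,\Delta_2)\to B$; ($\langle\rangle R$) from $\Xi\to A$ infer $[\Xi]\to\langle\rangle A$; ($!L$) from $\Xi(\zeta,A;\Gamma_1,\Gamma_2)\to B$ infer $\Xi(\zeta;\Gamma_1,!A,\Gamma_2)\to B$; ($!P$) from $\Xi(\zeta;\Gamma_1,A,\Gamma_2)\to B$ infer $\Xi(\zeta,A;\Gamma_1,\Gamma_2)\to B$; ($!R'$) from $A;\Lambda\to B$ infer $A;\Lambda\to!B$; ($!C'$) from $\Xi(\zeta,A;\Gamma_1,[\zeta',A;\Gamma_2],\Gamma_3)\to B$ infer $\Xi(\zeta,A;\Gamma_1,[[\zeta';\Gamma_2]],\Gamma_3)\to B$. $\mathcal{M}'^{-}_{2018}$ is $\mathcal{M}'_{2018}$ restricted to formulae without $\mathbf1$, without $\Lambda\to\mathbf1$ and $\mathbf1L$, with $\backslash R,/R$ only if $\Gamma\ne\Lambda$ or $\zeta\ne\varnothing$, and $!C'$ only if $\Gamma_2\ne\Lambda$ or $\zeta'\neq\varnothing$. The stoup cut rule is: from $\xi;\Pi\to A$ and $\Xi(\zeta;\Gamma_1,A,\Gamma_2)\to C$ infer $\Xi(\xi,\zeta;\Gamma_1,\Pi,\Gamma_2)\to C$.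 Stoup-free calculi: meta-formulae are finite sequences of tree terms (all stoups empty); rules of $\mathcal{F}_{2018}$ are the stoup-free versions of the rules above other than $!L,!P,!R',!C'$ (drop all stoups), together with ($!L$) from $\Xi(\Delta_1,A,\Delta_2)\to C$ infer $\Xi(\Delta_1,!A,\Delta_2)\to C$; ($!P_1$) from $\Xi(\Delta_1,!A,\Phi,\Delta_2)\to C$ infer $\Xi(\Delta_1,\Phi,!A,\Delta_2)\to C$; ($!P_2$) the converse; ($!R$) from $!A\to B$ infer $!A\to!B$; ($!C$) from $\Xi(!A,\Gamma_1,[!A,\Gamma_2],\Gamma_3)\to C$ infer $\Xi(!A,\Gamma_1,[[\Gamma_2]],\Gamma_3)\to C$; and the cut rule: from $\Pi\to A$ and $\Xi(\Gamma_1,A,\Gamma_2)\to C$ infer $\Xi(\Gamma_1,\Pi,\Gamma_2)\to C$. $\mathcal{F}^{-}_{2018}$ is $\mathcal{F}_{2018}$ restricted to formulae without $\mathbf1$, without $\Lambda\to\mathbf1$ and $\mathbf1L$, with $\backslash R,/R$ only if $\Gamma\neq\Lambda$, and $!C$ only if $\Gamma_2\neq\Lambda$. *)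

theory Defs
  imports Main "HOL-Library.Multiset"
begin

text \<open>Formulae built from variables and One by the binary connectives
  Under A C (written A\C), Over C B (written C/B), Prod (product), And, Or
  and the unary Dia (angle brackets), Box (bracket inverse) and Bang (exponential).\<close>

datatype formula =
    Var nat
  | One
  | Under formula formula
  | Over formula formula
  | Prod formula formula
  | And formula formula
  | Or formula formula
  | Dia formula
  | Box formula
  | Bang formula

type_synonym stoup = "formula multiset"

datatype tterm = Fm formula | Br "stoup \<times> tterm list"

type_synonym meta = "stoup \<times> tterm list"

type_synonym sequent = "meta \<times> formula"

text \<open>Contexts with one distinguished meta-formula occurrence (the hole):
  either the whole meta-formula, or the content of a bracket at any depth.\<close>

datatype ctx = Hole | CBr stoup "tterm list" ctx "tterm list"

fun fill :: "ctx \<Rightarrow> meta \<Rightarrow> meta" where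
  "fill Hole T = T"
| "fill (CBr z G1 c G2) T = (z, G1 @ [Br (fill c T)] @ G2)"

fun sfree_t :: "tterm \<Rightarrow> bool" where
  "sfree_t (Fm A) = True"
| "sfree_t (Br (z, G)) = (z = {#} \<and> (\<forall>t\<in>set G. sfree_t t))"

definition sfree :: "meta \<Rightarrow> bool" where
  "sfree M = (fst M = {#} \<and> (\<forall>t\<in>set (snd M). sfree_t t))"

fun onefree :: "formula \<Rightarrow> bool" where
  "onefree (Var n) = True"
| "onefree One = False"
| "onefree (Under A B) = (onefree A \<and> onefree B)"
| "onefree (Over A B) = (onefree A \<and> onefree B)"
| "onefree (Prod A B) = (onefree A \<and> onefree B)"
| "onefree (And A B) = (onefree A \<and> onefree B)"
| "onefree (Or A B) = (onefree A \<and> onefree B)"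
| "onefree (Dia A) = onefree A"
| "onefree (Box A) = onefree A"
| "onefree (Bang A) = onefree A"

fun onefree_t :: "tterm \<Rightarrow> bool" where
  "onefree_t (Fm A) = onefree A"
| "onefree_t (Br (z, G)) = ((\<forall>A\<in>#z. onefree A) \<and> (\<forall>t\<in>set G. onefree_t t))"

definition onefree_seq :: "sequent \<Rightarrow> bool" where
  "onefree_seq S = (case S of ((z, G), C) \<Rightarrow>
      (\<forall>A\<in>#z. onefree A) \<and> (\<forall>t\<in>set G. onefree_t t) \<and> onefree C)"

text \<open>Flag r = True selects the restricted calculus M'-2018
  (side conditions on slash-right rules and contraction, no One rules);
  flag c = True adds the stoup cut rule.\<close>

inductive mrule :: "bool \<Rightarrow> bool \<Rightarrow> sequent list \<Rightarrow> sequent \<Rightarrow> bool" for r c where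
  m_ax: "mrule r c [] (({#}, [Fm A]), A)"
| m_oneR: "\<not> r \<Longrightarrow> mrule r c [] (({#}, []), One)"
| m_overL: "mrule r c [((z1, G), B), (fill X (z2, D1 @ [Fm C] @ D2), D)]
      (fill X (z1 + z2, D1 @ [Fm (Over C B)] @ G @ D2), D)"
| m_overR: "(r \<longrightarrow> G \<noteq> [] \<or> z \<noteq> {#}) \<Longrightarrow>
      mrule r c [((z, G @ [Fm B]), C)] ((z, G), Over C B)"
| m_underL: "mrule r c [((z1, G), A), (fill X (z2, D1 @ [Fm C] @ D2), D)]
      (fill X (z1 + z2, D1 @ G @ [Fm (Under A C)] @ D2), D)"
| m_underR: "(r \<longrightarrow> G \<noteq> [] \<or> z \<noteq> {#}) \<Longrightarrow>
      mrule r c [((z, Fm A # G), C)] ((z, G), Under A C)"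
| m_prodL: "mrule r c [(fill X (z, D1 @ [Fm A, Fm B] @ D2), D)]
      (fill X (z, D1 @ [Fm (Prod A B)] @ D2), D)"
| m_prodR: "mrule r c [((z1, D), A), ((z2, G), B)] ((z1 + z2, D @ G), Prod A B)"
| m_oneL: "\<not> r \<Longrightarrow> mrule r c [(fill X (z, D1 @ D2), A)]
      (fill X (z, D1 @ [Fm One] @ D2), A)"
| m_orL: "mrule r c [(fill X (z, D1 @ [Fm A1] @ D2), C), (fill X (z, D1 @ [Fm A2] @ D2), C)]
      (fill X (z, D1 @ [Fm (Or A1 A2)] @ D2), C)"
| m_orR1: "mrule r c [(Y, A1)] (Y, Or A1 A2)"
| m_orR2: "mrule r c [(Y, A2)] (Y, Or A1 A2)"
| m_andL1: "mrule r c [(fill X (z, D1 @ [Fm A1] @ D2), C)]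
      (fill X (z, D1 @ [Fm (And A1 A2)] @ D2), C)"
| m_andL2: "mrule r c [(fill X (z, D1 @ [Fm A2] @ D2), C)]
      (fill X (z, D1 @ [Fm (And A1 A2)] @ D2), C)"
| m_andR: "mrule r c [(Y, A1), (Y, A2)] (Y, And A1 A2)"
| m_boxL: "mrule r c [(fill X (z, D1 @ [Fm A] @ D2), B)]
      (fill X (z, D1 @ [Br ({#}, [Fm (Box A)])] @ D2), B)"
| m_boxR: "mrule r c [(({#}, [Br Y]), A)] (Y, Box A)"
| m_diaL: "mrule r c [(fill X (z, D1 @ [Br ({#}, [Fm A])] @ D2), B)]
      (fill X (z, D1 @ [Fm (Dia A)] @ D2), B)"
| m_diaR: "mrule r c [(Y, A)] (({#}, [Br Y]), Dia A)"
| m_bangL: "mrule r c [(fill X (z + {#A#}, G1 @ G2), B)]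
      (fill X (z, G1 @ [Fm (Bang A)] @ G2), B)"
| m_bangP: "mrule r c [(fill X (z, G1 @ [Fm A] @ G2), B)]
      (fill X (z + {#A#}, G1 @ G2), B)"
| m_bangR: "mrule r c [(({#A#}, []), B)] (({#A#}, []), Bang B)"
| m_bangC: "(r \<longrightarrow> G2 \<noteq> [] \<or> z' \<noteq> {#}) \<Longrightarrow>
      mrule r c [(fill X (z + {#A#}, G1 @ [Br (z' + {#A#}, G2)] @ G3), B)]
      (fill X (z + {#A#}, G1 @ [Br ({#}, [Br (z', G2)])] @ G3), B)"
| m_cut: "c \<Longrightarrow> mrule r c [((xi, P), A), (fill X (z, G1 @ [Fm A] @ G2), C)]
      (fill X (xi + z, G1 @ P @ G2), C)"

inductive mder :: "bool \<Rightarrow> bool \<Rightarrow> sequent \<Rightarrow> bool" for r c where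
  "mrule r c ps s \<Longrightarrow> (\<forall>p\<in>set ps. mder r c p) \<Longrightarrow> (r \<longrightarrow> onefree_seq s) \<Longrightarrow> mder r c s"

inductive frule :: "bool \<Rightarrow> bool \<Rightarrow> sequent list \<Rightarrow> sequent \<Rightarrow> bool" for r c where
  f_ax: "frule r c [] (({#}, [Fm A]), A)"
| f_oneR: "\<not> r \<Longrightarrow> frule r c [] (({#}, []), One)"
| f_overL: "frule r c [(({#}, G), B), (fill X ({#}, D1 @ [Fm C] @ D2), D)]
      (fill X ({#}, D1 @ [Fm (Over C B)] @ G @ D2), D)"
| f_overR: "(r \<longrightarrow> G \<noteq> []) \<Longrightarrow>
      frule r c [(({#}, G @ [Fm B]), C)] (({#}, G), Over C B)"
| f_underL: "frule r c [(({#}, G), A), (fill X ({#}, D1 @ [Fm C] @ D2), D)]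
      (fill X ({#}, D1 @ G @ [Fm (Under A C)] @ D2), D)"
| f_underR: "(r \<longrightarrow> G \<noteq> []) \<Longrightarrow>
      frule r c [(({#}, Fm A # G), C)] (({#}, G), Under A C)"
| f_prodL: "frule r c [(fill X ({#}, D1 @ [Fm A, Fm B] @ D2), D)]
      (fill X ({#}, D1 @ [Fm (Prod A B)] @ D2), D)"
| f_prodR: "frule r c [(({#}, D), A), (({#}, G), B)] (({#}, D @ G), Prod A B)"
| f_oneL: "\<not> r \<Longrightarrow> frule r c [(fill X ({#}, D1 @ D2), A)]
      (fill X ({#}, D1 @ [Fm One] @ D2), A)"
| f_orL: "frule r c [(fill X ({#}, D1 @ [Fm A1] @ D2), C), (fill X ({#}, D1 @ [Fm A2] @ D2), C)]
      (fill X ({#}, D1 @ [Fm (Or A1 A2)] @ D2), C)"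
| f_orR1: "frule r c [(Y, A1)] (Y, Or A1 A2)"
| f_orR2: "frule r c [(Y, A2)] (Y, Or A1 A2)"
| f_andL1: "frule r c [(fill X ({#}, D1 @ [Fm A1] @ D2), C)]
      (fill X ({#}, D1 @ [Fm (And A1 A2)] @ D2), C)"
| f_andL2: "frule r c [(fill X ({#}, D1 @ [Fm A2] @ D2), C)]
      (fill X ({#}, D1 @ [Fm (And A1 A2)] @ D2), C)"
| f_andR: "frule r c [(Y, A1), (Y, A2)] (Y, And A1 A2)"
| f_boxL: "frule r c [(fill X ({#}, D1 @ [Fm A] @ D2), B)]
      (fill X ({#}, D1 @ [Br ({#}, [Fm (Box A)])] @ D2), B)"
| f_boxR: "frule r c [(({#}, [Br Y]), A)] (Y, Box A)"
| f_diaL: "frule r c [(fill X ({#}, D1 @ [Br ({#}, [Fm A])] @ D2), B)]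
      (fill X ({#}, D1 @ [Fm (Dia A)] @ D2), B)"
| f_diaR: "frule r c [(Y, A)] (({#}, [Br Y]), Dia A)"
| f_bangL: "frule r c [(fill X ({#}, D1 @ [Fm A] @ D2), C)]
      (fill X ({#}, D1 @ [Fm (Bang A)] @ D2), C)"
| f_bangP1: "frule r c [(fill X ({#}, D1 @ [Fm (Bang A)] @ Phi @ D2), C)]
      (fill X ({#}, D1 @ Phi @ [Fm (Bang A)] @ D2), C)"
| f_bangP2: "frule r c [(fill X ({#}, D1 @ Phi @ [Fm (Bang A)] @ D2), C)]
      (fill X ({#}, D1 @ [Fm (Bang A)] @ Phi @ D2), C)"
| f_bangR: "frule r c [(({#}, [Fm (Bang A)]), B)] (({#}, [Fm (Bang A)]), Bang B)"
| f_bangC: "(r \<longrightarrow> G2 \<noteq> []) \<Longrightarrow>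
      frule r c [(fill X ({#}, Fm (Bang A) # G1 @ [Br ({#}, Fm (Bang A) # G2)] @ G3), C)]
      (fill X ({#}, Fm (Bang A) # G1 @ [Br ({#}, [Br ({#}, G2)])] @ G3), C)"
| f_cut: "c \<Longrightarrow> frule r c [(({#}, P), A), (fill X ({#}, G1 @ [Fm A] @ G2), C)]
      (fill X ({#}, G1 @ P @ G2), C)"

inductive fder :: "bool \<Rightarrow> bool \<Rightarrow> sequent \<Rightarrow> bool" for r c where
  "frule r c ps s \<Longrightarrow> (\<forall>p\<in>set ps. fder r c p) \<Longrightarrow> sfree (fst s) \<Longrightarrow>
   (r \<longrightarrow> onefree_seq s) \<Longrightarrow> fder r c s"

end

theory Submission
  imports Defs
begin

lemma mI: "mrule r c ps s \<Longrightarrow> (\<And>p. p \<in> set ps \<Longrightarrow> mder r c p) \<Longrightarrow> (r \<Longrightarrow> onefree_seq s) \<Longrightarrow> mder r c s"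
  by (rule mder.intros) auto

lemma mder_of: "mder r c s \<Longrightarrow> r \<Longrightarrow> onefree_seq s"
  by (induction rule: mder.induct) auto

definition ofm :: "meta \<Rightarrow> bool" where
  "ofm M = ((\<forall>A\<in>#fst M. onefree A) \<and> (\<forall>t\<in>set (snd M). onefree_t t))"

lemma onefree_seq_ofm: "onefree_seq (M, C) = (ofm M \<and> onefree C)"
  by (cases M) (auto simp: onefree_seq_def ofm_def)

lemma onefree_t_Br: "onefree_t (Br N) = ofm N"
  by (cases N) (auto simp: ofm_def)

lemma ofm_pair: "ofm (z, L) = ((\<forall>A\<in>#z. onefree A) \<and> (\<forall>t\<in>set L. onefree_t t))"
  by (simp add: ofm_def)

fun ofx :: "ctx \<Rightarrow> bool" where
  "ofx Hole = True"
| "ofx (CBr z G1 c G2) = ((\<forall>A\<in>#z. onefree A) \<and> (\<forall>t\<in>set G1. onefree_t t) \<and> ofx c \<and> (\<forall>t\<in>set G2. onefree_t t))"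

lemma ofm_fill: "ofm (fill X N) = (ofx X \<and> ofm N)"
  by (induction X) (auto simp: ofm_pair onefree_t_Br)

fun cat :: "ctx \<Rightarrow> ctx \<Rightarrow> ctx" where
  "cat Hole Y = Y"
| "cat (CBr z G1 c G2) Y = CBr z G1 (cat c Y) G2"

lemma fill_cat: "fill (cat X Y) N = fill X (fill Y N)"
  by (induction X) auto

lemma split3: "L1 @ L2 = G1 @ x # G2 \<longleftrightarrow>
   (\<exists>u. L1 = G1 @ x # u \<and> G2 = u @ L2) \<or> (\<exists>u. L2 = u @ x # G2 \<and> G1 = L1 @ u)"
  by (auto simp: append_eq_append_conv2 Cons_eq_append_conv append_eq_Cons_conv)

section \<open>Cut replacement relation\<close>

inductive rep :: "formula \<Rightarrow> meta \<Rightarrow> meta \<Rightarrow> meta \<Rightarrow> bool" for A M where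
  rep_here: "rep A M (z, G1 @ Fm A # G2) (fst M + z, G1 @ snd M @ G2)"
| rep_deep: "rep A M N N' \<Longrightarrow> rep A M (z, G1 @ Br N # G2) (z, G1 @ Br N' # G2)"

lemma rep_hereI: "L = Ga @ Fm A # Gb \<Longrightarrow> L' = Ga @ snd M @ Gb \<Longrightarrow> w' = fst M + w \<Longrightarrow> rep A M (w, L) (w', L')"
  by (simp add: rep_here)

lemma rep_deepI: "rep A M N N' \<Longrightarrow> L = Ga @ Br N # Gb \<Longrightarrow> L' = Ga @ Br N' # Gb \<Longrightarrow> rep A M (w, L) (w, L')"
  by (simp add: rep_deep)

definition repL :: "formula \<Rightarrow> meta \<Rightarrow> stoup \<Rightarrow> tterm list \<Rightarrow> tterm list \<Rightarrow> bool" where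
  "repL A M d L L' = (\<forall>w. rep A M (w, L) (d + w, L'))"

lemma rep_list: "rep A M (w, L) N \<Longrightarrow> \<exists>d L'. N = (d + w, L') \<and> repL A M d L L'"
  apply (erule rep.cases)
  subgoal for z G1 G2
    by (rule exI[of _ "fst M"], rule exI[of _ "G1 @ snd M @ G2"]) (simp add: repL_def rep_here)
  subgoal for N N' z G1 G2
    by (rule exI[of _ "{#}"], rule exI[of _ "G1 @ Br N' # G2"]) (simp add: repL_def rep_deep)
  done

lemma repL_appI: "repL A M d L1 L1' \<Longrightarrow> repL A M d (L0 @ L1 @ L2) (L0 @ L1' @ L2)"
  unfolding repL_def
proof
  fix w assume "\<forall>w. rep A M (w, L1) (d + w, L1')"
  then have "rep A M (w, L1) (d + w, L1')" by blast
  then show "rep A M (w, L0 @ L1 @ L2) (d + w, L0 @ L1' @ L2)"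
    apply (rule rep.cases)
    subgoal for z G1 G2
      by (rule rep_hereI[where Ga="L0 @ G1" and Gb="G2 @ L2"]) auto
    subgoal for N N' z G1 G2
      apply (subgoal_tac "d = {#}")
       apply simp
       apply (rule rep_deepI[where Ga="L0 @ G1" and Gb="G2 @ L2"])
         apply simp_all
      done
    done
qed

lemma repL_app: "repL A M d (L1 @ L2) L' \<Longrightarrow>
   (\<exists>L1'. L' = L1' @ L2 \<and> repL A M d L1 L1') \<or> (\<exists>L2'. L' = L1 @ L2' \<and> repL A M d L2 L2')"
proof -
  assume a: "repL A M d (L1 @ L2) L'"
  then have "rep A M ({#}, L1 @ L2) (d, L')" using a[unfolded repL_def, rule_format, of "{#}"] by simp
  then show ?thesis
  proof (rule rep.cases)
    fix z G1 G2
    assume h: "({#}, L1 @ L2) = (z, G1 @ Fm A # G2)" "(d, L') = (fst M + z, G1 @ snd M @ G2)"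
    then have "L1 @ L2 = G1 @ Fm A # G2" by simp
    then show ?thesis unfolding split3
    proof
      assume "\<exists>u. L1 = G1 @ Fm A # u \<and> G2 = u @ L2"
      then obtain u where "L1 = G1 @ Fm A # u" "G2 = u @ L2" by blast
      then show ?thesis using h by (intro disjI1 exI[of _ "G1 @ snd M @ u"]) (auto simp: repL_def intro!: rep_hereI[where Ga=G1 and Gb=u])
    next
      assume "\<exists>u. L2 = u @ Fm A # G2 \<and> G1 = L1 @ u"
      then obtain u where "L2 = u @ Fm A # G2" "G1 = L1 @ u" by blast
      then show ?thesis using h by (intro disjI2 exI[of _ "u @ snd M @ G2"]) (auto simp: repL_def intro!: rep_hereI[where Ga=u and Gb=G2])
    qed
  next
    fix N N' z G1 G2
    assume h: "({#}, L1 @ L2) = (z, G1 @ Br N # G2)" "(d, L') = (z, G1 @ Br N' # G2)" "rep A M N N'"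
    then have "L1 @ L2 = G1 @ Br N # G2" by simp
    then show ?thesis unfolding split3
    proof
      assume "\<exists>u. L1 = G1 @ Br N # u \<and> G2 = u @ L2"
      then obtain u where "L1 = G1 @ Br N # u" "G2 = u @ L2" by blast
      then show ?thesis using h by (intro disjI1 exI[of _ "G1 @ Br N' # u"]) (auto simp: repL_def intro!: rep_deepI[where Ga=G1 and Gb=u])
    next
      assume "\<exists>u. L2 = u @ Br N # G2 \<and> G1 = L1 @ u"
      then obtain u where "L2 = u @ Br N # G2" "G1 = L1 @ u" by blast
      then show ?thesis using h by (intro disjI2 exI[of _ "u @ Br N' # G2"]) (auto simp: repL_def intro!: rep_deepI[where Ga=u and Gb=G2])
    qed
  qed
qed

lemma rep_Nil: "rep A M (w, []) N \<Longrightarrow> False"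
  by (erule rep.cases) auto

lemma repL_Nil: "repL A M d [] L \<Longrightarrow> False"
  unfolding repL_def using rep_Nil by blast

lemma repL_Fm: "repL A M d [Fm B] L \<Longrightarrow> B = A \<and> d = fst M \<and> L = snd M"
proof -
  assume "repL A M d [Fm B] L"
  then have "rep A M ({#}, [Fm B]) (d, L)" unfolding repL_def by (drule_tac x="{#}" in spec) simp
  then show ?thesis
  proof (rule rep.cases)
    fix z G1 G2 assume h: "({#}, [Fm B]) = (z, G1 @ Fm A # G2)" "(d, L) = (fst M + z, G1 @ snd M @ G2)"
    then have "[Fm B] = G1 @ Fm A # G2" by simp
    then have "G1 = [] \<and> G2 = [] \<and> B = A" by (cases G1) auto
    then show ?thesis using h by auto
  next
    fix N1 N' z G1 G2 assume h: "({#}, [Fm B]) = (z, G1 @ Br N1 # G2)"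
    then have "[Fm B] = G1 @ Br N1 # G2" by simp
    then show ?thesis by (cases G1) auto
  qed
qed

lemma repL_Br: "repL A M d [Br N] L \<Longrightarrow> d = {#} \<and> (\<exists>N'. rep A M N N' \<and> L = [Br N'])"
proof -
  assume "repL A M d [Br N] L"
  then have "rep A M ({#}, [Br N]) (d, L)" unfolding repL_def by (drule_tac x="{#}" in spec) simp
  then show ?thesis
  proof (rule rep.cases)
    fix z G1 G2 assume "({#}, [Br N]) = (z, G1 @ Fm A # G2)"
    then have "[Br N] = G1 @ Fm A # G2" by simp
    then show ?thesis by (cases G1) auto
  next
    fix N1 N' z G1 G2 assume h: "({#}, [Br N]) = (z, G1 @ Br N1 # G2)" "(d, L) = (z, G1 @ Br N' # G2)" "rep A M N1 N'"
    then have "[Br N] = G1 @ Br N1 # G2" by simp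
    then have "G1 = [] \<and> G2 = [] \<and> N1 = N" by (cases G1) auto
    then show ?thesis using h by blast
  qed
qed

lemma repL_BrI: "rep A M N N' \<Longrightarrow> repL A M {#} [Br N] [Br N']"
  unfolding repL_def using rep_deep[of A M N N' _ "[]" "[]"] by simp

lemma repL_FmI: "repL A M (fst M) [Fm A] (snd M)"
  unfolding repL_def using rep_here[of A M _ "[]" "[]"] by simp

lemma repL_cons: "repL A M d (x # L) L' \<Longrightarrow>
   (\<exists>L1'. L' = L1' @ L \<and> repL A M d [x] L1') \<or> (\<exists>L2'. L' = x # L2' \<and> repL A M d L L2')"
  using repL_app[of A M d "[x]" L L'] by simp

lemma rep_fill_in: "rep A M N N' \<Longrightarrow> rep A M (fill X N) (fill X N')"
  by (induction X) (auto intro: rep_deep)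

lemma rep_fill_cut: "rep A M (fill X (z, G1 @ Fm A # G2)) (fill X (fst M + z, G1 @ snd M @ G2))"
  by (rule rep_fill_in) (rule rep_here)

lemma repL_rep: "repL A M d L L' \<Longrightarrow> rep A M (w, L) (d + w, L')"
  by (simp add: repL_def)

lemma rep_fill: "rep A M (fill X N) S' \<Longrightarrow>
   (\<exists>N'. rep A M N N' \<and> S' = fill X N') \<or>
   (\<exists>X'. S' = fill X' N \<and> (\<forall>N0. rep A M (fill X N0) (fill X' N0)))"
proof (induction X arbitrary: S')
  case Hole
  then have "rep A M N S' \<and> S' = fill Hole S'" by simp
  then show ?case by blast
next
  case (CBr z G1 c G2)
  from CBr.prems have "rep A M (z, G1 @ [Br (fill c N)] @ G2) S'" by simp
  from rep_list[OF this] obtain d L' where S': "S' = (d + z, L')"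
    and r: "repL A M d (G1 @ [Br (fill c N)] @ G2) L'" by blast
  from repL_app[OF r] show ?case
  proof
    assume "\<exists>L1'. L' = L1' @ [Br (fill c N)] @ G2 \<and> repL A M d G1 L1'"
    then obtain L1' where e: "L' = L1' @ [Br (fill c N)] @ G2" and r1: "repL A M d G1 L1'" by blast
    have "\<forall>N0. rep A M (fill (CBr z G1 c G2) N0) (fill (CBr (d + z) L1' c G2) N0)"
    proof
      fix N0 show "rep A M (fill (CBr z G1 c G2) N0) (fill (CBr (d + z) L1' c G2) N0)"
        using repL_appI[OF r1, of "[]" "[Br (fill c N0)] @ G2"] by (simp add: repL_def)
    qed
    moreover have "S' = fill (CBr (d + z) L1' c G2) N" using S' e by simp
    ultimately show ?thesis by blast
  next
    assume "\<exists>L2'. L' = G1 @ L2' \<and> repL A M d ([Br (fill c N)] @ G2) L2'"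
    then obtain L2' where L2': "L' = G1 @ L2'" and r2: "repL A M d ([Br (fill c N)] @ G2) L2'" by blast
    from repL_app[OF r2] show ?thesis
    proof
      assume "\<exists>L1'. L2' = L1' @ G2 \<and> repL A M d [Br (fill c N)] L1'"
      then obtain L1' where e2: "L2' = L1' @ G2" and r3: "repL A M d [Br (fill c N)] L1'" by blast
      from repL_Br[OF r3] obtain N' where d0: "d = {#}" and rr: "rep A M (fill c N) N'" and e3: "L1' = [Br N']" by blast
      from CBr.IH[OF rr] show ?thesis
      proof
        assume "\<exists>N''. rep A M N N'' \<and> N' = fill c N''"
        then obtain N'' where "rep A M N N''" "N' = fill c N''" by blast
        then have "rep A M N N'' \<and> S' = fill (CBr z G1 c G2) N''" using S' L2' e2 e3 d0 by simp
        then show ?thesis by blast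
      next
        assume "\<exists>X'. N' = fill X' N \<and> (\<forall>N0. rep A M (fill c N0) (fill X' N0))"
        then obtain X' where e4: "N' = fill X' N" and r4: "\<forall>N0. rep A M (fill c N0) (fill X' N0)" by blast
        have "\<forall>N0. rep A M (fill (CBr z G1 c G2) N0) (fill (CBr z G1 X' G2) N0)"
          using r4 rep_deep by simp
        moreover have "S' = fill (CBr z G1 X' G2) N" using S' L2' e2 e3 d0 e4 by simp
        ultimately show ?thesis by blast
      qed
    next
      assume "\<exists>L2a. L2' = [Br (fill c N)] @ L2a \<and> repL A M d G2 L2a"
      then obtain L2a where e: "L2' = [Br (fill c N)] @ L2a" and r1: "repL A M d G2 L2a" by blast
      have "\<forall>N0. rep A M (fill (CBr z G1 c G2) N0) (fill (CBr (d + z) G1 c L2a) N0)"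
      proof
        fix N0 show "rep A M (fill (CBr z G1 c G2) N0) (fill (CBr (d + z) G1 c L2a) N0)"
          using repL_appI[OF r1, of "G1 @ [Br (fill c N0)]" "[]"] by (simp add: repL_def)
      qed
      moreover have "S' = fill (CBr (d + z) G1 c L2a) N" using S' L2' e by simp
      ultimately show ?thesis by blast
    qed
  qed
qed

lemma rep_ctx: "rep A M (fill X (w, D1 @ Q @ D2)) S' \<Longrightarrow>
   (\<exists>X'. S' = fill X' (w, D1 @ Q @ D2) \<and> (\<forall>N0. rep A M (fill X N0) (fill X' N0)))
 \<or> (\<exists>d D1'. S' = fill X (d + w, D1' @ Q @ D2) \<and> repL A M d D1 D1')
 \<or> (\<exists>d D2'. S' = fill X (d + w, D1 @ Q @ D2') \<and> repL A M d D2 D2')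
 \<or> (\<exists>d Q'. S' = fill X (d + w, D1 @ Q' @ D2) \<and> repL A M d Q Q')"
proof -
  assume "rep A M (fill X (w, D1 @ Q @ D2)) S'"
  from rep_fill[OF this] show ?thesis
  proof
    assume "\<exists>N'. rep A M (w, D1 @ Q @ D2) N' \<and> S' = fill X N'"
    then obtain N' where r: "rep A M (w, D1 @ Q @ D2) N'" and S': "S' = fill X N'" by blast
    from rep_list[OF r] obtain d L' where N': "N' = (d + w, L')" and rl: "repL A M d (D1 @ Q @ D2) L'" by blast
    from repL_app[OF rl] show ?thesis
    proof
      assume "\<exists>L1'. L' = L1' @ Q @ D2 \<and> repL A M d D1 L1'"
      then show ?thesis using S' N' by blast
    next
      assume "\<exists>L2'. L' = D1 @ L2' \<and> repL A M d (Q @ D2) L2'"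
      then obtain L2' where a: "L' = D1 @ L2'" and b: "repL A M d (Q @ D2) L2'" by blast
      from repL_app[OF b] show ?thesis using a S' N' by blast
    qed
  next
    assume "\<exists>X'. S' = fill X' (w, D1 @ Q @ D2) \<and> (\<forall>N0. rep A M (fill X N0) (fill X' N0))"
    then show ?thesis by blast
  qed
qed

lemma rep_ctx_D1: "repL A M d D1 D1' \<Longrightarrow> rep A M (fill X (w, D1 @ Q @ D2)) (fill X (d + w, D1' @ Q @ D2))"
  by (rule rep_fill_in) (use repL_rep[OF repL_appI[of A M d D1 D1' "[]" "Q @ D2"]] in simp)

lemma rep_ctx_D2: "repL A M d D2 D2' \<Longrightarrow> rep A M (fill X (w, D1 @ Q @ D2)) (fill X (d + w, D1 @ Q @ D2'))"
  by (rule rep_fill_in) (use repL_rep[OF repL_appI[of A M d D2 D2' "D1 @ Q" "[]"]] in simp)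

lemma rep_same: "rep A ({#}, [Fm A]) S S' \<Longrightarrow> S' = S"
  by (induction rule: rep.induct) simp_all

lemma rep_ofm: "rep A M S S' \<Longrightarrow> ofm S \<Longrightarrow> ofm M \<Longrightarrow> ofm S'"
  apply (induction rule: rep.induct)
   apply (simp add: ofm_pair ofm_def[of M])
   apply blast
  apply (simp add: ofm_pair onefree_t_Br)
  done

lemma R_overL: "mder r c ((z1, G), B) \<Longrightarrow> mder r c (fill X (z2, D1 @ Fm C # D2), D) \<Longrightarrow>
  (r \<Longrightarrow> onefree_seq (fill X (z1 + z2, D1 @ Fm (Over C B) # G @ D2), D)) \<Longrightarrow>
  mder r c (fill X (z1 + z2, D1 @ Fm (Over C B) # G @ D2), D)"
  using mI[OF m_overL[of r c z1 G B X z2 D1 C D2 D]] by fastforce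

lemma R_underL: "mder r c ((z1, G), A) \<Longrightarrow> mder r c (fill X (z2, D1 @ Fm C # D2), D) \<Longrightarrow>
  (r \<Longrightarrow> onefree_seq (fill X (z1 + z2, D1 @ G @ Fm (Under A C) # D2), D)) \<Longrightarrow>
  mder r c (fill X (z1 + z2, D1 @ G @ Fm (Under A C) # D2), D)"
  using mI[OF m_underL[of r c z1 G A X z2 D1 C D2 D]] by fastforce

lemma R_prodL: "mder r c (fill X (z, D1 @ Fm A # Fm B # D2), D) \<Longrightarrow>
  (r \<Longrightarrow> onefree_seq (fill X (z, D1 @ Fm (Prod A B) # D2), D)) \<Longrightarrow>
  mder r c (fill X (z, D1 @ Fm (Prod A B) # D2), D)"
  using mI[OF m_prodL[of r c X z D1 A B D2 D]] by simp

lemma R_oneL: "\<not> r \<Longrightarrow> mder r c (fill X (z, D1 @ D2), A) \<Longrightarrow>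
  mder r c (fill X (z, D1 @ Fm One # D2), A)"
  using mI[OF m_oneL[of r c X z D1 D2 A]] by simp

lemma R_orL: "mder r c (fill X (z, D1 @ Fm A1 # D2), C) \<Longrightarrow> mder r c (fill X (z, D1 @ Fm A2 # D2), C) \<Longrightarrow>
  (r \<Longrightarrow> onefree_seq (fill X (z, D1 @ Fm (Or A1 A2) # D2), C)) \<Longrightarrow>
  mder r c (fill X (z, D1 @ Fm (Or A1 A2) # D2), C)"
  using mI[OF m_orL[of r c X z D1 A1 D2 C A2]] by fastforce

lemma R_andL1: "mder r c (fill X (z, D1 @ Fm A1 # D2), C) \<Longrightarrow>
  (r \<Longrightarrow> onefree_seq (fill X (z, D1 @ Fm (And A1 A2) # D2), C)) \<Longrightarrow>
  mder r c (fill X (z, D1 @ Fm (And A1 A2) # D2), C)"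
  using mI[OF m_andL1[of r c X z D1 A1 D2 C A2]] by simp

lemma R_andL2: "mder r c (fill X (z, D1 @ Fm A2 # D2), C) \<Longrightarrow>
  (r \<Longrightarrow> onefree_seq (fill X (z, D1 @ Fm (And A1 A2) # D2), C)) \<Longrightarrow>
  mder r c (fill X (z, D1 @ Fm (And A1 A2) # D2), C)"
  using mI[OF m_andL2[of r c X z D1 A2 D2 C A1]] by simp

lemma R_boxL: "mder r c (fill X (z, D1 @ Fm A # D2), B) \<Longrightarrow>
  (r \<Longrightarrow> onefree_seq (fill X (z, D1 @ Br ({#}, [Fm (Box A)]) # D2), B)) \<Longrightarrow>
  mder r c (fill X (z, D1 @ Br ({#}, [Fm (Box A)]) # D2), B)"
  using mI[OF m_boxL[of r c X z D1 A D2 B]] by simp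

lemma R_diaL: "mder r c (fill X (z, D1 @ Br ({#}, [Fm A]) # D2), B) \<Longrightarrow>
  (r \<Longrightarrow> onefree_seq (fill X (z, D1 @ Fm (Dia A) # D2), B)) \<Longrightarrow>
  mder r c (fill X (z, D1 @ Fm (Dia A) # D2), B)"
  using mI[OF m_diaL[of r c X z D1 A D2 B]] by simp

lemma R_bangL: "mder r c (fill X (z + {#A#}, G1 @ G2), B) \<Longrightarrow>
  (r \<Longrightarrow> onefree_seq (fill X (z, G1 @ Fm (Bang A) # G2), B)) \<Longrightarrow>
  mder r c (fill X (z, G1 @ Fm (Bang A) # G2), B)"
  using mI[OF m_bangL[of r c X z A G1 G2 B]] by simp

lemma R_bangP: "mder r c (fill X (z, G1 @ Fm A # G2), B) \<Longrightarrow>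
  (r \<Longrightarrow> onefree_seq (fill X (z + {#A#}, G1 @ G2), B)) \<Longrightarrow>
  mder r c (fill X (z + {#A#}, G1 @ G2), B)"
  using mI[OF m_bangP[of r c X z G1 A G2 B]] by simp

lemma R_bangC: "(r \<longrightarrow> G2 \<noteq> [] \<or> z' \<noteq> {#}) \<Longrightarrow>
  mder r c (fill X (z + {#A#}, G1 @ Br (z' + {#A#}, G2) # G3), B) \<Longrightarrow>
  (r \<Longrightarrow> onefree_seq (fill X (z + {#A#}, G1 @ Br ({#}, [Br (z', G2)]) # G3), B)) \<Longrightarrow>
  mder r c (fill X (z + {#A#}, G1 @ Br ({#}, [Br (z', G2)]) # G3), B)"
  using mI[OF m_bangC[of r G2 z' c X z A G1 G3 B]] by simp

lemma R_overR: "(r \<longrightarrow> G \<noteq> [] \<or> z \<noteq> {#}) \<Longrightarrow> mder r c ((z, G @ [Fm B]), C) \<Longrightarrow>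
  (r \<Longrightarrow> onefree_seq ((z, G), Over C B)) \<Longrightarrow> mder r c ((z, G), Over C B)"
  using mI[OF m_overR[of r G z c B C]] by simp

lemma R_underR: "(r \<longrightarrow> G \<noteq> [] \<or> z \<noteq> {#}) \<Longrightarrow> mder r c ((z, Fm A # G), C) \<Longrightarrow>
  (r \<Longrightarrow> onefree_seq ((z, G), Under A C)) \<Longrightarrow> mder r c ((z, G), Under A C)"
  using mI[OF m_underR[of r G z c A C]] by simp

lemma R_prodR: "mder r c ((z1, D), A) \<Longrightarrow> mder r c ((z2, G), B) \<Longrightarrow>
  (r \<Longrightarrow> onefree_seq ((z1 + z2, D @ G), Prod A B)) \<Longrightarrow> mder r c ((z1 + z2, D @ G), Prod A B)"
  using mI[OF m_prodR[of r c z1 D A z2 G B]] by fastforce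

lemma R_orR1: "mder r c (Y, A1) \<Longrightarrow> (r \<Longrightarrow> onefree_seq (Y, Or A1 A2)) \<Longrightarrow> mder r c (Y, Or A1 A2)"
  using mI[OF m_orR1[of r c Y A1 A2]] by simp

lemma R_orR2: "mder r c (Y, A2) \<Longrightarrow> (r \<Longrightarrow> onefree_seq (Y, Or A1 A2)) \<Longrightarrow> mder r c (Y, Or A1 A2)"
  using mI[OF m_orR2[of r c Y A2 A1]] by simp

lemma R_andR: "mder r c (Y, A1) \<Longrightarrow> mder r c (Y, A2) \<Longrightarrow> (r \<Longrightarrow> onefree_seq (Y, And A1 A2)) \<Longrightarrow> mder r c (Y, And A1 A2)"
  using mI[OF m_andR[of r c Y A1 A2]] by fastforce

lemma R_boxR: "mder r c (({#}, [Br Y]), A) \<Longrightarrow> (r \<Longrightarrow> onefree_seq (Y, Box A)) \<Longrightarrow> mder r c (Y, Box A)"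
  using mI[OF m_boxR[of r c Y A]] by simp

lemma R_diaR: "mder r c (Y, A) \<Longrightarrow> (r \<Longrightarrow> onefree_seq (({#}, [Br Y]), Dia A)) \<Longrightarrow> mder r c (({#}, [Br Y]), Dia A)"
  using mI[OF m_diaR[of r c Y A]] by simp

lemma R_bangR: "mder r c (({#A#}, []), B) \<Longrightarrow> (r \<Longrightarrow> onefree_seq (({#A#}, []), Bang B)) \<Longrightarrow> mder r c (({#A#}, []), Bang B)"
  using mI[OF m_bangR[of r c A B]] by simp

lemma R_axI: "(r \<Longrightarrow> onefree A) \<Longrightarrow> mder r c (({#}, [Fm A]), A)"
  using mI[OF m_ax[of r c A]] by (simp add: onefree_seq_def)

lemma R_cut: "c \<Longrightarrow> mder r c ((xi, P), A) \<Longrightarrow> mder r c (fill X (z, G1 @ Fm A # G2), C) \<Longrightarrow>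
  (r \<Longrightarrow> onefree_seq (fill X (xi + z, G1 @ P @ G2), C)) \<Longrightarrow> mder r c (fill X (xi + z, G1 @ P @ G2), C)"
  using mI[OF m_cut[of c r xi P A X z G1 G2 C]] by fastforce

section \<open>Non-emptiness invariant of the restricted calculus\<close>

fun ne_t :: "tterm \<Rightarrow> bool" where
  "ne_t (Fm A) = True"
| "ne_t (Br (z, G)) = ((z \<noteq> {#} \<or> G \<noteq> []) \<and> (\<forall>t\<in>set G. ne_t t))"

definition nem :: "meta \<Rightarrow> bool" where
  "nem M = ((fst M \<noteq> {#} \<or> snd M \<noteq> []) \<and> (\<forall>t\<in>set (snd M). ne_t t))"

lemma ne_t_Br: "ne_t (Br N) = nem N"
  by (cases N) (simp add: nem_def)

fun nex :: "ctx \<Rightarrow> bool" where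
  "nex Hole = True"
| "nex (CBr z G1 c G2) = ((\<forall>t\<in>set G1. ne_t t) \<and> nex c \<and> (\<forall>t\<in>set G2. ne_t t))"

lemma nem_fill: "nem (fill X N) = (nex X \<and> nem N)"
  by (induction X) (simp_all add: nem_def ne_t_Br, blast)

lemma ne_inv: "mder True c s \<Longrightarrow> nem (fst s)"
proof (induction rule: mder.induct)
  case (1 ps s)
  have IH: "\<forall>p\<in>set ps. nem (fst p)" using 1 by blast
  have "(\<forall>p\<in>set ps. nem (fst p)) \<longrightarrow> nem (fst s)" using 1(1)
    apply (cases rule: mrule.cases)
    apply (simp_all add: nem_fill)
    apply (simp_all add: nem_def ne_t_Br)
    apply blast+
    done
  then show ?case using IH by blast
qed

lemma repL_ne: "repL A M d L L' \<Longrightarrow> fst M \<noteq> {#} \<or> snd M \<noteq> [] \<Longrightarrow> L' \<noteq> [] \<or> d \<noteq> {#}"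
proof -
  assume a: "repL A M d L L'" and b: "fst M \<noteq> {#} \<or> snd M \<noteq> []"
  from a have "rep A M ({#}, L) (d, L')" unfolding repL_def by (drule_tac x="{#}" in spec) simp
  then show ?thesis
  proof (rule rep.cases)
    fix z G1 G2 assume "({#}, L) = (z, G1 @ Fm A # G2)" "(d, L') = (fst M + z, G1 @ snd M @ G2)"
    then show ?thesis using b by auto
  next
    fix N N' z G1 G2 assume "(d, L') = (z, G1 @ Br N' # G2)"
    then show ?thesis by auto
  qed
qed

lemma ctx_commute:
  assumes rp: "rep A M (fill X (s + w, D1 @ Q @ D2)) S'"
  and IH: "list_all (\<lambda>(d,Qi,Ci). \<forall>S''. rep A M (fill X (d + w, D1 @ Qi @ D2)) S'' \<longrightarrow> mder r False (S'', Ci)) Qs"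
  and rl: "\<And>X' w' D1' D2'. list_all (\<lambda>(d,Qi,Ci). mder r False (fill X' (d + w', D1' @ Qi @ D2'), Ci)) Qs \<Longrightarrow> S' = fill X' (s + w', D1' @ Q @ D2') \<Longrightarrow> mder r False (S', C)"
  and qc: "\<And>d Q'. repL A M d Q Q' \<Longrightarrow> S' = fill X (s + (d + w), D1 @ Q' @ D2) \<Longrightarrow> mder r False (S', C)"
  shows "mder r False (S', C)"
proof -
  from rep_ctx[OF rp] show ?thesis
  proof (elim disjE exE conjE)
    fix X' assume e: "S' = fill X' (s + w, D1 @ Q @ D2)" and h: "\<forall>N0. rep A M (fill X N0) (fill X' N0)"
    have "list_all (\<lambda>(d,Qi,Ci). mder r False (fill X' (d + w, D1 @ Qi @ D2), Ci)) Qs"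
      using IH h unfolding list_all_iff by fast
    then show ?thesis using rl e by blast
  next
    fix d D1' assume e: "S' = fill X (d + (s + w), D1' @ Q @ D2)" and h: "repL A M d D1 D1'"
    have "list_all (\<lambda>(di,Qi,Ci). mder r False (fill X (di + (d + w), D1' @ Qi @ D2), Ci)) Qs"
      unfolding list_all_iff
    proof (intro ballI, clarify)
      fix di Qi Ci assume "(di, Qi, Ci) \<in> set Qs"
      then have "\<forall>S''. rep A M (fill X (di + w, D1 @ Qi @ D2)) S'' \<longrightarrow> mder r False (S'', Ci)"
        using IH unfolding list_all_iff by fast
      moreover have "rep A M (fill X (di + w, D1 @ Qi @ D2)) (fill X (di + (d + w), D1' @ Qi @ D2))"
        using rep_ctx_D1[OF h, of X "di + w" Qi D2] by (simp add: ac_simps)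
      ultimately show "mder r False (fill X (di + (d + w), D1' @ Qi @ D2), Ci)" by blast
    qed
    moreover have "S' = fill X (s + (d + w), D1' @ Q @ D2)" using e by (simp add: ac_simps)
    ultimately show ?thesis using rl by blast
  next
    fix d D2' assume e: "S' = fill X (d + (s + w), D1 @ Q @ D2')" and h: "repL A M d D2 D2'"
    have "list_all (\<lambda>(di,Qi,Ci). mder r False (fill X (di + (d + w), D1 @ Qi @ D2'), Ci)) Qs"
      unfolding list_all_iff
    proof (intro ballI, clarify)
      fix di Qi Ci assume "(di, Qi, Ci) \<in> set Qs"
      then have "\<forall>S''. rep A M (fill X (di + w, D1 @ Qi @ D2)) S'' \<longrightarrow> mder r False (S'', Ci)"
        using IH unfolding list_all_iff by fast
      moreover have "rep A M (fill X (di + w, D1 @ Qi @ D2)) (fill X (di + (d + w), D1 @ Qi @ D2'))"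
        using rep_ctx_D2[OF h, of X "di + w" D1 Qi] by (simp add: ac_simps)
      ultimately show "mder r False (fill X (di + (d + w), D1 @ Qi @ D2'), Ci)" by blast
    qed
    moreover have "S' = fill X (s + (d + w), D1 @ Q @ D2')" using e by (simp add: ac_simps)
    ultimately show ?thesis using rl by blast
  next
    fix d Q' assume e: "S' = fill X (d + (s + w), D1 @ Q' @ D2)" and h: "repL A M d Q Q'"
    have "S' = fill X (s + (d + w), D1 @ Q' @ D2)" using e by (simp add: ac_simps)
    then show ?thesis using qc h by blast
  qed
qed

lemma rep_left: "rep A (fill Y M0) S S' \<Longrightarrow> \<exists>Y' z0 H1 H2. S' = fill Y' (fst M0 + z0, H1 @ snd M0 @ H2) \<and>
   (\<forall>M1. rep A (fill Y M1) S (fill Y' (fst M1 + z0, H1 @ snd M1 @ H2)))"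
proof (induction rule: rep.induct)
  case (rep_here z G1 G2)
  show ?case
  proof (cases Y)
    case Hole
    have "\<forall>M1. rep A (fill Y M1) (z, G1 @ Fm A # G2) (fill Hole (fst M1 + z, G1 @ snd M1 @ G2))"
    proof
      fix M1 show "rep A (fill Y M1) (z, G1 @ Fm A # G2) (fill Hole (fst M1 + z, G1 @ snd M1 @ G2))"
        using Hole rep.rep_here[of A "fill Y M1" z G1 G2] by simp
    qed
    moreover have "(fst (fill Y M0) + z, G1 @ snd (fill Y M0) @ G2) = fill Hole (fst M0 + z, G1 @ snd M0 @ G2)"
      using Hole by simp
    ultimately show ?thesis by blast
  next
    case (CBr u L c R)
    let ?Y = "CBr (u + z) (G1 @ L) c (R @ G2)"
    have "\<forall>M1. rep A (fill Y M1) (z, G1 @ Fm A # G2) (fill ?Y (fst M1 + {#}, [] @ snd M1 @ []))"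
    proof
      fix M1 show "rep A (fill Y M1) (z, G1 @ Fm A # G2) (fill ?Y (fst M1 + {#}, [] @ snd M1 @ []))"
        using rep.rep_here[of A "fill Y M1" z G1 G2] CBr by (simp add: ac_simps)
    qed
    moreover have "(fst (fill Y M0) + z, G1 @ snd (fill Y M0) @ G2) = fill ?Y (fst M0 + {#}, [] @ snd M0 @ [])"
      using CBr by (simp add: ac_simps)
    ultimately show ?thesis by blast
  qed
next
  case (rep_deep N N' z G1 G2)
  then obtain Y' z0 H1 H2 where e: "N' = fill Y' (fst M0 + z0, H1 @ snd M0 @ H2)"
    and h: "\<forall>M1. rep A (fill Y M1) N (fill Y' (fst M1 + z0, H1 @ snd M1 @ H2))" by blast
  have "\<forall>M1. rep A (fill Y M1) (z, G1 @ Br N # G2) (fill (CBr z G1 Y' G2) (fst M1 + z0, H1 @ snd M1 @ H2))"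
    using h rep.rep_deep by simp
  moreover have "(z, G1 @ Br N' # G2) = fill (CBr z G1 Y' G2) (fst M0 + z0, H1 @ snd M0 @ H2)"
    using e by simp
  ultimately show ?case by blast
qed

lemma left_commute:
  assumes rp: "rep A (fill Y (s + w, E1 @ Q @ E2)) S S'"
  and IH: "list_all (\<lambda>(d,Qi). \<forall>S''. rep A (fill Y (d + w, E1 @ Qi @ E2)) S S'' \<longrightarrow> mder r False (S'', C)) Qs"
  and rl: "\<And>X' w' D1' D2'. list_all (\<lambda>(d,Qi). mder r False (fill X' (d + w', D1' @ Qi @ D2'), C)) Qs \<Longrightarrow> S' = fill X' (s + w', D1' @ Q @ D2') \<Longrightarrow> mder r False (S', C)"
  shows "mder r False (S', C)"
proof -
  from rep_left[OF rp] obtain Y' z0 H1 H2 where e: "S' = fill Y' ((s + w) + z0, H1 @ (E1 @ Q @ E2) @ H2)"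
    and h: "\<forall>M1. rep A (fill Y M1) S (fill Y' (fst M1 + z0, H1 @ snd M1 @ H2))" by auto
  have "list_all (\<lambda>(d,Qi). mder r False (fill Y' (d + (w + z0), (H1 @ E1) @ Qi @ (E2 @ H2)), C)) Qs"
    unfolding list_all_iff
  proof (intro ballI, clarify)
    fix d Qi assume "(d, Qi) \<in> set Qs"
    then have "\<forall>S''. rep A (fill Y (d + w, E1 @ Qi @ E2)) S S'' \<longrightarrow> mder r False (S'', C)"
      using IH unfolding list_all_iff by fast
    moreover have "rep A (fill Y (d + w, E1 @ Qi @ E2)) S (fill Y' (d + (w + z0), (H1 @ E1) @ Qi @ (E2 @ H2)))"
      using h[rule_format, of "(d + w, E1 @ Qi @ E2)"] by (simp add: ac_simps)
    ultimately show "mder r False (fill Y' (d + (w + z0), (H1 @ E1) @ Qi @ (E2 @ H2)), C)" by blast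
  qed
  moreover have "S' = fill Y' (s + (w + z0), (H1 @ E1) @ Q @ (E2 @ H2))" using e by (simp add: ac_simps)
  ultimately show ?thesis using rl by blast
qed

section \<open>Stoup replacement\<close>

definition srs :: "formula \<Rightarrow> formula \<Rightarrow> stoup \<Rightarrow> stoup \<Rightarrow> bool" where
  "srs B A' w w' = (\<exists>z0 k. w = z0 + replicate_mset k B \<and> w' = z0 + replicate_mset k A')"

inductive srep :: "formula \<Rightarrow> formula \<Rightarrow> meta \<Rightarrow> meta \<Rightarrow> bool"
  and srepL :: "formula \<Rightarrow> formula \<Rightarrow> tterm list \<Rightarrow> tterm list \<Rightarrow> bool" for B A' where
  srep_I: "srs B A' w w' \<Longrightarrow> srepL B A' L L' \<Longrightarrow> srep B A' (w, L) (w', L')"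
| srepL_Nil: "srepL B A' [] []"
| srepL_Fm: "srepL B A' L L' \<Longrightarrow> srepL B A' (Fm F # L) (Fm F # L')"
| srepL_Br: "srep B A' N N' \<Longrightarrow> srepL B A' L L' \<Longrightarrow> srepL B A' (Br N # L) (Br N' # L')"

lemma srepL_Nil_iff: "srepL B A' [] L' = (L' = [])"
  by (auto elim: srep.cases srepL.cases intro: srepL_Nil)

lemma srepL_Fm_iff: "srepL B A' (Fm F # L) L' = (\<exists>L''. L' = Fm F # L'' \<and> srepL B A' L L'')"
  by (auto elim: srep.cases srepL.cases intro: srepL_Fm)

lemma srepL_Br_iff: "srepL B A' (Br N # L) L' = (\<exists>N' L''. L' = Br N' # L'' \<and> srep B A' N N' \<and> srepL B A' L L'')"
  by (auto elim: srep.cases srepL.cases intro: srepL_Br)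

lemma srep_pair_iff: "srep B A' (w, L) S = (\<exists>w' L'. S = (w', L') \<and> srs B A' w w' \<and> srepL B A' L L')"
  by (auto elim: srep.cases srepL.cases intro: srep_I)

lemma srepL_append_iff: "srepL B A' (L1 @ L2) L' = (\<exists>L1' L2'. L' = L1' @ L2' \<and> srepL B A' L1 L1' \<and> srepL B A' L2 L2')"
proof (induction L1 arbitrary: L')
  case Nil
  then show ?case by (simp add: srepL_Nil_iff)
next
  case (Cons t L1)
  show ?case
  proof (cases t)
    case (Fm F)
    show ?thesis unfolding Fm append_Cons srepL_Fm_iff Cons.IH
    proof
      assume "\<exists>L''. L' = Fm F # L'' \<and> (\<exists>L1' L2'. L'' = L1' @ L2' \<and> srepL B A' L1 L1' \<and> srepL B A' L2 L2')"
      then show "\<exists>L1' L2'. L' = L1' @ L2' \<and> (\<exists>L''. L1' = Fm F # L'' \<and> srepL B A' L1 L'') \<and> srepL B A' L2 L2'"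
        by (metis append_Cons)
    qed (metis append_Cons)
  next
    case (Br N)
    show ?thesis unfolding Br append_Cons srepL_Br_iff Cons.IH
    proof
      assume "\<exists>N' L''. L' = Br N' # L'' \<and> srep B A' N N' \<and> (\<exists>L1' L2'. L'' = L1' @ L2' \<and> srepL B A' L1 L1' \<and> srepL B A' L2 L2')"
      then show "\<exists>L1' L2'. L' = L1' @ L2' \<and> (\<exists>N' L''. L1' = Br N' # L'' \<and> srep B A' N N' \<and> srepL B A' L1 L'') \<and> srepL B A' L2 L2'"
        by (metis append_Cons)
    qed (metis append_Cons)
  qed
qed

lemma srs_refl: "srs B A' w w"
  unfolding srs_def by (rule exI[of _ w], rule exI[of _ 0]) simp

lemma rmset_add: "replicate_mset (k1 + k2) x = replicate_mset k1 x + replicate_mset k2 x"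
  by (induction k1) auto

lemma srs_add: "srs B A' w1 w1' \<Longrightarrow> srs B A' w2 w2' \<Longrightarrow> srs B A' (w1 + w2) (w1' + w2')"
proof -
  assume "srs B A' w1 w1'" "srs B A' w2 w2'"
  then obtain z1 k1 z2 k2 where "w1 = z1 + replicate_mset k1 B" "w1' = z1 + replicate_mset k1 A'"
    "w2 = z2 + replicate_mset k2 B" "w2' = z2 + replicate_mset k2 A'" unfolding srs_def by blast
  then show ?thesis unfolding srs_def
    by (intro exI[of _ "z1 + z2"] exI[of _ "k1 + k2"]) (simp add: rmset_add ac_simps)
qed

lemma srs_empty: "srs B A' {#} w' \<Longrightarrow> w' = {#}"
  unfolding srs_def by auto

lemma srs_size: "srs B A' w w' \<Longrightarrow> size w = size w'"
  unfolding srs_def by auto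

lemma srs_empty_iff: "srs B A' w w' \<Longrightarrow> (w = {#}) = (w' = {#})"
  using srs_size by fastforce

lemma srs_plus1: "srs B A' (w + {#A#}) w' \<Longrightarrow>
   (\<exists>w''. w' = w'' + {#A#} \<and> srs B A' w w'') \<or> (A = B \<and> (\<exists>w''. w' = w'' + {#A'#} \<and> srs B A' w w''))"
proof -
  assume "srs B A' (w + {#A#}) w'"
  then obtain z0 k where e1: "w + {#A#} = z0 + replicate_mset k B" and e2: "w' = z0 + replicate_mset k A'"
    unfolding srs_def by blast
  show ?thesis
  proof (cases "A \<in># z0")
    case True
    then obtain z1 where z1: "z0 = z1 + {#A#}" by (metis insert_DiffM2 add_mset_add_single)
    with e1 have "w = z1 + replicate_mset k B" by (simp add: ac_simps)
    then show ?thesis using e2 z1 unfolding srs_def by (intro disjI1 exI[of _ "z1 + replicate_mset k A'"]) (auto simp: ac_simps)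
  next
    case False
    then have "A \<in># replicate_mset k B" using e1
      by (metis add_mset_add_single union_iff union_single_eq_member)
    then have "k > 0 \<and> A = B" by (simp only: in_replicate_mset)
    then have AB: "A = B" and k: "k > 0" by simp_all
    then obtain k' where k': "k = Suc k'" by (cases k) auto
    with e1 AB have "w = z0 + replicate_mset k' B" by (simp add: ac_simps)
    then show ?thesis using e2 AB k' unfolding srs_def
      by (intro disjI2 conjI exI[of _ "z0 + replicate_mset k' A'"] exI[of _ z0] exI[of _ k']) (auto simp: ac_simps)
  qed
qed

lemma srs_split: "srs B A' (w1 + w2) w' \<Longrightarrow> \<exists>w1' w2'. w' = w1' + w2' \<and> srs B A' w1 w1' \<and> srs B A' w2 w2'"
proof (induction w2 arbitrary: w' rule: multiset_induct)
  case empty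
  then show ?case using srs_refl[of B A' "{#}"] by force
next
  case (add x w2)
  have "srs B A' ((w1 + w2) + {#x#}) w'" using add.prems by (simp add: ac_simps)
  from srs_plus1[OF this] obtain w'' y where e: "w' = w'' + {#y#}" and s: "srs B A' (w1 + w2) w''"
    and y: "srs B A' {#x#} {#y#}"
  proof (elim disjE exE conjE)
    fix w'' assume "w' = w'' + {#x#}" "srs B A' (w1 + w2) w''"
    then show ?thesis using that srs_refl by blast
  next
    fix w'' assume "x = B" "w' = w'' + {#A'#}" "srs B A' (w1 + w2) w''"
    moreover have "srs B A' {#B#} {#A'#}" unfolding srs_def by (rule exI[of _ "{#}"], rule exI[of _ 1]) simp
    ultimately show ?thesis using that by blast
  qed
  from add.IH[OF s] obtain w1' w2' where "w'' = w1' + w2'" "srs B A' w1 w1'" "srs B A' w2 w2'" by blast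
  then show ?case using e y srs_add[of B A' w2 w2' "{#x#}" "{#y#}"]
    by (intro exI[of _ w1'] exI[of _ "w2' + {#y#}"]) (simp add: ac_simps)
qed

lemma srs_single: "srs B A' {#A#} w' \<Longrightarrow> w' = {#A#} \<or> (A = B \<and> w' = {#A'#})"
  using srs_plus1[of B A' "{#}" A w'] srs_empty by force

lemma srs_singleI: "srs B A' {#B#} {#A'#}"
  unfolding srs_def by (rule exI[of _ "{#}"], rule exI[of _ 1]) simp

lemma srepL_length: "srepL B A' L L' \<Longrightarrow> length L = length L'"
proof (induction L arbitrary: L')
  case Nil
  then show ?case by (simp add: srepL_Nil_iff)
next
  case (Cons t L)
  then show ?case by (cases t) (auto simp: srepL_Fm_iff srepL_Br_iff)
qed

lemma srep_refl_aux: "\<forall>L. size_list size L < n \<longrightarrow> srepL B A' L L"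
proof (induction n)
  case 0
  then show ?case by simp
next
  case (Suc n)
  show ?case
  proof (intro allI impI)
    fix L :: "tterm list" assume "size_list size L < Suc n"
    then show "srepL B A' L L"
    proof (induction L)
      case Nil
      show ?case by (rule srepL_Nil)
    next
      case (Cons t L)
      show ?case
      proof (cases t)
        case (Fm F)
        then show ?thesis using Cons by (auto intro: srepL_Fm)
      next
        case (Br N)
        obtain z G where N: "N = (z, G)" by fastforce
        have "size_list size G < n" using Cons.prems Br N by simp
        then have "srepL B A' G G" using Suc.IH by blast
        then have "srep B A' N N" using N srs_refl by (auto intro: srep_I)
        then show ?thesis using Cons Br by (auto intro: srepL_Br)
      qed
    qed
  qed
qed

lemma srepL_refl: "srepL B A' L L"
  using srep_refl_aux[of "Suc (size_list size L)"] by simp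

lemma srep_refl: "srep B A' N N"
  by (cases N) (simp add: srep_pair_iff srs_refl srepL_refl)

lemma srep_fill: "srep B A' (fill X N) S' \<Longrightarrow> \<exists>X' N'. S' = fill X' N' \<and> srep B A' N N' \<and>
   (\<forall>N0 N0'. srep B A' N0 N0' \<longrightarrow> srep B A' (fill X N0) (fill X' N0'))"
proof (induction X arbitrary: S')
  case Hole
  then show ?case by (intro exI[of _ Hole] exI[of _ S']) simp
next
  case (CBr z G1 c G2)
  from CBr.prems obtain w' L' where S': "S' = (w', L')" and s: "srs B A' z w'"
    and l: "srepL B A' (G1 @ Br (fill c N) # G2) L'" by (auto simp: srep_pair_iff)
  from l obtain G1' N1 G2' where L': "L' = G1' @ Br N1 # G2'" and g1: "srepL B A' G1 G1'"
    and n1: "srep B A' (fill c N) N1" and g2: "srepL B A' G2 G2'"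
    by (auto simp: srepL_append_iff srepL_Br_iff)
  from CBr.IH[OF n1] obtain X' N' where e: "N1 = fill X' N'" and nn: "srep B A' N N'"
    and h: "\<forall>N0 N0'. srep B A' N0 N0' \<longrightarrow> srep B A' (fill c N0) (fill X' N0')" by blast
  have "\<forall>N0 N0'. srep B A' N0 N0' \<longrightarrow> srep B A' (fill (CBr z G1 c G2) N0) (fill (CBr w' G1' X' G2') N0')"
  proof (intro allI impI)
    fix N0 N0' assume "srep B A' N0 N0'"
    then have "srep B A' (fill c N0) (fill X' N0')" using h by blast
    then have "srepL B A' (G1 @ Br (fill c N0) # G2) (G1' @ Br (fill X' N0') # G2')"
      using g1 g2 srepL_append_iff srepL_Br by blast
    then show "srep B A' (fill (CBr z G1 c G2) N0) (fill (CBr w' G1' X' G2') N0')"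
      using s by (simp add: srep_I)
  qed
  moreover have "S' = fill (CBr w' G1' X' G2') N'" using S' L' e by simp
  ultimately show ?case using nn by blast
qed

lemma srep_ctx: "srep B A' (fill X (w, D1 @ Q @ D2)) S' \<Longrightarrow>
   \<exists>X' w' D1' Q' D2'. S' = fill X' (w', D1' @ Q' @ D2') \<and> srs B A' w w' \<and> srepL B A' D1 D1' \<and>
     srepL B A' Q Q' \<and> srepL B A' D2 D2' \<and> (\<forall>N0 N0'. srep B A' N0 N0' \<longrightarrow> srep B A' (fill X N0) (fill X' N0'))"
proof -
  assume "srep B A' (fill X (w, D1 @ Q @ D2)) S'"
  from srep_fill[OF this] obtain X' N' where e: "S' = fill X' N'" and n: "srep B A' (w, D1 @ Q @ D2) N'"
    and h: "\<forall>N0 N0'. srep B A' N0 N0' \<longrightarrow> srep B A' (fill X N0) (fill X' N0')" by blast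
  from n obtain w' L' where "N' = (w', L')" "srs B A' w w'" "srepL B A' (D1 @ Q @ D2) L'"
    unfolding srep_pair_iff by blast
  moreover from this(3) obtain D1' Q' D2' where "L' = D1' @ Q' @ D2'" "srepL B A' D1 D1'" "srepL B A' Q Q'" "srepL B A' D2 D2'"
    unfolding srepL_append_iff by blast
  ultimately show ?thesis using e h by blast
qed

lemma srep_ofm_aux:
  "srep B A' N N' \<Longrightarrow> (r \<longrightarrow> onefree A') \<Longrightarrow> r \<longrightarrow> ofm N \<longrightarrow> ofm N'"
  "srepL B A' L L' \<Longrightarrow> (r \<longrightarrow> onefree A') \<Longrightarrow> r \<longrightarrow> (\<forall>t\<in>set L. onefree_t t) \<longrightarrow> (\<forall>t\<in>set L'. onefree_t t)"
proof (induction rule: srep_srepL.inducts)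
  case (srep_I w w' L L')
  then show ?case unfolding srs_def ofm_pair by (auto split: if_splits)
next
  case srepL_Nil
  then show ?case by simp
next
  case (srepL_Fm L L' F)
  then show ?case by simp
next
  case (srepL_Br N N' L L')
  then show ?case by (simp add: onefree_t_Br)
qed

lemma srep_ofm: "srep B A' N N' \<Longrightarrow> onefree A' \<Longrightarrow> ofm N \<Longrightarrow> ofm N'"
  using srep_ofm_aux(1)[of B A' N N' True] by simp

definition cutadm :: "bool \<Rightarrow> formula \<Rightarrow> bool" where
  "cutadm r A = (\<forall>M S S' C. mder r False (M, A) \<longrightarrow> mder r False (S, C) \<longrightarrow> rep A M S S' \<longrightarrow> mder r False (S', C))"

lemma cutadmD: "cutadm r A \<Longrightarrow> mder r False (M, A) \<Longrightarrow> mder r False (S, C) \<Longrightarrow> rep A M S S' \<Longrightarrow> mder r False (S', C)"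
  unfolding cutadm_def by blast

lemma srepL_app: "srepL B A' L1 L1' \<Longrightarrow> srepL B A' L2 L2' \<Longrightarrow> srepL B A' (L1 @ L2) (L1' @ L2')"
  using srepL_append_iff by blast

lemma mder_intro: "mrule r c ps s \<Longrightarrow> \<forall>p\<in>set ps. mder r c p \<and> P p \<Longrightarrow> (r \<longrightarrow> onefree_seq s) \<Longrightarrow> mder r c s"
  by (rule mder.intros) auto

lemma slem:
  assumes cutB: "cutadm r B" and dA: "mder r False (({#A'#}, []), B)"
  shows "mder r False s \<Longrightarrow> srep B A' (fst s) S' \<Longrightarrow> mder r False (S', snd s)"
proof (induction arbitrary: S' rule: mder.induct)
  case (1 ps s)
  have IH: "\<forall>p\<in>set ps. \<forall>S'. srep B A' (fst p) S' \<longrightarrow> mder r False (S', snd p)" using 1(3) by blast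
  have IHs: "\<And>S0 C0 S''. (S0, C0) \<in> set ps \<Longrightarrow> srep B A' S0 S'' \<Longrightarrow> mder r False (S'', C0)"
    using IH by fastforce
  have ds: "mder r False s" using 1(1,3,2) by (rule mder_intro)
  have ofA: "r \<Longrightarrow> onefree A'" using mder_of[OF dA] by (simp add: onefree_seq_ofm ofm_pair)
  have sp: "srep B A' (fst s) S'" by fact
  have of: "r \<Longrightarrow> onefree_seq (S', snd s)"
  proof -
    assume r
    then have "ofm (fst s) \<and> onefree (snd s)" using 1(2) onefree_seq_ofm[of "fst s" "snd s"] by simp
    then show "onefree_seq (S', snd s)" using srep_ofm[OF sp ofA[OF \<open>r\<close>]] by (simp add: onefree_seq_ofm)
  qed
  from 1(1) show ?case
  proof (cases rule: mrule.cases)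
    case (m_ax F)
    then have "S' = ({#}, [Fm F])" using sp srs_empty by (auto simp: srep_pair_iff srepL_Fm_iff srepL_Nil_iff)
    then show ?thesis using ds m_ax by simp
  next
    case m_oneR
    then have "S' = ({#}, [])" using sp srs_empty by (auto simp: srep_pair_iff srepL_Nil_iff)
    then show ?thesis using ds m_oneR by simp
  next
    case (m_overL z1 G B0 X z2 D1 C D2 D)
    have "srep B A' (fill X (z1 + z2, D1 @ (Fm (Over C B0) # G) @ D2)) S'" using sp m_overL by simp
    from srep_ctx[OF this] obtain X' w' D1' Q' D2' where e: "S' = fill X' (w', D1' @ Q' @ D2')"
      and s: "srs B A' (z1 + z2) w'" and d1: "srepL B A' D1 D1'" and q: "srepL B A' (Fm (Over C B0) # G) Q'"
      and d2: "srepL B A' D2 D2'" and h: "\<forall>N0 N0'. srep B A' N0 N0' \<longrightarrow> srep B A' (fill X N0) (fill X' N0')" by blast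
    from q obtain G' where q': "Q' = Fm (Over C B0) # G'" and g: "srepL B A' G G'" by (auto simp: srepL_Fm_iff)
    from srs_split[OF s] obtain w1 w2 where w: "w' = w1 + w2" and s1: "srs B A' z1 w1" and s2: "srs B A' z2 w2" by blast
    have "srep B A' (z1, G) (w1, G')" using s1 g by (simp add: srep_I)
    then have p1: "mder r False ((w1, G'), B0)" by (rule IHs[rotated]) (simp add: m_overL)
    have "srep B A' (fill X (z2, D1 @ Fm C # D2)) (fill X' (w2, D1' @ Fm C # D2'))"
      using h s2 d1 d2 by (simp add: srep_I srepL_app srepL_Fm)
    then have p2: "mder r False (fill X' (w2, D1' @ Fm C # D2'), D)" by (rule IHs[rotated]) (simp add: m_overL)
    have "mder r False (fill X' (w1 + w2, D1' @ Fm (Over C B0) # G' @ D2'), D)"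
      by (rule R_overL[OF p1 p2]) (use of e q' w m_overL in simp)
    then show ?thesis using e q' w m_overL by simp
  next
    case (m_overR G z B0 C)
    from sp m_overR obtain w' G' where e: "S' = (w', G')" and s: "srs B A' z w'" and g: "srepL B A' G G'"
      by (auto simp: srep_pair_iff)
    have "srep B A' (z, G @ [Fm B0]) (w', G' @ [Fm B0])" using s g by (simp add: srep_I srepL_app srepL_Fm srepL_Nil)
    then have p: "mder r False ((w', G' @ [Fm B0]), C)" by (rule IHs[rotated]) (simp add: m_overR)
    have c: "r \<longrightarrow> G' \<noteq> [] \<or> w' \<noteq> {#}" using m_overR srepL_length[OF g] srs_empty_iff[OF s] by auto
    show ?thesis using R_overR[OF c p] of e m_overR by simp
  next
    case (m_underL z1 G A0 X z2 D1 C D2 D)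
    have "srep B A' (fill X (z1 + z2, D1 @ (G @ [Fm (Under A0 C)]) @ D2)) S'" using sp m_underL by simp
    from srep_ctx[OF this] obtain X' w' D1' Q' D2' where e: "S' = fill X' (w', D1' @ Q' @ D2')"
      and s: "srs B A' (z1 + z2) w'" and d1: "srepL B A' D1 D1'" and q: "srepL B A' (G @ [Fm (Under A0 C)]) Q'"
      and d2: "srepL B A' D2 D2'" and h: "\<forall>N0 N0'. srep B A' N0 N0' \<longrightarrow> srep B A' (fill X N0) (fill X' N0')" by blast
    from q obtain G' where q': "Q' = G' @ [Fm (Under A0 C)]" and g: "srepL B A' G G'"
      by (auto simp: srepL_append_iff srepL_Fm_iff srepL_Nil_iff)
    from srs_split[OF s] obtain w1 w2 where w: "w' = w1 + w2" and s1: "srs B A' z1 w1" and s2: "srs B A' z2 w2" by blast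
    have "srep B A' (z1, G) (w1, G')" using s1 g by (simp add: srep_I)
    then have p1: "mder r False ((w1, G'), A0)" by (rule IHs[rotated]) (simp add: m_underL)
    have "srep B A' (fill X (z2, D1 @ Fm C # D2)) (fill X' (w2, D1' @ Fm C # D2'))"
      using h s2 d1 d2 by (simp add: srep_I srepL_app srepL_Fm)
    then have p2: "mder r False (fill X' (w2, D1' @ Fm C # D2'), D)" by (rule IHs[rotated]) (simp add: m_underL)
    have "mder r False (fill X' (w1 + w2, D1' @ G' @ Fm (Under A0 C) # D2'), D)"
      by (rule R_underL[OF p1 p2]) (use of e q' w m_underL in simp)
    then show ?thesis using e q' w m_underL by simp
  next
    case (m_underR G z A0 C)
    from sp m_underR obtain w' G' where e: "S' = (w', G')" and s: "srs B A' z w'" and g: "srepL B A' G G'"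
      by (auto simp: srep_pair_iff)
    have "srep B A' (z, Fm A0 # G) (w', Fm A0 # G')" using s g by (simp add: srep_I srepL_Fm)
    then have p: "mder r False ((w', Fm A0 # G'), C)" by (rule IHs[rotated]) (simp add: m_underR)
    have c: "r \<longrightarrow> G' \<noteq> [] \<or> w' \<noteq> {#}" using m_underR srepL_length[OF g] srs_empty_iff[OF s] by auto
    show ?thesis using R_underR[OF c p] of e m_underR by simp
  next
    case (m_prodL X z D1 A0 B0 D2 D)
    have "srep B A' (fill X (z, D1 @ [Fm (Prod A0 B0)] @ D2)) S'" using sp m_prodL by simp
    from srep_ctx[OF this] obtain X' w' D1' Q' D2' where e: "S' = fill X' (w', D1' @ Q' @ D2')"
      and s: "srs B A' z w'" and d1: "srepL B A' D1 D1'" and q: "srepL B A' [Fm (Prod A0 B0)] Q'"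
      and d2: "srepL B A' D2 D2'" and h: "\<forall>N0 N0'. srep B A' N0 N0' \<longrightarrow> srep B A' (fill X N0) (fill X' N0')" by blast
    from q have q': "Q' = [Fm (Prod A0 B0)]" by (auto simp: srepL_Fm_iff srepL_Nil_iff)
    have "srep B A' (fill X (z, D1 @ Fm A0 # Fm B0 # D2)) (fill X' (w', D1' @ Fm A0 # Fm B0 # D2'))"
      using h s d1 d2 by (simp add: srep_I srepL_app srepL_Fm)
    then have p: "mder r False (fill X' (w', D1' @ Fm A0 # Fm B0 # D2'), D)" by (rule IHs[rotated]) (simp add: m_prodL)
    show ?thesis using R_prodL[OF p] of e q' m_prodL by simp
  next
    case (m_prodR z1 D A0 z2 G B0)
    from sp m_prodR obtain w' L' where e: "S' = (w', L')" and s: "srs B A' (z1 + z2) w'" and l: "srepL B A' (D @ G) L'"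
      by (auto simp: srep_pair_iff)
    from l obtain D' G' where l': "L' = D' @ G'" and d: "srepL B A' D D'" and g: "srepL B A' G G'"
      by (auto simp: srepL_append_iff)
    from srs_split[OF s] obtain w1 w2 where w: "w' = w1 + w2" and s1: "srs B A' z1 w1" and s2: "srs B A' z2 w2" by blast
    have "srep B A' (z1, D) (w1, D')" using s1 d by (simp add: srep_I)
    then have p1: "mder r False ((w1, D'), A0)" by (rule IHs[rotated]) (simp add: m_prodR)
    have "srep B A' (z2, G) (w2, G')" using s2 g by (simp add: srep_I)
    then have p2: "mder r False ((w2, G'), B0)" by (rule IHs[rotated]) (simp add: m_prodR)
    show ?thesis using R_prodR[OF p1 p2] of e l' w m_prodR by simp
  next
    case (m_oneL X z D1 D2 A0)
    have "srep B A' (fill X (z, D1 @ [Fm One] @ D2)) S'" using sp m_oneL by simp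
    from srep_ctx[OF this] obtain X' w' D1' Q' D2' where e: "S' = fill X' (w', D1' @ Q' @ D2')"
      and s: "srs B A' z w'" and d1: "srepL B A' D1 D1'" and q: "srepL B A' [Fm One] Q'"
      and d2: "srepL B A' D2 D2'" and h: "\<forall>N0 N0'. srep B A' N0 N0' \<longrightarrow> srep B A' (fill X N0) (fill X' N0')" by blast
    from q have q': "Q' = [Fm One]" by (auto simp: srepL_Fm_iff srepL_Nil_iff)
    have "srep B A' (fill X (z, D1 @ D2)) (fill X' (w', D1' @ D2'))"
      using h s d1 d2 by (simp add: srep_I srepL_app)
    then have p: "mder r False (fill X' (w', D1' @ D2'), A0)" by (rule IHs[rotated]) (simp add: m_oneL)
    show ?thesis using R_oneL[OF _ p] e q' m_oneL by simp
  next
    case (m_orL X z D1 A1 D2 C A2)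
    have "srep B A' (fill X (z, D1 @ [Fm (Or A1 A2)] @ D2)) S'" using sp m_orL by simp
    from srep_ctx[OF this] obtain X' w' D1' Q' D2' where e: "S' = fill X' (w', D1' @ Q' @ D2')"
      and s: "srs B A' z w'" and d1: "srepL B A' D1 D1'" and q: "srepL B A' [Fm (Or A1 A2)] Q'"
      and d2: "srepL B A' D2 D2'" and h: "\<forall>N0 N0'. srep B A' N0 N0' \<longrightarrow> srep B A' (fill X N0) (fill X' N0')" by blast
    from q have q': "Q' = [Fm (Or A1 A2)]" by (auto simp: srepL_Fm_iff srepL_Nil_iff)
    have "srep B A' (fill X (z, D1 @ Fm A1 # D2)) (fill X' (w', D1' @ Fm A1 # D2'))"
      using h s d1 d2 by (simp add: srep_I srepL_app srepL_Fm)
    then have p1: "mder r False (fill X' (w', D1' @ Fm A1 # D2'), C)" by (rule IHs[rotated]) (simp add: m_orL)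
    have "srep B A' (fill X (z, D1 @ Fm A2 # D2)) (fill X' (w', D1' @ Fm A2 # D2'))"
      using h s d1 d2 by (simp add: srep_I srepL_app srepL_Fm)
    then have p2: "mder r False (fill X' (w', D1' @ Fm A2 # D2'), C)" by (rule IHs[rotated]) (simp add: m_orL)
    show ?thesis using R_orL[OF p1 p2] of e q' m_orL by simp
  next
    case (m_orR1 Y A1 A2)
    have p: "mder r False (S', A1)" using IHs[OF _ sp] m_orR1 by simp
    show ?thesis using R_orR1[OF p] of m_orR1 by simp
  next
    case (m_orR2 Y A2 A1)
    have p: "mder r False (S', A2)" using IHs[OF _ sp] m_orR2 by simp
    show ?thesis using R_orR2[OF p] of m_orR2 by simp
  next
    case (m_andL1 X z D1 A1 D2 C A2)
    have "srep B A' (fill X (z, D1 @ [Fm (And A1 A2)] @ D2)) S'" using sp m_andL1 by simp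
    from srep_ctx[OF this] obtain X' w' D1' Q' D2' where e: "S' = fill X' (w', D1' @ Q' @ D2')"
      and s: "srs B A' z w'" and d1: "srepL B A' D1 D1'" and q: "srepL B A' [Fm (And A1 A2)] Q'"
      and d2: "srepL B A' D2 D2'" and h: "\<forall>N0 N0'. srep B A' N0 N0' \<longrightarrow> srep B A' (fill X N0) (fill X' N0')" by blast
    from q have q': "Q' = [Fm (And A1 A2)]" by (auto simp: srepL_Fm_iff srepL_Nil_iff)
    have "srep B A' (fill X (z, D1 @ Fm A1 # D2)) (fill X' (w', D1' @ Fm A1 # D2'))"
      using h s d1 d2 by (simp add: srep_I srepL_app srepL_Fm)
    then have p: "mder r False (fill X' (w', D1' @ Fm A1 # D2'), C)" by (rule IHs[rotated]) (simp add: m_andL1)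
    show ?thesis using R_andL1[OF p] of e q' m_andL1 by simp
  next
    case (m_andL2 X z D1 A2 D2 C A1)
    have "srep B A' (fill X (z, D1 @ [Fm (And A1 A2)] @ D2)) S'" using sp m_andL2 by simp
    from srep_ctx[OF this] obtain X' w' D1' Q' D2' where e: "S' = fill X' (w', D1' @ Q' @ D2')"
      and s: "srs B A' z w'" and d1: "srepL B A' D1 D1'" and q: "srepL B A' [Fm (And A1 A2)] Q'"
      and d2: "srepL B A' D2 D2'" and h: "\<forall>N0 N0'. srep B A' N0 N0' \<longrightarrow> srep B A' (fill X N0) (fill X' N0')" by blast
    from q have q': "Q' = [Fm (And A1 A2)]" by (auto simp: srepL_Fm_iff srepL_Nil_iff)
    have "srep B A' (fill X (z, D1 @ Fm A2 # D2)) (fill X' (w', D1' @ Fm A2 # D2'))"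
      using h s d1 d2 by (simp add: srep_I srepL_app srepL_Fm)
    then have p: "mder r False (fill X' (w', D1' @ Fm A2 # D2'), C)" by (rule IHs[rotated]) (simp add: m_andL2)
    show ?thesis using R_andL2[OF p] of e q' m_andL2 by simp
  next
    case (m_andR Y A1 A2)
    have p1: "mder r False (S', A1)" using IHs[OF _ sp] m_andR by simp
    have p2: "mder r False (S', A2)" using IHs[OF _ sp] m_andR by simp
    show ?thesis using R_andR[OF p1 p2] of m_andR by simp
  next
    case (m_boxL X z D1 A0 D2 B1)
    have "srep B A' (fill X (z, D1 @ [Br ({#}, [Fm (Box A0)])] @ D2)) S'" using sp m_boxL by simp
    from srep_ctx[OF this] obtain X' w' D1' Q' D2' where e: "S' = fill X' (w', D1' @ Q' @ D2')"
      and s: "srs B A' z w'" and d1: "srepL B A' D1 D1'" and q: "srepL B A' [Br ({#}, [Fm (Box A0)])] Q'"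
      and d2: "srepL B A' D2 D2'" and h: "\<forall>N0 N0'. srep B A' N0 N0' \<longrightarrow> srep B A' (fill X N0) (fill X' N0')" by blast
    from q srs_empty have q': "Q' = [Br ({#}, [Fm (Box A0)])]"
      by (auto simp: srepL_Fm_iff srepL_Br_iff srepL_Nil_iff srep_pair_iff)
    have "srep B A' (fill X (z, D1 @ Fm A0 # D2)) (fill X' (w', D1' @ Fm A0 # D2'))"
      using h s d1 d2 by (simp add: srep_I srepL_app srepL_Fm)
    then have p: "mder r False (fill X' (w', D1' @ Fm A0 # D2'), B1)" by (rule IHs[rotated]) (simp add: m_boxL)
    show ?thesis using R_boxL[OF p] of e q' m_boxL by simp
  next
    case (m_boxR Y A0)
    have "srep B A' ({#}, [Br Y]) ({#}, [Br S'])" using sp m_boxR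
      by (simp add: srep_I srs_refl srepL_Br srepL_Nil)
    then have p: "mder r False (({#}, [Br S']), A0)" by (rule IHs[rotated]) (simp add: m_boxR)
    show ?thesis using R_boxR[OF p] of m_boxR by simp
  next
    case (m_diaL X z D1 A0 D2 B1)
    have "srep B A' (fill X (z, D1 @ [Fm (Dia A0)] @ D2)) S'" using sp m_diaL by simp
    from srep_ctx[OF this] obtain X' w' D1' Q' D2' where e: "S' = fill X' (w', D1' @ Q' @ D2')"
      and s: "srs B A' z w'" and d1: "srepL B A' D1 D1'" and q: "srepL B A' [Fm (Dia A0)] Q'"
      and d2: "srepL B A' D2 D2'" and h: "\<forall>N0 N0'. srep B A' N0 N0' \<longrightarrow> srep B A' (fill X N0) (fill X' N0')" by blast
    from q have q': "Q' = [Fm (Dia A0)]" by (auto simp: srepL_Fm_iff srepL_Nil_iff)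
    have "srep B A' (fill X (z, D1 @ Br ({#}, [Fm A0]) # D2)) (fill X' (w', D1' @ Br ({#}, [Fm A0]) # D2'))"
      using h s d1 d2 by (simp add: srep_I srepL_app srepL_Br srep_refl)
    then have p: "mder r False (fill X' (w', D1' @ Br ({#}, [Fm A0]) # D2'), B1)" by (rule IHs[rotated]) (simp add: m_diaL)
    show ?thesis using R_diaL[OF p] of e q' m_diaL by simp
  next
    case (m_diaR Y A0)
    from sp m_diaR srs_empty obtain Y' where e: "S' = ({#}, [Br Y'])" and y: "srep B A' Y Y'"
      by (auto simp: srep_pair_iff srepL_Br_iff srepL_Nil_iff)
    have p: "mder r False (Y', A0)" using IHs[OF _ y] m_diaR by simp
    show ?thesis using R_diaR[OF p] of e m_diaR by simp
  next
    case (m_bangL X z A0 G1 G2 B1)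
    have "srep B A' (fill X (z, G1 @ [Fm (Bang A0)] @ G2)) S'" using sp m_bangL by simp
    from srep_ctx[OF this] obtain X' w' D1' Q' D2' where e: "S' = fill X' (w', D1' @ Q' @ D2')"
      and s: "srs B A' z w'" and d1: "srepL B A' G1 D1'" and q: "srepL B A' [Fm (Bang A0)] Q'"
      and d2: "srepL B A' G2 D2'" and h: "\<forall>N0 N0'. srep B A' N0 N0' \<longrightarrow> srep B A' (fill X N0) (fill X' N0')" by blast
    from q have q': "Q' = [Fm (Bang A0)]" by (auto simp: srepL_Fm_iff srepL_Nil_iff)
    have "srs B A' (z + {#A0#}) (w' + {#A0#})" using s srs_add srs_refl by blast
    then have "srep B A' (fill X (z + {#A0#}, G1 @ G2)) (fill X' (w' + {#A0#}, D1' @ D2'))"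
      using h d1 d2 by (simp add: srep_I srepL_app)
    then have p: "mder r False (fill X' (w' + {#A0#}, D1' @ D2'), B1)" by (rule IHs[rotated]) (simp add: m_bangL)
    show ?thesis using R_bangL[OF p] of e q' m_bangL by simp
  next
    case (m_bangP X z G1 A0 G2 B1)
    have "srep B A' (fill X (z + {#A0#}, G1 @ [] @ G2)) S'" using sp m_bangP by simp
    from srep_ctx[OF this] obtain X' w' D1' Q' D2' where e: "S' = fill X' (w', D1' @ Q' @ D2')"
      and s: "srs B A' (z + {#A0#}) w'" and d1: "srepL B A' G1 D1'" and q: "srepL B A' [] Q'"
      and d2: "srepL B A' G2 D2'" and h: "\<forall>N0 N0'. srep B A' N0 N0' \<longrightarrow> srep B A' (fill X N0) (fill X' N0')" by blast
    from q have q': "Q' = []" by (simp add: srepL_Nil_iff)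
    from srs_plus1[OF s] show ?thesis
    proof (elim disjE exE conjE)
      fix w'' assume w: "w' = w'' + {#A0#}" and s': "srs B A' z w''"
      have "srep B A' (fill X (z, G1 @ Fm A0 # G2)) (fill X' (w'', D1' @ Fm A0 # D2'))"
        using h s' d1 d2 by (simp add: srep_I srepL_app srepL_Fm)
      then have p: "mder r False (fill X' (w'', D1' @ Fm A0 # D2'), B1)" by (rule IHs[rotated]) (simp add: m_bangP)
      show ?thesis using R_bangP[OF p] of e q' w m_bangP by simp
    next
      fix w'' assume ab: "A0 = B" and w: "w' = w'' + {#A'#}" and s': "srs B A' z w''"
      have "srep B A' (fill X (z, G1 @ Fm A0 # G2)) (fill X' (w'', D1' @ Fm A0 # D2'))"
        using h s' d1 d2 by (simp add: srep_I srepL_app srepL_Fm)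
      then have "mder r False (fill X' (w'', D1' @ Fm A0 # D2'), B1)" by (rule IHs[rotated]) (simp add: m_bangP)
      then have p: "mder r False (fill X' (w'', D1' @ Fm B # D2'), B1)" using ab by simp
      have "rep B ({#A'#}, []) (fill X' (w'', D1' @ Fm B # D2')) (fill X' (fst ({#A'#}, []::tterm list) + w'', D1' @ snd ({#A'#}, []::tterm list) @ D2'))"
        by (rule rep_fill_cut)
      then have "mder r False (fill X' ({#A'#} + w'', D1' @ D2'), B1)"
        using cutadmD[OF cutB dA p] by simp
      then show ?thesis using e q' w m_bangP by (simp add: ac_simps)
    qed
  next
    case (m_bangR A0 B1)
    from sp m_bangR obtain w' where e: "S' = (w', [])" and s: "srs B A' {#A0#} w'"
      by (auto simp: srep_pair_iff srepL_Nil_iff)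
    from srs_single[OF s] show ?thesis
    proof
      assume "w' = {#A0#}"
      then show ?thesis using ds e m_bangR by simp
    next
      assume a: "A0 = B \<and> w' = {#A'#}"
      have "srep B A' ({#A0#}, []) ({#A'#}, [])" using a srs_singleI by (simp add: srep_I srepL_Nil)
      then have p: "mder r False (({#A'#}, []), B1)" by (rule IHs[rotated]) (simp add: m_bangR)
      show ?thesis using R_bangR[OF p] of e a m_bangR by simp
    qed
  next
    case (m_bangC G2 z' X z A0 G1 G3 B1)
    have "srep B A' (fill X (z + {#A0#}, G1 @ [Br ({#}, [Br (z', G2)])] @ G3)) S'" using sp m_bangC by simp
    from srep_ctx[OF this] obtain X' w' D1' Q' D2' where e: "S' = fill X' (w', D1' @ Q' @ D2')"
      and s: "srs B A' (z + {#A0#}) w'" and d1: "srepL B A' G1 D1'" and q: "srepL B A' [Br ({#}, [Br (z', G2)])] Q'"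
      and d2: "srepL B A' G3 D2'" and h: "\<forall>N0 N0'. srep B A' N0 N0' \<longrightarrow> srep B A' (fill X N0) (fill X' N0')" by blast
    from q srs_empty obtain z'' G2' where q': "Q' = [Br ({#}, [Br (z'', G2')])]" and sz: "srs B A' z' z''"
      and g2: "srepL B A' G2 G2'"
      by (auto simp: srepL_Br_iff srepL_Nil_iff srep_pair_iff)
    have c: "r \<longrightarrow> G2' \<noteq> [] \<or> z'' \<noteq> {#}" using m_bangC srepL_length[OF g2] srs_empty_iff[OF sz] by auto
    from srs_plus1[OF s] show ?thesis
    proof (elim disjE exE conjE)
      fix w'' assume w: "w' = w'' + {#A0#}" and s': "srs B A' z w''"
      have "srs B A' (z + {#A0#}) (w'' + {#A0#})" "srs B A' (z' + {#A0#}) (z'' + {#A0#})"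
        using s' sz srs_add srs_refl by blast+
      then have "srep B A' (fill X (z + {#A0#}, G1 @ Br (z' + {#A0#}, G2) # G3)) (fill X' (w'' + {#A0#}, D1' @ Br (z'' + {#A0#}, G2') # D2'))"
        using h d1 d2 g2 by (simp add: srep_I srepL_app srepL_Br)
      then have p: "mder r False (fill X' (w'' + {#A0#}, D1' @ Br (z'' + {#A0#}, G2') # D2'), B1)" by (rule IHs[rotated]) (simp add: m_bangC)
      show ?thesis using R_bangC[OF c p] of e q' w m_bangC by simp
    next
      fix w'' assume ab: "A0 = B" and w: "w' = w'' + {#A'#}" and s': "srs B A' z w''"
      have "srs B A' (z + {#A0#}) (w'' + {#A'#})" "srs B A' (z' + {#A0#}) (z'' + {#A'#})"
        using s' sz srs_add srs_singleI ab by blast+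
      then have "srep B A' (fill X (z + {#A0#}, G1 @ Br (z' + {#A0#}, G2) # G3)) (fill X' (w'' + {#A'#}, D1' @ Br (z'' + {#A'#}, G2') # D2'))"
        using h d1 d2 g2 by (simp add: srep_I srepL_app srepL_Br)
      then have p: "mder r False (fill X' (w'' + {#A'#}, D1' @ Br (z'' + {#A'#}, G2') # D2'), B1)" by (rule IHs[rotated]) (simp add: m_bangC)
      show ?thesis using R_bangC[OF c p] of e q' w m_bangC by simp
    qed
  next
    case m_cut
    then show ?thesis by simp
  qed
qed

lemma ctx1:
  assumes rp: "rep A M (fill X (s + w, D1 @ Q @ D2)) S'"
  and IH: "\<forall>S''. rep A M (fill X (da + w, D1 @ Qa @ D2)) S'' \<longrightarrow> mder r False (S'', Ca)"
  and rl: "\<And>X' w' D1' D2'. mder r False (fill X' (da + w', D1' @ Qa @ D2'), Ca) \<Longrightarrow> S' = fill X' (s + w', D1' @ Q @ D2') \<Longrightarrow> mder r False (S', C)"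
  and qc: "\<And>d Q'. repL A M d Q Q' \<Longrightarrow> S' = fill X (s + (d + w), D1 @ Q' @ D2) \<Longrightarrow> mder r False (S', C)"
  shows "mder r False (S', C)"
  by (rule ctx_commute[OF rp, where Qs="[(da,Qa,Ca)]"]) (use IH rl qc in auto)

lemma ctx2:
  assumes rp: "rep A M (fill X (s + w, D1 @ Q @ D2)) S'"
  and IH1: "\<forall>S''. rep A M (fill X (da + w, D1 @ Qa @ D2)) S'' \<longrightarrow> mder r False (S'', Ca)"
  and IH2: "\<forall>S''. rep A M (fill X (db + w, D1 @ Qb @ D2)) S'' \<longrightarrow> mder r False (S'', Cb)"
  and rl: "\<And>X' w' D1' D2'. mder r False (fill X' (da + w', D1' @ Qa @ D2'), Ca) \<Longrightarrow> mder r False (fill X' (db + w', D1' @ Qb @ D2'), Cb) \<Longrightarrow> S' = fill X' (s + w', D1' @ Q @ D2') \<Longrightarrow> mder r False (S', C)"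
  and qc: "\<And>d Q'. repL A M d Q Q' \<Longrightarrow> S' = fill X (s + (d + w), D1 @ Q' @ D2) \<Longrightarrow> mder r False (S', C)"
  shows "mder r False (S', C)"
  by (rule ctx_commute[OF rp, where Qs="[(da,Qa,Ca),(db,Qb,Cb)]"]) (use IH1 IH2 rl qc in auto)

lemma left1:
  assumes rp: "rep A (fill Y (s + w, E1 @ Q @ E2)) S S'"
  and IH: "\<forall>S''. rep A (fill Y (da + w, E1 @ Qa @ E2)) S S'' \<longrightarrow> mder r False (S'', C)"
  and rl: "\<And>X' w' D1' D2'. mder r False (fill X' (da + w', D1' @ Qa @ D2'), C) \<Longrightarrow> S' = fill X' (s + w', D1' @ Q @ D2') \<Longrightarrow> mder r False (S', C)"
  shows "mder r False (S', C)"
  by (rule left_commute[OF rp, where Qs="[(da,Qa)]"]) (use IH rl in auto)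

lemma left2:
  assumes rp: "rep A (fill Y (s + w, E1 @ Q @ E2)) S S'"
  and IH1: "\<forall>S''. rep A (fill Y (da + w, E1 @ Qa @ E2)) S S'' \<longrightarrow> mder r False (S'', C)"
  and IH2: "\<forall>S''. rep A (fill Y (db + w, E1 @ Qb @ E2)) S S'' \<longrightarrow> mder r False (S'', C)"
  and rl: "\<And>X' w' D1' D2'. mder r False (fill X' (da + w', D1' @ Qa @ D2'), C) \<Longrightarrow> mder r False (fill X' (db + w', D1' @ Qb @ D2'), C) \<Longrightarrow> S' = fill X' (s + w', D1' @ Q @ D2') \<Longrightarrow> mder r False (S', C)"
  shows "mder r False (S', C)"
  by (rule left_commute[OF rp, where Qs="[(da,Qa),(db,Qb)]"]) (use IH1 IH2 rl in auto)

lemma rep_single_Fm: "rep A M (w, [Fm F]) S' \<Longrightarrow> F = A \<and> S' = (fst M + w, snd M)"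
  using rep_list[of A M w "[Fm F]" S'] repL_Fm by blast

lemma srep_fill_in: "srep B A' N N' \<Longrightarrow> srep B A' (fill X N) (fill X N')"
  by (induction X) (simp_all add: srep_I srs_refl srepL_app srepL_refl srepL_Br)

fun rinfo :: "bool \<Rightarrow> formula \<Rightarrow> meta \<Rightarrow> bool" where
  "rinfo r (Var n) M = False"
| "rinfo r One M = (M = ({#}, []))"
| "rinfo r (Under A C) M = mder r False ((fst M, Fm A # snd M), C)"
| "rinfo r (Over C B) M = mder r False ((fst M, snd M @ [Fm B]), C)"
| "rinfo r (Prod A B) M = (\<exists>z1 D z2 G. M = (z1 + z2, D @ G) \<and> mder r False ((z1, D), A) \<and> mder r False ((z2, G), B))"
| "rinfo r (And A B) M = (mder r False (M, A) \<and> mder r False (M, B))"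
| "rinfo r (Or A B) M = (mder r False (M, A) \<or> mder r False (M, B))"
| "rinfo r (Dia A) M = (\<exists>Y. M = ({#}, [Br Y]) \<and> mder r False (Y, A))"
| "rinfo r (Box A) M = mder r False (({#}, [Br M]), A)"
| "rinfo r (Bang B) M = (\<exists>A'. M = ({#A'#}, []) \<and> mder r False (({#A'#}, []), B))"

lemma cut_d2:
  assumes dM: "mder r False (M, A)" and ri: "rinfo r A M"
  and sub: "\<And>F. size F < size A \<Longrightarrow> cutadm r F"
  and neM: "r \<Longrightarrow> fst M \<noteq> {#} \<or> snd M \<noteq> []"
  shows "mder r False s \<Longrightarrow> rep A M (fst s) S' \<Longrightarrow> mder r False (S', snd s)"
proof (induction arbitrary: S' rule: mder.induct)
  case (1 ps s)
  have IHr: "\<And>S0 C0. (S0, C0) \<in> set ps \<Longrightarrow> \<forall>S''. rep A M S0 S'' \<longrightarrow> mder r False (S'', C0)"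
    using 1(3) by fastforce
  have IHr2: "\<And>S0 C0 S''. (S0, C0) \<in> set ps \<Longrightarrow> rep A M S0 S'' \<Longrightarrow> mder r False (S'', C0)"
    using 1(3) by fastforce
  have pd: "\<And>p. p \<in> set ps \<Longrightarrow> mder r False p" using 1(3) by blast
  have ofM: "r \<Longrightarrow> ofm M" using mder_of[OF dM] by (simp add: onefree_seq_ofm)
  have sp: "rep A M (fst s) S'" by fact
  have of: "r \<Longrightarrow> onefree_seq (S', snd s)"
  proof -
    assume r
    then have "ofm (fst s) \<and> onefree (snd s)" using 1(2) onefree_seq_ofm[of "fst s" "snd s"] by simp
    then show "onefree_seq (S', snd s)" using rep_ofm[OF sp _ ofM[OF \<open>r\<close>]] by (simp add: onefree_seq_ofm)
  qed
  from 1(1) show ?case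
  proof (cases rule: mrule.cases)
    case (m_ax F)
    from rep_single_Fm[of A M "{#}" F S'] sp m_ax have "F = A" "S' = M" by auto
    then show ?thesis using dM m_ax by simp
  next
    case m_oneR
    then show ?thesis using sp rep_Nil[of A M "{#}" S'] by simp
  next
    case (m_overL z1 G B0 X z2 D1 C D2 D)
    have rp: "rep A M (fill X (z1 + z2, D1 @ (Fm (Over C B0) # G) @ D2)) S'" using sp m_overL by simp
    have pd1: "mder r False ((z1, G), B0)" using pd m_overL by simp
    have pd2: "mder r False (fill X (z2, D1 @ Fm C # D2), D)" using pd m_overL by simp
    have of': "r \<Longrightarrow> onefree_seq (S', D)" using of m_overL by simp
    show ?thesis unfolding m_overL(2) snd_conv
    proof (rule ctx1[OF rp, where da="{#}" and Qa="[Fm C]" and Ca=D])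
      show "\<forall>S''. rep A M (fill X ({#} + z2, D1 @ [Fm C] @ D2)) S'' \<longrightarrow> mder r False (S'', D)"
        by (rule IHr) (simp add: m_overL)
    next
      fix X' w' D1' D2'
      assume p: "mder r False (fill X' ({#} + w', D1' @ [Fm C] @ D2'), D)" and e: "S' = fill X' (z1 + w', D1' @ (Fm (Over C B0) # G) @ D2')"
      show "mder r False (S', D)" using R_overL[OF pd1, of X' w' D1' C D2' D] p e of' by simp
    next
      fix d Q' assume q: "repL A M d (Fm (Over C B0) # G) Q'" and e: "S' = fill X (z1 + (d + z2), D1 @ Q' @ D2)"
      from repL_cons[OF q] show "mder r False (S', D)"
      proof (elim disjE exE conjE)
        fix L1' assume q1: "Q' = L1' @ G" and q2: "repL A M d [Fm (Over C B0)] L1'"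
        from repL_Fm[OF q2] have a: "A = Over C B0" "d = fst M" "L1' = snd M" by auto
        from ri a have d1: "mder r False ((fst M, snd M @ [Fm B0]), C)" by simp
        have "rep B0 (z1, G) (fst M, snd M @ Fm B0 # []) (fst (z1, G) + fst M, snd M @ snd (z1, G) @ [])" by (rule rep_here)
        then have d2: "mder r False ((z1 + fst M, snd M @ G), C)" using cutadmD[OF sub[of B0] pd1 d1] a by simp
        have "rep C (z1 + fst M, snd M @ G) (fill X (z2, D1 @ Fm C # D2)) (fill X (fst (z1 + fst M, snd M @ G) + z2, D1 @ snd (z1 + fst M, snd M @ G) @ D2))"
          by (rule rep_fill_cut)
        then have "mder r False (fill X ((z1 + fst M) + z2, D1 @ (snd M @ G) @ D2), D)" using cutadmD[OF sub[of C] d2 pd2] a by simp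
        then show ?thesis using e q1 a by (simp add: ac_simps)
      next
        fix L2' assume q1: "Q' = Fm (Over C B0) # L2'" and q2: "repL A M d G L2'"
        have x: "rep A M (z1, G) (d + z1, L2')" using repL_rep[OF q2] .
        have p1: "mder r False ((d + z1, L2'), B0)" by (rule IHr2[OF _ x]) (simp add: m_overL)
        show ?thesis using R_overL[OF p1 pd2] e q1 of' by (simp add: ac_simps)
      qed
    qed
  next
    case (m_overR G z B0 C)
    from rep_list[of A M z G S'] sp m_overR obtain d G' where e: "S' = (d + z, G')" and q: "repL A M d G G'" by auto
    have x: "rep A M (z, G @ [Fm B0]) (d + z, G' @ [Fm B0])" using repL_rep[OF repL_appI[OF q, of "[]" "[Fm B0]"]] by simp
    have p: "mder r False ((d + z, G' @ [Fm B0]), C)" by (rule IHr2[OF _ x]) (simp add: m_overR)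
    have c: "r \<longrightarrow> G' \<noteq> [] \<or> d + z \<noteq> {#}" using repL_ne[OF q] neM by auto
    show ?thesis using R_overR[OF c p] of e m_overR by simp
  next
    case (m_underL z1 G A0 X z2 D1 C D2 D)
    have rp: "rep A M (fill X (z1 + z2, D1 @ (G @ [Fm (Under A0 C)]) @ D2)) S'" using sp m_underL by simp
    have pd1: "mder r False ((z1, G), A0)" using pd m_underL by simp
    have pd2: "mder r False (fill X (z2, D1 @ Fm C # D2), D)" using pd m_underL by simp
    have of': "r \<Longrightarrow> onefree_seq (S', D)" using of m_underL by simp
    show ?thesis unfolding m_underL(2) snd_conv
    proof (rule ctx1[OF rp, where da="{#}" and Qa="[Fm C]" and Ca=D])
      show "\<forall>S''. rep A M (fill X ({#} + z2, D1 @ [Fm C] @ D2)) S'' \<longrightarrow> mder r False (S'', D)"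
        by (rule IHr) (simp add: m_underL)
    next
      fix X' w' D1' D2'
      assume p: "mder r False (fill X' ({#} + w', D1' @ [Fm C] @ D2'), D)" and e: "S' = fill X' (z1 + w', D1' @ (G @ [Fm (Under A0 C)]) @ D2')"
      show "mder r False (S', D)" using R_underL[OF pd1, of X' w' D1' C D2' D] p e of' by simp
    next
      fix d Q' assume q: "repL A M d (G @ [Fm (Under A0 C)]) Q'" and e: "S' = fill X (z1 + (d + z2), D1 @ Q' @ D2)"
      from repL_app[OF q] show "mder r False (S', D)"
      proof (elim disjE exE conjE)
        fix L1' assume q1: "Q' = L1' @ [Fm (Under A0 C)]" and q2: "repL A M d G L1'"
        have x: "rep A M (z1, G) (d + z1, L1')" using repL_rep[OF q2] .
        have p1: "mder r False ((d + z1, L1'), A0)" by (rule IHr2[OF _ x]) (simp add: m_underL)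
        show ?thesis using R_underL[OF p1 pd2] e q1 of' by (simp add: ac_simps)
      next
        fix L2' assume q1: "Q' = G @ L2'" and q2: "repL A M d [Fm (Under A0 C)] L2'"
        from repL_Fm[OF q2] have a: "A = Under A0 C" "d = fst M" "L2' = snd M" by auto
        from ri a have d1: "mder r False ((fst M, Fm A0 # snd M), C)" by simp
        have "rep A0 (z1, G) (fst M, [] @ Fm A0 # snd M) (fst (z1, G) + fst M, [] @ snd (z1, G) @ snd M)" by (rule rep_here)
        then have d2: "mder r False ((z1 + fst M, G @ snd M), C)" using cutadmD[OF sub[of A0] pd1] d1 a by simp
        have "rep C (z1 + fst M, G @ snd M) (fill X (z2, D1 @ Fm C # D2)) (fill X (fst (z1 + fst M, G @ snd M) + z2, D1 @ snd (z1 + fst M, G @ snd M) @ D2))"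
          by (rule rep_fill_cut)
        then have "mder r False (fill X ((z1 + fst M) + z2, D1 @ (G @ snd M) @ D2), D)" using cutadmD[OF sub[of C] d2 pd2] a by simp
        then show ?thesis using e q1 a by (simp add: ac_simps)
      qed
    qed
  next
    case (m_underR G z A0 C)
    from rep_list[of A M z G S'] sp m_underR obtain d G' where e: "S' = (d + z, G')" and q: "repL A M d G G'" by auto
    have x: "rep A M (z, Fm A0 # G) (d + z, Fm A0 # G')" using repL_rep[OF repL_appI[OF q, of "[Fm A0]" "[]"]] by simp
    have p: "mder r False ((d + z, Fm A0 # G'), C)" by (rule IHr2[OF _ x]) (simp add: m_underR)
    have c: "r \<longrightarrow> G' \<noteq> [] \<or> d + z \<noteq> {#}" using repL_ne[OF q] neM by auto
    show ?thesis using R_underR[OF c p] of e m_underR by simp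
  next
    case (m_prodL X z D1 A0 B0 D2 D)
    have rp: "rep A M (fill X ({#} + z, D1 @ [Fm (Prod A0 B0)] @ D2)) S'" using sp m_prodL by simp
    have pd1: "mder r False (fill X (z, D1 @ Fm A0 # Fm B0 # D2), D)" using pd m_prodL by simp
    have of': "r \<Longrightarrow> onefree_seq (S', D)" using of m_prodL by simp
    show ?thesis unfolding m_prodL(2) snd_conv
    proof (rule ctx1[OF rp, where da="{#}" and Qa="[Fm A0, Fm B0]" and Ca=D])
      show "\<forall>S''. rep A M (fill X ({#} + z, D1 @ [Fm A0, Fm B0] @ D2)) S'' \<longrightarrow> mder r False (S'', D)"
        by (rule IHr) (simp add: m_prodL)
    next
      fix X' w' D1' D2'
      assume p: "mder r False (fill X' ({#} + w', D1' @ [Fm A0, Fm B0] @ D2'), D)" and e: "S' = fill X' ({#} + w', D1' @ [Fm (Prod A0 B0)] @ D2')"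
      show "mder r False (S', D)" using R_prodL[of r False X' w' D1' A0 B0 D2' D] p e of' by simp
    next
      fix d Q' assume q: "repL A M d [Fm (Prod A0 B0)] Q'" and e: "S' = fill X ({#} + (d + z), D1 @ Q' @ D2)"
      from repL_Fm[OF q] have a: "A = Prod A0 B0" "d = fst M" "Q' = snd M" by auto
      from ri a obtain z1 Dl z2 Gl where m: "M = (z1 + z2, Dl @ Gl)" and d1: "mder r False ((z1, Dl), A0)"
        and d2: "mder r False ((z2, Gl), B0)" by auto
      have "rep B0 (z2, Gl) (fill X (z, (D1 @ [Fm A0]) @ Fm B0 # D2)) (fill X (fst (z2, Gl) + z, (D1 @ [Fm A0]) @ snd (z2, Gl) @ D2))"
        by (rule rep_fill_cut)
      then have d3: "mder r False (fill X (z2 + z, D1 @ Fm A0 # (Gl @ D2)), D)" using cutadmD[OF sub[of B0] d2] pd1 a by simp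
      have "rep A0 (z1, Dl) (fill X (z2 + z, D1 @ Fm A0 # (Gl @ D2))) (fill X (fst (z1, Dl) + (z2 + z), D1 @ snd (z1, Dl) @ (Gl @ D2)))"
        by (rule rep_fill_cut)
      then have "mder r False (fill X (z1 + (z2 + z), D1 @ Dl @ Gl @ D2), D)" using cutadmD[OF sub[of A0] d1 d3] a by simp
      then show "mder r False (S', D)" using e a m by (simp add: ac_simps)
    qed
  next
    case (m_prodR z1 Dl A0 z2 G B0)
    from rep_list[of A M "z1 + z2" "Dl @ G" S'] sp m_prodR obtain d L' where e: "S' = (d + (z1 + z2), L')"
      and q: "repL A M d (Dl @ G) L'" by auto
    have pd1: "mder r False ((z1, Dl), A0)" using pd m_prodR by simp
    have pd2: "mder r False ((z2, G), B0)" using pd m_prodR by simp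
    from repL_app[OF q] show ?thesis
    proof (elim disjE exE conjE)
      fix L1' assume q1: "L' = L1' @ G" and q2: "repL A M d Dl L1'"
      have x: "rep A M (z1, Dl) (d + z1, L1')" using repL_rep[OF q2] .
      have p1: "mder r False ((d + z1, L1'), A0)" by (rule IHr2[OF _ x]) (simp add: m_prodR)
      show ?thesis using R_prodR[OF p1 pd2] of e q1 m_prodR by (simp add: ac_simps)
    next
      fix L2' assume q1: "L' = Dl @ L2'" and q2: "repL A M d G L2'"
      have x: "rep A M (z2, G) (d + z2, L2')" using repL_rep[OF q2] .
      have p2: "mder r False ((d + z2, L2'), B0)" by (rule IHr2[OF _ x]) (simp add: m_prodR)
      show ?thesis using R_prodR[OF pd1 p2] of e q1 m_prodR by (simp add: ac_simps)
    qed
  next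
    case (m_oneL X z D1 D2 A0)
    have rp: "rep A M (fill X ({#} + z, D1 @ [Fm One] @ D2)) S'" using sp m_oneL by simp
    have pd1: "mder r False (fill X (z, D1 @ D2), A0)" using pd m_oneL by simp
    show ?thesis unfolding m_oneL(2) snd_conv
    proof (rule ctx1[OF rp, where da="{#}" and Qa="[]" and Ca=A0])
      show "\<forall>S''. rep A M (fill X ({#} + z, D1 @ [] @ D2)) S'' \<longrightarrow> mder r False (S'', A0)"
        by (rule IHr) (simp add: m_oneL)
    next
      fix X' w' D1' D2'
      assume p: "mder r False (fill X' ({#} + w', D1' @ [] @ D2'), A0)" and e: "S' = fill X' ({#} + w', D1' @ [Fm One] @ D2')"
      show "mder r False (S', A0)" using R_oneL[of r False X' w' D1' D2' A0] p e m_oneL by simp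
    next
      fix d Q' assume q: "repL A M d [Fm One] Q'" and e: "S' = fill X ({#} + (d + z), D1 @ Q' @ D2)"
      from repL_Fm[OF q] have a: "A = One" "d = fst M" "Q' = snd M" by auto
      from ri a have "M = ({#}, [])" by simp
      then show "mder r False (S', A0)" using e a pd1 by simp
    qed
  next
    case (m_orL X z D1 A1 D2 C A2)
    have rp: "rep A M (fill X ({#} + z, D1 @ [Fm (Or A1 A2)] @ D2)) S'" using sp m_orL by simp
    have pd1: "mder r False (fill X (z, D1 @ Fm A1 # D2), C)" using pd m_orL by simp
    have pd2: "mder r False (fill X (z, D1 @ Fm A2 # D2), C)" using pd m_orL by simp
    have of': "r \<Longrightarrow> onefree_seq (S', C)" using of m_orL by simp
    show ?thesis unfolding m_orL(2) snd_conv
    proof (rule ctx2[OF rp, where da="{#}" and Qa="[Fm A1]" and Ca=C and db="{#}" and Qb="[Fm A2]" and Cb=C])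
      show "\<forall>S''. rep A M (fill X ({#} + z, D1 @ [Fm A1] @ D2)) S'' \<longrightarrow> mder r False (S'', C)"
        by (rule IHr) (simp add: m_orL)
      show "\<forall>S''. rep A M (fill X ({#} + z, D1 @ [Fm A2] @ D2)) S'' \<longrightarrow> mder r False (S'', C)"
        by (rule IHr) (simp add: m_orL)
    next
      fix X' w' D1' D2'
      assume p1: "mder r False (fill X' ({#} + w', D1' @ [Fm A1] @ D2'), C)" and p2: "mder r False (fill X' ({#} + w', D1' @ [Fm A2] @ D2'), C)"
        and e: "S' = fill X' ({#} + w', D1' @ [Fm (Or A1 A2)] @ D2')"
      show "mder r False (S', C)" using R_orL[of r False X' w' D1' A1 D2' C A2] p1 p2 e of' by simp
    next
      fix d Q' assume q: "repL A M d [Fm (Or A1 A2)] Q'" and e: "S' = fill X ({#} + (d + z), D1 @ Q' @ D2)"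
      from repL_Fm[OF q] have a: "A = Or A1 A2" "d = fst M" "Q' = snd M" by auto
      from ri a have "mder r False (M, A1) \<or> mder r False (M, A2)" by simp
      then show "mder r False (S', C)"
      proof
        assume d1: "mder r False (M, A1)"
        have "rep A1 M (fill X (z, D1 @ Fm A1 # D2)) (fill X (fst M + z, D1 @ snd M @ D2))" by (rule rep_fill_cut)
        then show ?thesis using cutadmD[OF sub[of A1] d1 pd1] e a by simp
      next
        assume d1: "mder r False (M, A2)"
        have "rep A2 M (fill X (z, D1 @ Fm A2 # D2)) (fill X (fst M + z, D1 @ snd M @ D2))" by (rule rep_fill_cut)
        then show ?thesis using cutadmD[OF sub[of A2] d1 pd2] e a by simp
      qed
    qed
  next
    case (m_orR1 Y A1 A2)
    have p: "mder r False (S', A1)" by (rule IHr2[OF _ sp]) (simp add: m_orR1)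
    show ?thesis using R_orR1[OF p] of m_orR1 by simp
  next
    case (m_orR2 Y A2 A1)
    have p: "mder r False (S', A2)" by (rule IHr2[OF _ sp]) (simp add: m_orR2)
    show ?thesis using R_orR2[OF p] of m_orR2 by simp
  next
    case (m_andL1 X z D1 A1 D2 C A2)
    have rp: "rep A M (fill X ({#} + z, D1 @ [Fm (And A1 A2)] @ D2)) S'" using sp m_andL1 by simp
    have pd1: "mder r False (fill X (z, D1 @ Fm A1 # D2), C)" using pd m_andL1 by simp
    have of': "r \<Longrightarrow> onefree_seq (S', C)" using of m_andL1 by simp
    show ?thesis unfolding m_andL1(2) snd_conv
    proof (rule ctx1[OF rp, where da="{#}" and Qa="[Fm A1]" and Ca=C])
      show "\<forall>S''. rep A M (fill X ({#} + z, D1 @ [Fm A1] @ D2)) S'' \<longrightarrow> mder r False (S'', C)"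
        by (rule IHr) (simp add: m_andL1)
    next
      fix X' w' D1' D2'
      assume p: "mder r False (fill X' ({#} + w', D1' @ [Fm A1] @ D2'), C)" and e: "S' = fill X' ({#} + w', D1' @ [Fm (And A1 A2)] @ D2')"
      show "mder r False (S', C)" using R_andL1[of r False X' w' D1' A1 D2' C A2] p e of' by simp
    next
      fix d Q' assume q: "repL A M d [Fm (And A1 A2)] Q'" and e: "S' = fill X ({#} + (d + z), D1 @ Q' @ D2)"
      from repL_Fm[OF q] have a: "A = And A1 A2" "d = fst M" "Q' = snd M" by auto
      from ri a have d1: "mder r False (M, A1)" by simp
      have "rep A1 M (fill X (z, D1 @ Fm A1 # D2)) (fill X (fst M + z, D1 @ snd M @ D2))" by (rule rep_fill_cut)
      then show "mder r False (S', C)" using cutadmD[OF sub[of A1] d1 pd1] e a by simp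
    qed
  next
    case (m_andL2 X z D1 A2 D2 C A1)
    have rp: "rep A M (fill X ({#} + z, D1 @ [Fm (And A1 A2)] @ D2)) S'" using sp m_andL2 by simp
    have pd1: "mder r False (fill X (z, D1 @ Fm A2 # D2), C)" using pd m_andL2 by simp
    have of': "r \<Longrightarrow> onefree_seq (S', C)" using of m_andL2 by simp
    show ?thesis unfolding m_andL2(2) snd_conv
    proof (rule ctx1[OF rp, where da="{#}" and Qa="[Fm A2]" and Ca=C])
      show "\<forall>S''. rep A M (fill X ({#} + z, D1 @ [Fm A2] @ D2)) S'' \<longrightarrow> mder r False (S'', C)"
        by (rule IHr) (simp add: m_andL2)
    next
      fix X' w' D1' D2'
      assume p: "mder r False (fill X' ({#} + w', D1' @ [Fm A2] @ D2'), C)" and e: "S' = fill X' ({#} + w', D1' @ [Fm (And A1 A2)] @ D2')"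
      show "mder r False (S', C)" using R_andL2[of r False X' w' D1' A2 D2' C A1] p e of' by simp
    next
      fix d Q' assume q: "repL A M d [Fm (And A1 A2)] Q'" and e: "S' = fill X ({#} + (d + z), D1 @ Q' @ D2)"
      from repL_Fm[OF q] have a: "A = And A1 A2" "d = fst M" "Q' = snd M" by auto
      from ri a have d1: "mder r False (M, A2)" by simp
      have "rep A2 M (fill X (z, D1 @ Fm A2 # D2)) (fill X (fst M + z, D1 @ snd M @ D2))" by (rule rep_fill_cut)
      then show "mder r False (S', C)" using cutadmD[OF sub[of A2] d1 pd1] e a by simp
    qed
  next
    case (m_andR Y A1 A2)
    have p1: "mder r False (S', A1)" by (rule IHr2[OF _ sp]) (simp add: m_andR)
    have p2: "mder r False (S', A2)" by (rule IHr2[OF _ sp]) (simp add: m_andR)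
    show ?thesis using R_andR[OF p1 p2] of m_andR by simp
  next
    case (m_boxL X z D1 A0 D2 B1)
    have rp: "rep A M (fill X ({#} + z, D1 @ [Br ({#}, [Fm (Box A0)])] @ D2)) S'" using sp m_boxL by simp
    have pd1: "mder r False (fill X (z, D1 @ Fm A0 # D2), B1)" using pd m_boxL by simp
    have of': "r \<Longrightarrow> onefree_seq (S', B1)" using of m_boxL by simp
    show ?thesis unfolding m_boxL(2) snd_conv
    proof (rule ctx1[OF rp, where da="{#}" and Qa="[Fm A0]" and Ca=B1])
      show "\<forall>S''. rep A M (fill X ({#} + z, D1 @ [Fm A0] @ D2)) S'' \<longrightarrow> mder r False (S'', B1)"
        by (rule IHr) (simp add: m_boxL)
    next
      fix X' w' D1' D2'
      assume p: "mder r False (fill X' ({#} + w', D1' @ [Fm A0] @ D2'), B1)" and e: "S' = fill X' ({#} + w', D1' @ [Br ({#}, [Fm (Box A0)])] @ D2')"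
      show "mder r False (S', B1)" using R_boxL[of r False X' w' D1' A0 D2' B1] p e of' by simp
    next
      fix d Q' assume q: "repL A M d [Br ({#}, [Fm (Box A0)])] Q'" and e: "S' = fill X ({#} + (d + z), D1 @ Q' @ D2)"
      from repL_Br[OF q] obtain N' where d0: "d = {#}" and n: "rep A M ({#}, [Fm (Box A0)]) N'" and q': "Q' = [Br N']" by blast
      from rep_single_Fm[OF n] have a: "A = Box A0" "N' = (fst M + {#}, snd M)" by auto
      then have nm: "N' = M" by simp
      from ri a have d1: "mder r False (({#}, [Br M]), A0)" by auto
      have "rep A0 ({#}, [Br M]) (fill X (z, D1 @ Fm A0 # D2)) (fill X (fst ({#}, [Br M]) + z, D1 @ snd ({#}, [Br M]) @ D2))" using rep_fill_cut[of A0 "({#}, [Br M])" X z D1 D2] by simp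
      then show "mder r False (S', B1)" using cutadmD[OF sub[of A0] d1 pd1] e a d0 q' nm by simp
    qed
  next
    case (m_boxR Y A0)
    have x: "rep A M ({#}, [Br Y]) ({#}, [Br S'])" using rep_deep[of A M Y S' "{#}" "[]" "[]"] sp m_boxR by simp
    have p: "mder r False (({#}, [Br S']), A0)" by (rule IHr2[OF _ x]) (simp add: m_boxR)
    show ?thesis using R_boxR[OF p] of m_boxR by simp
  next
    case (m_diaL X z D1 A0 D2 B1)
    have rp: "rep A M (fill X ({#} + z, D1 @ [Fm (Dia A0)] @ D2)) S'" using sp m_diaL by simp
    have pd1: "mder r False (fill X (z, D1 @ Br ({#}, [Fm A0]) # D2), B1)" using pd m_diaL by simp
    have of': "r \<Longrightarrow> onefree_seq (S', B1)" using of m_diaL by simp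
    show ?thesis unfolding m_diaL(2) snd_conv
    proof (rule ctx1[OF rp, where da="{#}" and Qa="[Br ({#}, [Fm A0])]" and Ca=B1])
      show "\<forall>S''. rep A M (fill X ({#} + z, D1 @ [Br ({#}, [Fm A0])] @ D2)) S'' \<longrightarrow> mder r False (S'', B1)"
        by (rule IHr) (simp add: m_diaL)
    next
      fix X' w' D1' D2'
      assume p: "mder r False (fill X' ({#} + w', D1' @ [Br ({#}, [Fm A0])] @ D2'), B1)" and e: "S' = fill X' ({#} + w', D1' @ [Fm (Dia A0)] @ D2')"
      show "mder r False (S', B1)" using R_diaL[of r False X' w' D1' A0 D2' B1] p e of' by simp
    next
      fix d Q' assume q: "repL A M d [Fm (Dia A0)] Q'" and e: "S' = fill X ({#} + (d + z), D1 @ Q' @ D2)"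
      from repL_Fm[OF q] have a: "A = Dia A0" "d = fst M" "Q' = snd M" by auto
      from ri a obtain Y where m: "M = ({#}, [Br Y])" and d1: "mder r False (Y, A0)" by auto
      have "rep A0 Y (fill (cat X (CBr z D1 Hole D2)) ({#}, [] @ Fm A0 # [])) (fill (cat X (CBr z D1 Hole D2)) (fst Y + {#}, [] @ snd Y @ []))"
        by (rule rep_fill_cut)
      then have "mder r False (fill (cat X (CBr z D1 Hole D2)) (fst Y + {#}, [] @ snd Y @ []), B1)"
        using cutadmD[OF sub[of A0] d1] pd1 a by (simp add: fill_cat)
      then show "mder r False (S', B1)" using e a m by (simp add: fill_cat)
    qed
  next
    case (m_diaR Y A0)
    from rep_list[of A M "{#}" "[Br Y]" S'] sp m_diaR obtain d L' where e: "S' = (d + {#}, L')" and q: "repL A M d [Br Y] L'" by auto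
    from repL_Br[OF q] obtain Y' where "d = {#}" and y: "rep A M Y Y'" and "L' = [Br Y']" by blast
    then have e': "S' = ({#}, [Br Y'])" using e by simp
    have p: "mder r False (Y', A0)" by (rule IHr2[OF _ y]) (simp add: m_diaR)
    show ?thesis using R_diaR[OF p] of e' m_diaR by simp
  next
    case (m_bangL X z A0 G1 G2 B1)
    have rp: "rep A M (fill X ({#} + z, G1 @ [Fm (Bang A0)] @ G2)) S'" using sp m_bangL by simp
    have pd1: "mder r False (fill X (z + {#A0#}, G1 @ G2), B1)" using pd m_bangL by simp
    have of': "r \<Longrightarrow> onefree_seq (S', B1)" using of m_bangL by simp
    show ?thesis unfolding m_bangL(2) snd_conv
    proof (rule ctx1[OF rp, where da="{#A0#}" and Qa="[]" and Ca=B1])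
      show "\<forall>S''. rep A M (fill X ({#A0#} + z, G1 @ [] @ G2)) S'' \<longrightarrow> mder r False (S'', B1)"
        by (rule IHr) (simp add: m_bangL ac_simps)
    next
      fix X' w' D1' D2'
      assume p: "mder r False (fill X' ({#A0#} + w', D1' @ [] @ D2'), B1)" and e: "S' = fill X' ({#} + w', D1' @ [Fm (Bang A0)] @ D2')"
      show "mder r False (S', B1)" using R_bangL[of r False X' w' A0 D1' D2' B1] p e of' by (simp add: ac_simps)
    next
      fix d Q' assume q: "repL A M d [Fm (Bang A0)] Q'" and e: "S' = fill X ({#} + (d + z), G1 @ Q' @ G2)"
      from repL_Fm[OF q] have a: "A = Bang A0" "d = fst M" "Q' = snd M" by auto
      from ri a obtain A' where m: "M = ({#A'#}, [])" and d1: "mder r False (({#A'#}, []), A0)" by auto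
      have "srs A0 A' (z + {#A0#}) (z + {#A'#})" using srs_add[OF srs_refl srs_singleI] .
      then have "srep A0 A' (z + {#A0#}, G1 @ G2) (z + {#A'#}, G1 @ G2)" by (simp add: srep_I srepL_refl)
      then have "srep A0 A' (fill X (z + {#A0#}, G1 @ G2)) (fill X (z + {#A'#}, G1 @ G2))" by (rule srep_fill_in)
      then have "mder r False (fill X (z + {#A'#}, G1 @ G2), B1)"
        using slem[OF sub[of A0] d1, of "(fill X (z + {#A0#}, G1 @ G2), B1)"] pd1 a by simp
      then show "mder r False (S', B1)" using e a m by (simp add: ac_simps)
    qed
  next
    case (m_bangP X z G1 A0 G2 B1)
    have rp: "rep A M (fill X ({#A0#} + z, G1 @ [] @ G2)) S'" using sp m_bangP by (simp add: ac_simps)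
    have of': "r \<Longrightarrow> onefree_seq (S', B1)" using of m_bangP by simp
    show ?thesis unfolding m_bangP(2) snd_conv
    proof (rule ctx1[OF rp, where da="{#}" and Qa="[Fm A0]" and Ca=B1])
      show "\<forall>S''. rep A M (fill X ({#} + z, G1 @ [Fm A0] @ G2)) S'' \<longrightarrow> mder r False (S'', B1)"
        by (rule IHr) (simp add: m_bangP)
    next
      fix X' w' D1' D2'
      assume p: "mder r False (fill X' ({#} + w', D1' @ [Fm A0] @ D2'), B1)" and e: "S' = fill X' ({#A0#} + w', D1' @ [] @ D2')"
      show "mder r False (S', B1)" using R_bangP[of r False X' w' D1' A0 D2' B1] p e of' by (simp add: ac_simps)
    next
      fix d Q' assume q: "repL A M d [] Q'"
      then show "mder r False (S', B1)" using repL_Nil by blast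
    qed
  next
    case (m_bangR A0 B1)
    then show ?thesis using sp rep_list[of A M "{#A0#}" "[]" S'] repL_Nil by fastforce
  next
    case (m_bangC G2 z' X z A0 G1 G3 B1)
    have rp: "rep A M (fill X ({#A0#} + z, G1 @ [Br ({#}, [Br (z', G2)])] @ G3)) S'" using sp m_bangC by (simp add: ac_simps)
    have of': "r \<Longrightarrow> onefree_seq (S', B1)" using of m_bangC by simp
    have c0: "r \<longrightarrow> G2 \<noteq> [] \<or> z' \<noteq> {#}" using m_bangC by simp
    show ?thesis unfolding m_bangC(2) snd_conv
    proof (rule ctx1[OF rp, where da="{#A0#}" and Qa="[Br (z' + {#A0#}, G2)]" and Ca=B1])
      show "\<forall>S''. rep A M (fill X ({#A0#} + z, G1 @ [Br (z' + {#A0#}, G2)] @ G3)) S'' \<longrightarrow> mder r False (S'', B1)"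
        by (rule IHr) (simp add: m_bangC ac_simps)
    next
      fix X' w' D1' D2'
      assume p: "mder r False (fill X' ({#A0#} + w', D1' @ [Br (z' + {#A0#}, G2)] @ D2'), B1)" and e: "S' = fill X' ({#A0#} + w', D1' @ [Br ({#}, [Br (z', G2)])] @ D2')"
      show "mder r False (S', B1)" using R_bangC[OF c0, of False X' w' A0 D1' D2' B1] p e of' by (simp add: ac_simps)
    next
      fix d Q' assume q: "repL A M d [Br ({#}, [Br (z', G2)])] Q'" and e: "S' = fill X ({#A0#} + (d + z), G1 @ Q' @ G3)"
      from repL_Br[OF q] obtain N' where d0: "d = {#}" and n: "rep A M ({#}, [Br (z', G2)]) N'" and q': "Q' = [Br N']" by blast
      from rep_list[OF n] obtain d2 L' where e2: "N' = (d2 + {#}, L')" and q2: "repL A M d2 [Br (z', G2)] L'" by blast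
      from repL_Br[OF q2] obtain N'' where d20: "d2 = {#}" and n2: "rep A M (z', G2) N''" and q3: "L' = [Br N'']" by blast
      from rep_list[OF n2] obtain d3 G2' where e3: "N'' = (d3 + z', G2')" and q4: "repL A M d3 G2 G2'" by blast
      have "rep A M (z' + {#A0#}, G2) (d3 + (z' + {#A0#}), G2')" using repL_rep[OF q4] .
      then have "rep A M (fill X (z + {#A0#}, G1 @ Br (z' + {#A0#}, G2) # G3)) (fill X (z + {#A0#}, G1 @ Br ((d3 + z') + {#A0#}, G2') # G3))"
        using rep_fill_in[OF rep_deep[of A M "(z' + {#A0#}, G2)" "(d3 + (z' + {#A0#}), G2')" "z + {#A0#}" G1 G3]] by (simp add: ac_simps)
      then have p: "mder r False (fill X (z + {#A0#}, G1 @ Br ((d3 + z') + {#A0#}, G2') # G3), B1)"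
        by (rule IHr2[rotated]) (simp add: m_bangC)
      have c: "r \<longrightarrow> G2' \<noteq> [] \<or> d3 + z' \<noteq> {#}" using repL_ne[OF q4] neM by auto
      show "mder r False (S', B1)" using R_bangC[OF c p] e d0 q' e2 d20 q3 e3 of' by (simp add: ac_simps)
    qed
  next
    case m_cut
    then show ?thesis by simp
  qed
qed

lemma ne_left: "mder r False (M, A) \<Longrightarrow> r \<Longrightarrow> fst M \<noteq> {#} \<or> snd M \<noteq> []"
  using ne_inv[of False "(M, A)"] by (simp add: nem_def)

lemma cut_step:
  assumes sub: "\<And>F. size F < size A \<Longrightarrow> cutadm r F"
  shows "mder r False sa \<Longrightarrow> snd sa = A \<Longrightarrow> mder r False (S, C) \<Longrightarrow> rep A (fst sa) S S' \<Longrightarrow> mder r False (S', C)"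
proof (induction arbitrary: S S' C rule: mder.induct)
  case (1 ps sa)
  have IHl: "\<And>S0. (S0, A) \<in> set ps \<Longrightarrow> \<forall>S''. rep A S0 S S'' \<longrightarrow> mder r False (S'', C)"
  proof
    fix S0 S'' assume m: "(S0, A) \<in> set ps"
    show "rep A S0 S S'' \<longrightarrow> mder r False (S'', C)" using conjunct2[OF bspec[OF 1(3) m], rule_format, of S C S''] 1(5) by simp
  qed
  have pd: "\<And>p. p \<in> set ps \<Longrightarrow> mder r False p" using 1(3) by blast
  have ds: "mder r False sa" using 1(1,3,2) by (rule mder_intro)
  have dM: "mder r False (fst sa, A)" using ds 1(4) by (metis prod.collapse)
  have dS: "mder r False (S, C)" by fact
  have sp: "rep A (fst sa) S S'" by fact
  have of: "r \<Longrightarrow> onefree_seq (S', C)"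
  proof -
    assume r
    have "ofm (fst sa)" using mder_of[OF dM \<open>r\<close>] by (simp add: onefree_seq_ofm)
    moreover have "ofm S \<and> onefree C" using mder_of[OF dS \<open>r\<close>] by (simp add: onefree_seq_ofm)
    ultimately show "onefree_seq (S', C)" using rep_ofm[OF sp] by (simp add: onefree_seq_ofm)
  qed
  have right: "rinfo r A (fst sa) \<Longrightarrow> mder r False (S', C)"
    using cut_d2[OF dM _ sub ne_left[OF dM], of "(S, C)" S'] dS sp by simp
  from 1(1) show ?case
  proof (cases rule: mrule.cases)
    case (m_ax F)
    from m_ax 1(4) have "F = A" by simp
    then have "rep A ({#}, [Fm A]) S S'" using sp m_ax by simp
    then have "S' = S" by (rule rep_same)
    then show ?thesis using dS by simp
  next
    case m_oneR
    have a: "A = One" using m_oneR 1(4) by simp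
    then show ?thesis using right m_oneR by simp
  next
    case (m_overL z1 G B X z2 D1 C0 D2 D)
    have rp: "rep A (fill X (z1 + z2, D1 @ (Fm (Over C0 B) # G) @ D2)) S S'" using sp m_overL by simp
    have pd1: "mder r False ((z1, G), B)" using pd m_overL by simp
    show ?thesis
    proof (rule left1[OF rp, where da="{#}" and Qa="[Fm C0]"])
      show "\<forall>S''. rep A (fill X ({#} + z2, D1 @ [Fm C0] @ D2)) S S'' \<longrightarrow> mder r False (S'', C)"
        by (rule IHl) (use m_overL 1(4) in simp)
    next
      fix X' w' D1' D2'
      assume p: "mder r False (fill X' ({#} + w', D1' @ [Fm C0] @ D2'), C)" and e: "S' = fill X' (z1 + w', D1' @ (Fm (Over C0 B) # G) @ D2')"
      show "mder r False (S', C)" using R_overL[OF pd1, of X' w' D1' C0 D2' C] p e of by simp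
    qed
  next
    case (m_overR G z B C0)
    have a: "A = Over C0 B" using m_overR 1(4) by simp
    have "mder r False ((z, G @ [Fm B]), C0)" using pd m_overR by simp
    then have "rinfo r A (fst sa)" using m_overR a by simp
    then show ?thesis by (rule right)
  next
    case (m_underL z1 G A0 X z2 D1 C0 D2 D)
    have rp: "rep A (fill X (z1 + z2, D1 @ (G @ [Fm (Under A0 C0)]) @ D2)) S S'" using sp m_underL by simp
    have pd1: "mder r False ((z1, G), A0)" using pd m_underL by simp
    show ?thesis
    proof (rule left1[OF rp, where da="{#}" and Qa="[Fm C0]"])
      show "\<forall>S''. rep A (fill X ({#} + z2, D1 @ [Fm C0] @ D2)) S S'' \<longrightarrow> mder r False (S'', C)"
        by (rule IHl) (use m_underL 1(4) in simp)
    next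
      fix X' w' D1' D2'
      assume p: "mder r False (fill X' ({#} + w', D1' @ [Fm C0] @ D2'), C)" and e: "S' = fill X' (z1 + w', D1' @ (G @ [Fm (Under A0 C0)]) @ D2')"
      show "mder r False (S', C)" using R_underL[OF pd1, of X' w' D1' C0 D2' C] p e of by simp
    qed
  next
    case (m_underR G z A0 C0)
    have a: "A = Under A0 C0" using m_underR 1(4) by simp
    have "mder r False ((z, Fm A0 # G), C0)" using pd m_underR by simp
    then have "rinfo r A (fst sa)" using m_underR a by simp
    then show ?thesis by (rule right)
  next
    case (m_prodL X z D1 A0 B0 D2 D)
    have rp: "rep A (fill X ({#} + z, D1 @ [Fm (Prod A0 B0)] @ D2)) S S'" using sp m_prodL by simp
    show ?thesis
    proof (rule left1[OF rp, where da="{#}" and Qa="[Fm A0, Fm B0]"])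
      show "\<forall>S''. rep A (fill X ({#} + z, D1 @ [Fm A0, Fm B0] @ D2)) S S'' \<longrightarrow> mder r False (S'', C)"
        by (rule IHl) (use m_prodL 1(4) in simp)
    next
      fix X' w' D1' D2'
      assume p: "mder r False (fill X' ({#} + w', D1' @ [Fm A0, Fm B0] @ D2'), C)" and e: "S' = fill X' ({#} + w', D1' @ [Fm (Prod A0 B0)] @ D2')"
      show "mder r False (S', C)" using R_prodL[of r False X' w' D1' A0 B0 D2' C] p e of by simp
    qed
  next
    case (m_prodR z1 D0 A0 z2 G B0)
    have a: "A = Prod A0 B0" using m_prodR 1(4) by simp
    have d1: "mder r False ((z1, D0), A0)" using pd m_prodR by simp
    have d2: "mder r False ((z2, G), B0)" using pd m_prodR by simp
    have "rinfo r (Prod A0 B0) (z1 + z2, D0 @ G)" using d1 d2 by simp blast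
    then have "rinfo r A (fst sa)" using m_prodR a by simp
    then show ?thesis by (rule right)
  next
    case (m_oneL X z D1 D2 A0)
    have rp: "rep A (fill X ({#} + z, D1 @ [Fm One] @ D2)) S S'" using sp m_oneL by simp
    show ?thesis
    proof (rule left1[OF rp, where da="{#}" and Qa="[]"])
      show "\<forall>S''. rep A (fill X ({#} + z, D1 @ [] @ D2)) S S'' \<longrightarrow> mder r False (S'', C)"
        by (rule IHl) (use m_oneL 1(4) in simp)
    next
      fix X' w' D1' D2'
      assume p: "mder r False (fill X' ({#} + w', D1' @ [] @ D2'), C)" and e: "S' = fill X' ({#} + w', D1' @ [Fm One] @ D2')"
      show "mder r False (S', C)" using R_oneL[of r False X' w' D1' D2' C] p e m_oneL by simp
    qed
  next
    case (m_orL X z D1 A1 D2 C0 A2)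
    have rp: "rep A (fill X ({#} + z, D1 @ [Fm (Or A1 A2)] @ D2)) S S'" using sp m_orL by simp
    show ?thesis
    proof (rule left2[OF rp, where da="{#}" and Qa="[Fm A1]" and db="{#}" and Qb="[Fm A2]"])
      show "\<forall>S''. rep A (fill X ({#} + z, D1 @ [Fm A1] @ D2)) S S'' \<longrightarrow> mder r False (S'', C)"
        by (rule IHl) (use m_orL 1(4) in simp)
      show "\<forall>S''. rep A (fill X ({#} + z, D1 @ [Fm A2] @ D2)) S S'' \<longrightarrow> mder r False (S'', C)"
        by (rule IHl) (use m_orL 1(4) in simp)
    next
      fix X' w' D1' D2'
      assume p1: "mder r False (fill X' ({#} + w', D1' @ [Fm A1] @ D2'), C)" and p2: "mder r False (fill X' ({#} + w', D1' @ [Fm A2] @ D2'), C)"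
        and e: "S' = fill X' ({#} + w', D1' @ [Fm (Or A1 A2)] @ D2')"
      show "mder r False (S', C)" using R_orL[of r False X' w' D1' A1 D2' C A2] p1 p2 e of by simp
    qed
  next
    case (m_orR1 Y A1 A2)
    have a: "A = Or A1 A2" using m_orR1 1(4) by simp
    have "mder r False (Y, A1)" using pd m_orR1 by simp
    then have "rinfo r A (fst sa)" using m_orR1 a by simp
    then show ?thesis by (rule right)
  next
    case (m_orR2 Y A2 A1)
    have a: "A = Or A1 A2" using m_orR2 1(4) by simp
    have "mder r False (Y, A2)" using pd m_orR2 by simp
    then have "rinfo r A (fst sa)" using m_orR2 a by simp
    then show ?thesis by (rule right)
  next
    case (m_andL1 X z D1 A1 D2 C0 A2)
    have rp: "rep A (fill X ({#} + z, D1 @ [Fm (And A1 A2)] @ D2)) S S'" using sp m_andL1 by simp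
    show ?thesis
    proof (rule left1[OF rp, where da="{#}" and Qa="[Fm A1]"])
      show "\<forall>S''. rep A (fill X ({#} + z, D1 @ [Fm A1] @ D2)) S S'' \<longrightarrow> mder r False (S'', C)"
        by (rule IHl) (use m_andL1 1(4) in simp)
    next
      fix X' w' D1' D2'
      assume p: "mder r False (fill X' ({#} + w', D1' @ [Fm A1] @ D2'), C)" and e: "S' = fill X' ({#} + w', D1' @ [Fm (And A1 A2)] @ D2')"
      show "mder r False (S', C)" using R_andL1[of r False X' w' D1' A1 D2' C A2] p e of by simp
    qed
  next
    case (m_andL2 X z D1 A2 D2 C0 A1)
    have rp: "rep A (fill X ({#} + z, D1 @ [Fm (And A1 A2)] @ D2)) S S'" using sp m_andL2 by simp
    show ?thesis
    proof (rule left1[OF rp, where da="{#}" and Qa="[Fm A2]"])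
      show "\<forall>S''. rep A (fill X ({#} + z, D1 @ [Fm A2] @ D2)) S S'' \<longrightarrow> mder r False (S'', C)"
        by (rule IHl) (use m_andL2 1(4) in simp)
    next
      fix X' w' D1' D2'
      assume p: "mder r False (fill X' ({#} + w', D1' @ [Fm A2] @ D2'), C)" and e: "S' = fill X' ({#} + w', D1' @ [Fm (And A1 A2)] @ D2')"
      show "mder r False (S', C)" using R_andL2[of r False X' w' D1' A2 D2' C A1] p e of by simp
    qed
  next
    case (m_andR Y A1 A2)
    have a: "A = And A1 A2" using m_andR 1(4) by simp
    have "mder r False (Y, A1)" "mder r False (Y, A2)" using pd m_andR by simp_all
    then have "rinfo r A (fst sa)" using m_andR a by simp
    then show ?thesis by (rule right)
  next
    case (m_boxL X z D1 A0 D2 B0)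
    have rp: "rep A (fill X ({#} + z, D1 @ [Br ({#}, [Fm (Box A0)])] @ D2)) S S'" using sp m_boxL by simp
    show ?thesis
    proof (rule left1[OF rp, where da="{#}" and Qa="[Fm A0]"])
      show "\<forall>S''. rep A (fill X ({#} + z, D1 @ [Fm A0] @ D2)) S S'' \<longrightarrow> mder r False (S'', C)"
        by (rule IHl) (use m_boxL 1(4) in simp)
    next
      fix X' w' D1' D2'
      assume p: "mder r False (fill X' ({#} + w', D1' @ [Fm A0] @ D2'), C)" and e: "S' = fill X' ({#} + w', D1' @ [Br ({#}, [Fm (Box A0)])] @ D2')"
      show "mder r False (S', C)" using R_boxL[of r False X' w' D1' A0 D2' C] p e of by simp
    qed
  next
    case (m_boxR Y A0)
    have a: "A = Box A0" using m_boxR 1(4) by simp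
    have "mder r False (({#}, [Br Y]), A0)" using pd m_boxR by simp
    then have "rinfo r A (fst sa)" using m_boxR a by simp
    then show ?thesis by (rule right)
  next
    case (m_diaL X z D1 A0 D2 B0)
    have rp: "rep A (fill X ({#} + z, D1 @ [Fm (Dia A0)] @ D2)) S S'" using sp m_diaL by simp
    show ?thesis
    proof (rule left1[OF rp, where da="{#}" and Qa="[Br ({#}, [Fm A0])]"])
      show "\<forall>S''. rep A (fill X ({#} + z, D1 @ [Br ({#}, [Fm A0])] @ D2)) S S'' \<longrightarrow> mder r False (S'', C)"
        by (rule IHl) (use m_diaL 1(4) in simp)
    next
      fix X' w' D1' D2'
      assume p: "mder r False (fill X' ({#} + w', D1' @ [Br ({#}, [Fm A0])] @ D2'), C)" and e: "S' = fill X' ({#} + w', D1' @ [Fm (Dia A0)] @ D2')"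
      show "mder r False (S', C)" using R_diaL[of r False X' w' D1' A0 D2' C] p e of by simp
    qed
  next
    case (m_diaR Y A0)
    have a: "A = Dia A0" using m_diaR 1(4) by simp
    have "mder r False (Y, A0)" using pd m_diaR by simp
    then have "rinfo r (Dia A0) ({#}, [Br Y])" by simp
    then have "rinfo r A (fst sa)" using m_diaR a by simp
    then show ?thesis by (rule right)
  next
    case (m_bangL X z A0 G1 G2 B0)
    have rp: "rep A (fill X ({#} + z, G1 @ [Fm (Bang A0)] @ G2)) S S'" using sp m_bangL by simp
    show ?thesis
    proof (rule left1[OF rp, where da="{#A0#}" and Qa="[]"])
      show "\<forall>S''. rep A (fill X ({#A0#} + z, G1 @ [] @ G2)) S S'' \<longrightarrow> mder r False (S'', C)"
        by (rule IHl) (use m_bangL 1(4) in \<open>simp add: ac_simps\<close>)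
    next
      fix X' w' D1' D2'
      assume p: "mder r False (fill X' ({#A0#} + w', D1' @ [] @ D2'), C)" and e: "S' = fill X' ({#} + w', D1' @ [Fm (Bang A0)] @ D2')"
      show "mder r False (S', C)" using R_bangL[of r False X' w' A0 D1' D2' C] p e of by (simp add: ac_simps)
    qed
  next
    case (m_bangP X z G1 A0 G2 B0)
    have rp: "rep A (fill X ({#A0#} + z, G1 @ [] @ G2)) S S'" using sp m_bangP by (simp add: ac_simps)
    show ?thesis
    proof (rule left1[OF rp, where da="{#}" and Qa="[Fm A0]"])
      show "\<forall>S''. rep A (fill X ({#} + z, G1 @ [Fm A0] @ G2)) S S'' \<longrightarrow> mder r False (S'', C)"
        by (rule IHl) (use m_bangP 1(4) in simp)
    next
      fix X' w' D1' D2'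
      assume p: "mder r False (fill X' ({#} + w', D1' @ [Fm A0] @ D2'), C)" and e: "S' = fill X' ({#A0#} + w', D1' @ [] @ D2')"
      show "mder r False (S', C)" using R_bangP[of r False X' w' D1' A0 D2' C] p e of by (simp add: ac_simps)
    qed
  next
    case (m_bangR A0 B0)
    have a: "A = Bang B0" using m_bangR 1(4) by simp
    have "mder r False (({#A0#}, []), B0)" using pd m_bangR by simp
    then have "rinfo r (Bang B0) ({#A0#}, [])" by simp
    then have "rinfo r A (fst sa)" using m_bangR a by simp
    then show ?thesis by (rule right)
  next
    case (m_bangC G2 z' X z A0 G1 G3 B0)
    have rp: "rep A (fill X ({#A0#} + z, G1 @ [Br ({#}, [Br (z', G2)])] @ G3)) S S'" using sp m_bangC by (simp add: ac_simps)
    have c0: "r \<longrightarrow> G2 \<noteq> [] \<or> z' \<noteq> {#}" using m_bangC by simp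
    show ?thesis
    proof (rule left1[OF rp, where da="{#A0#}" and Qa="[Br (z' + {#A0#}, G2)]"])
      show "\<forall>S''. rep A (fill X ({#A0#} + z, G1 @ [Br (z' + {#A0#}, G2)] @ G3)) S S'' \<longrightarrow> mder r False (S'', C)"
        by (rule IHl) (use m_bangC 1(4) in \<open>simp add: ac_simps\<close>)
    next
      fix X' w' D1' D2'
      assume p: "mder r False (fill X' ({#A0#} + w', D1' @ [Br (z' + {#A0#}, G2)] @ D2'), C)" and e: "S' = fill X' ({#A0#} + w', D1' @ [Br ({#}, [Br (z', G2)])] @ D2')"
      show "mder r False (S', C)" using R_bangC[OF c0, of False X' w' A0 D1' D2' C] p e of by (simp add: ac_simps)
    qed
  next
    case m_cut
    then show ?thesis by simp
  qed
qed

lemma cut_adm: "cutadm r A"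
proof (induction A rule: measure_induct_rule[of size])
  case (less A)
  show ?case unfolding cutadm_def
  proof (intro allI impI)
    fix M S S' C assume a: "mder r False (M, A)" "mder r False (S, C)" "rep A M S S'"
    show "mder r False (S', C)" using cut_step[OF less, where sa="(M, A)"] a by simp
  qed
qed

lemma mrule_nocut: "mrule r True ps s \<Longrightarrow>
   (\<exists>xi P A X z G1 G2 C. ps = [((xi, P), A), (fill X (z, G1 @ [Fm A] @ G2), C)] \<and> s = (fill X (xi + z, G1 @ P @ G2), C))
   \<or> mrule r False ps s"
  apply (induction rule: mrule.induct)
                         prefer 24 apply blast
  apply (rule disjI2, rule mrule.intros, (assumption)?)+
  done

theorem cut_elim: "mder r True s \<Longrightarrow> mder r False s"
proof (induction rule: mder.induct)
  case (1 ps s)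
  have pd: "\<And>p. p \<in> set ps \<Longrightarrow> mder r False p" using 1(3) by blast
  from mrule_nocut[OF 1(1)] show ?case
  proof
    assume "\<exists>xi P A X z G1 G2 C. ps = [((xi, P), A), (fill X (z, G1 @ [Fm A] @ G2), C)] \<and> s = (fill X (xi + z, G1 @ P @ G2), C)"
    then obtain xi P A X z G1 G2 C where e1: "ps = [((xi, P), A), (fill X (z, G1 @ [Fm A] @ G2), C)]"
      and e2: "s = (fill X (xi + z, G1 @ P @ G2), C)" by blast
    have d1: "mder r False ((xi, P), A)" using pd e1 by simp
    have d2: "mder r False (fill X (z, G1 @ Fm A # G2), C)" using pd e1 by simp
    have "rep A (xi, P) (fill X (z, G1 @ Fm A # G2)) (fill X (fst (xi, P) + z, G1 @ snd (xi, P) @ G2))"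
      by (rule rep_fill_cut)
    then show ?thesis using cutadmD[OF cut_adm d1 d2] e2 by simp
  next
    assume "mrule r False ps s"
    then show ?thesis using pd 1(2) by (intro mder.intros) auto
  qed
qed

definition lst :: "stoup \<Rightarrow> formula list" where
  "lst z = (SOME xs. mset xs = z)"

lemma mset_lst[simp]: "mset (lst z) = z"
  unfolding lst_def by (rule someI_ex) (rule ex_mset)

definition bl :: "formula list \<Rightarrow> tterm list" where
  "bl xs = map (\<lambda>A. Fm (Bang A)) xs"

abbreviation bangs :: "stoup \<Rightarrow> tterm list" where
  "bangs z \<equiv> bl (lst z)"

lemma bl_simps[simp]: "bl [] = []" "bl (x # xs) = Fm (Bang x) # bl xs" "bl (xs @ ys) = bl xs @ bl ys"
  by (simp_all add: bl_def)

lemma lst_empty[simp]: "lst {#} = []"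
  using mset_lst[of "{#}"] by (simp del: mset_lst)

lemma lst_single[simp]: "lst {#A#} = [A]"
  using mset_lst[of "{#A#}"] by (cases "lst {#A#}") (auto simp del: mset_lst)

lemma set_bl: "set (bl xs) = (\<lambda>A. Fm (Bang A)) ` set xs"
  by (simp add: bl_def)

lemma set_lst[simp]: "set (lst z) = set_mset z"
  by (metis mset_lst set_mset_mset)

fun trt :: "tterm \<Rightarrow> tterm" where
  "trt (Fm A) = Fm A"
| "trt (Br (z, G)) = Br ({#}, bangs z @ map trt G)"

definition trm :: "meta \<Rightarrow> meta" where
  "trm M = ({#}, bangs (fst M) @ map trt (snd M))"

lemma trt_Br: "trt (Br N) = Br (trm N)"
  by (cases N) (simp add: trm_def)

fun trx :: "ctx \<Rightarrow> ctx" where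
  "trx Hole = Hole"
| "trx (CBr z G1 c G2) = CBr {#} (bangs z @ map trt G1) (trx c) (map trt G2)"

lemma trm_fill: "trm (fill X N) = fill (trx X) (trm N)"
  by (induction X) (simp_all add: trm_def trt_Br)

lemma trm_pair: "trm (z, L) = ({#}, bangs z @ map trt L)"
  by (simp add: trm_def)

fun sfx :: "ctx \<Rightarrow> bool" where
  "sfx Hole = True"
| "sfx (CBr z G1 c G2) = (z = {#} \<and> (\<forall>t\<in>set G1. sfree_t t) \<and> sfx c \<and> (\<forall>t\<in>set G2. sfree_t t))"

lemma sfree_t_Br: "sfree_t (Br N) = sfree N"
  by (cases N) (simp add: sfree_def)

lemma sfree_pair: "sfree (z, L) = (z = {#} \<and> (\<forall>t\<in>set L. sfree_t t))"
  by (simp add: sfree_def)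

lemma sfree_fill: "sfree (fill X N) = (sfx X \<and> sfree N)"
  by (induction X) (auto simp: sfree_pair sfree_t_Br)

lemma size_lt_aux: "t \<in> set G \<Longrightarrow> size t < Suc (size_list size G)"
  by (induction G) auto

lemma sfree_trt: "sfree_t (trt t)"
proof (induction t rule: measure_induct_rule[of size])
  case (less t)
  show ?case
  proof (cases t)
    case (Fm A) then show ?thesis by simp
  next
    case (Br N)
    obtain z G where N: "N = (z, G)" by fastforce
    have "\<forall>u\<in>set G. sfree_t (trt u)"
      using less Br N size_lt_aux by fastforce
    then show ?thesis using Br N by (auto simp: bl_def)
  qed
qed

lemma sfree_trm: "sfree (trm N)"
  by (auto simp: trm_def sfree_pair sfree_trt bl_def)

lemma sfx_trx: "sfx (trx X)"
  by (induction X) (auto simp: sfree_trt bl_def)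

lemma trt_id: "sfree_t t \<Longrightarrow> trt t = t"
proof (induction t rule: measure_induct_rule[of size])
  case (less t)
  show ?case
  proof (cases t)
    case (Fm A) then show ?thesis by simp
  next
    case (Br N)
    obtain z G where N: "N = (z, G)" by fastforce
    have "\<forall>u\<in>set G. trt u = u"
      using less Br N size_lt_aux by fastforce
    then have "map trt G = G" by (simp add: map_idI)
    then show ?thesis using Br N less.prems by simp
  qed
qed

lemma trm_id: "sfree M \<Longrightarrow> trm M = M"
  by (cases M) (simp add: trm_def sfree_pair trt_id map_idI)

lemma of_trt: "onefree_t t \<Longrightarrow> onefree_t (trt t)"
proof (induction t rule: measure_induct_rule[of size])
  case (less t)
  show ?case
  proof (cases t)
    case (Fm A) then show ?thesis using less.prems by simp
  next
    case (Br N)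
    obtain z G where N: "N = (z, G)" by fastforce
    have "\<forall>u\<in>set G. onefree_t (trt u)"
      using less Br N size_lt_aux by fastforce
    then show ?thesis using Br N less.prems by (auto simp: bl_def)
  qed
qed

lemma ofm_trm: "ofm N \<Longrightarrow> ofm (trm N)"
  by (cases N) (auto simp: trm_def ofm_pair of_trt bl_def)

lemma onefree_seq_trm: "onefree_seq (N, C) \<Longrightarrow> onefree_seq (trm N, C)"
  by (simp add: onefree_seq_ofm ofm_trm)

lemma fI: "frule r c ps s \<Longrightarrow> (\<And>p. p \<in> set ps \<Longrightarrow> fder r c p) \<Longrightarrow> sfree (fst s) \<Longrightarrow> (r \<Longrightarrow> onefree_seq s) \<Longrightarrow> fder r c s"
  by (rule fder.intros) auto

lemma fder_sf: "fder r c s \<Longrightarrow> sfree (fst s)"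
  by (induction rule: fder.induct) auto

lemma fder_of: "fder r c s \<Longrightarrow> r \<Longrightarrow> onefree_seq s"
  by (induction rule: fder.induct) auto

definition okL :: "bool \<Rightarrow> ctx \<Rightarrow> tterm list \<Rightarrow> formula \<Rightarrow> bool" where
  "okL r X L C = (sfree (fill X ({#}, L)) \<and> (r \<longrightarrow> onefree_seq (fill X ({#}, L), C)))"

lemma okL_iff: "okL r X L C = (sfx X \<and> (\<forall>t\<in>set L. sfree_t t) \<and> (r \<longrightarrow> ofx X \<and> (\<forall>t\<in>set L. onefree_t t) \<and> onefree C))"
  by (auto simp: okL_def sfree_fill sfree_pair onefree_seq_ofm ofm_fill ofm_pair)

lemma okL_set: "set L = set L' \<Longrightarrow> okL r X L C = okL r X L' C"
  by (simp add: okL_iff)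

lemma okL_fder: "fder r c (fill X ({#}, L), C) \<Longrightarrow> okL r X L C"
  unfolding okL_def using fder_sf fder_of by fastforce

lemma fI_ok: "frule r c ps (fill X ({#}, L), C) \<Longrightarrow> (\<And>p. p \<in> set ps \<Longrightarrow> fder r c p) \<Longrightarrow> okL r X L C \<Longrightarrow> fder r c (fill X ({#}, L), C)"
  unfolding okL_def by (rule fI) auto

lemma FR_bangP2: "fder r c (fill X ({#}, D1 @ Phi @ Fm (Bang A) # D2), C) \<Longrightarrow> fder r c (fill X ({#}, D1 @ Fm (Bang A) # Phi @ D2), C)"
proof -
  assume p: "fder r c (fill X ({#}, D1 @ Phi @ Fm (Bang A) # D2), C)"
  have ok: "okL r X (D1 @ Fm (Bang A) # Phi @ D2) C"
    using okL_fder[OF p] okL_set[of "D1 @ Phi @ Fm (Bang A) # D2" "D1 @ Fm (Bang A) # Phi @ D2"] by auto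
  show ?thesis using fI_ok[OF f_bangP2[of r c X D1 Phi A D2 C]] p ok by simp
qed

lemma FR_bangP1: "fder r c (fill X ({#}, D1 @ Fm (Bang A) # Phi @ D2), C) \<Longrightarrow> fder r c (fill X ({#}, D1 @ Phi @ Fm (Bang A) # D2), C)"
proof -
  assume p: "fder r c (fill X ({#}, D1 @ Fm (Bang A) # Phi @ D2), C)"
  have ok: "okL r X (D1 @ Phi @ Fm (Bang A) # D2) C"
    using okL_fder[OF p] okL_set[of "D1 @ Phi @ Fm (Bang A) # D2" "D1 @ Fm (Bang A) # Phi @ D2"] by auto
  show ?thesis using fI_ok[OF f_bangP1[of r c X D1 A Phi D2 C]] p ok by simp
qed

lemma Mv: "fder r c (fill X ({#}, D1 @ Phi @ bl xs @ D2), C) \<Longrightarrow> fder r c (fill X ({#}, D1 @ bl xs @ Phi @ D2), C)"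
proof (induction xs arbitrary: D1)
  case Nil
  then show ?case by simp
next
  case (Cons x xs)
  have "fder r c (fill X ({#}, D1 @ Fm (Bang x) # Phi @ (bl xs @ D2)), C)"
    using FR_bangP2[of r c X D1 Phi x "bl xs @ D2" C] Cons.prems by simp
  then have "fder r c (fill X ({#}, (D1 @ [Fm (Bang x)]) @ Phi @ bl xs @ D2), C)" by simp
  from Cons.IH[OF this] show ?case by simp
qed

lemma MvR: "fder r c (fill X ({#}, D1 @ bl xs @ Phi @ D2), C) \<Longrightarrow> fder r c (fill X ({#}, D1 @ Phi @ bl xs @ D2), C)"
proof (induction xs arbitrary: D2 rule: rev_induct)
  case Nil
  then show ?case by simp
next
  case (snoc x xs)
  have "fder r c (fill X ({#}, (D1 @ bl xs) @ Phi @ Fm (Bang x) # D2), C)"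
    using FR_bangP1[of r c X "D1 @ bl xs" x Phi D2 C] snoc.prems by simp
  then have "fder r c (fill X ({#}, D1 @ bl xs @ Phi @ (Fm (Bang x) # D2)), C)" by simp
  from snoc.IH[OF this] show ?case by simp
qed

lemma Ro: "mset xs = mset ys \<Longrightarrow> fder r c (fill X ({#}, D1 @ bl xs @ D2), C) \<Longrightarrow> fder r c (fill X ({#}, D1 @ bl ys @ D2), C)"
proof (induction ys arbitrary: xs D1)
  case Nil
  then show ?case by simp
next
  case (Cons y ys)
  have "y \<in> set xs" using Cons.prems(1) by (metis list.set_intros(1) set_mset_mset)
  then obtain xs1 xs2 where xs: "xs = xs1 @ y # xs2" by (meson split_list)
  have "fder r c (fill X ({#}, D1 @ bl xs1 @ Fm (Bang y) # (bl xs2 @ D2)), C)" using Cons.prems(2) xs by simp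
  then have "fder r c (fill X ({#}, D1 @ Fm (Bang y) # bl xs1 @ (bl xs2 @ D2)), C)" by (rule FR_bangP2)
  then have "fder r c (fill X ({#}, (D1 @ [Fm (Bang y)]) @ bl (xs1 @ xs2) @ D2), C)" by simp
  moreover have "mset (xs1 @ xs2) = mset ys" using Cons.prems(1) xs by simp
  ultimately show ?case using Cons.IH by fastforce
qed

lemma Ro_st: "mset xs = z \<Longrightarrow> fder r c (fill X ({#}, D1 @ bl xs @ D2), C) \<Longrightarrow> fder r c (fill X ({#}, D1 @ bangs z @ D2), C)"
  by (rule Ro) simp_all

lemma Ro_st': "mset xs = z \<Longrightarrow> fder r c (fill X ({#}, D1 @ bangs z @ D2), C) \<Longrightarrow> fder r c (fill X ({#}, D1 @ bl xs @ D2), C)"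
  by (rule Ro) simp_all

lemma mset_bl: "mset (bl xs) = image_mset (\<lambda>A. Fm (Bang A)) (mset xs)"
  by (simp add: bl_def)

lemma okL_mset: "mset L = mset L' \<Longrightarrow> okL r X L C \<Longrightarrow> okL r X L' C"
  by (metis okL_set set_mset_mset)

lemma FR_ax: "(r \<Longrightarrow> onefree A) \<Longrightarrow> fder r c (({#}, [Fm A]), A)"
  by (rule fI[OF f_ax]) (auto simp: sfree_def onefree_seq_def)

lemma FR_oneR: "\<not> r \<Longrightarrow> fder r c (({#}, []), One)"
  by (rule fI[OF f_oneR]) (auto simp: sfree_def)

lemma FR_overL: "fder r c (({#}, G), B) \<Longrightarrow> fder r c (fill X ({#}, D1 @ Fm C # D2), D) \<Longrightarrow> okL r X (D1 @ Fm (Over C B) # G @ D2) D \<Longrightarrow> fder r c (fill X ({#}, D1 @ Fm (Over C B) # G @ D2), D)"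
  using fI_ok[OF f_overL[of r c G B X D1 C D2 D]] by fastforce

lemma FR_overR: "(r \<longrightarrow> G \<noteq> []) \<Longrightarrow> fder r c (({#}, G @ [Fm B]), C) \<Longrightarrow> okL r Hole G (Over C B) \<Longrightarrow> fder r c (({#}, G), Over C B)"
  using fI[OF f_overR[of r G c B C]] unfolding okL_def by simp

lemma FR_underL: "fder r c (({#}, G), A) \<Longrightarrow> fder r c (fill X ({#}, D1 @ Fm C # D2), D) \<Longrightarrow> okL r X (D1 @ G @ Fm (Under A C) # D2) D \<Longrightarrow> fder r c (fill X ({#}, D1 @ G @ Fm (Under A C) # D2), D)"
  using fI_ok[OF f_underL[of r c G A X D1 C D2 D]] by fastforce

lemma FR_underR: "(r \<longrightarrow> G \<noteq> []) \<Longrightarrow> fder r c (({#}, Fm A # G), C) \<Longrightarrow> okL r Hole G (Under A C) \<Longrightarrow> fder r c (({#}, G), Under A C)"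
  using fI[OF f_underR[of r G c A C]] unfolding okL_def by simp

lemma FR_prodL: "fder r c (fill X ({#}, D1 @ Fm A # Fm B # D2), D) \<Longrightarrow> okL r X (D1 @ Fm (Prod A B) # D2) D \<Longrightarrow> fder r c (fill X ({#}, D1 @ Fm (Prod A B) # D2), D)"
  using fI_ok[OF f_prodL[of r c X D1 A B D2 D]] by simp

lemma FR_prodR: "fder r c (({#}, D), A) \<Longrightarrow> fder r c (({#}, G), B) \<Longrightarrow> okL r Hole (D @ G) (Prod A B) \<Longrightarrow> fder r c (({#}, D @ G), Prod A B)"
  using fI[OF f_prodR[of r c D A G B]] unfolding okL_def by fastforce

lemma FR_oneL: "\<not> r \<Longrightarrow> fder r c (fill X ({#}, D1 @ D2), A) \<Longrightarrow> okL r X (D1 @ Fm One # D2) A \<Longrightarrow> fder r c (fill X ({#}, D1 @ Fm One # D2), A)"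
  using fI_ok[OF f_oneL[of r c X D1 D2 A]] by simp

lemma FR_orL: "fder r c (fill X ({#}, D1 @ Fm A1 # D2), C) \<Longrightarrow> fder r c (fill X ({#}, D1 @ Fm A2 # D2), C) \<Longrightarrow> okL r X (D1 @ Fm (Or A1 A2) # D2) C \<Longrightarrow> fder r c (fill X ({#}, D1 @ Fm (Or A1 A2) # D2), C)"
  using fI_ok[OF f_orL[of r c X D1 A1 D2 C A2]] by fastforce

lemma FR_orR1: "fder r c (Y, A1) \<Longrightarrow> (r \<Longrightarrow> onefree A2) \<Longrightarrow> fder r c (Y, Or A1 A2)"
  by (rule fI[OF f_orR1]) (auto dest: fder_sf fder_of simp: onefree_seq_ofm)

lemma FR_orR2: "fder r c (Y, A2) \<Longrightarrow> (r \<Longrightarrow> onefree A1) \<Longrightarrow> fder r c (Y, Or A1 A2)"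
  by (rule fI[OF f_orR2]) (auto dest: fder_sf fder_of simp: onefree_seq_ofm)

lemma FR_andL1: "fder r c (fill X ({#}, D1 @ Fm A1 # D2), C) \<Longrightarrow> okL r X (D1 @ Fm (And A1 A2) # D2) C \<Longrightarrow> fder r c (fill X ({#}, D1 @ Fm (And A1 A2) # D2), C)"
  using fI_ok[OF f_andL1[of r c X D1 A1 D2 C A2]] by simp

lemma FR_andL2: "fder r c (fill X ({#}, D1 @ Fm A2 # D2), C) \<Longrightarrow> okL r X (D1 @ Fm (And A1 A2) # D2) C \<Longrightarrow> fder r c (fill X ({#}, D1 @ Fm (And A1 A2) # D2), C)"
  using fI_ok[OF f_andL2[of r c X D1 A2 D2 C A1]] by simp

lemma FR_andR: "fder r c (Y, A1) \<Longrightarrow> fder r c (Y, A2) \<Longrightarrow> fder r c (Y, And A1 A2)"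
  by (rule fI[OF f_andR]) (auto dest: fder_sf fder_of simp: onefree_seq_ofm)

lemma FR_boxL: "fder r c (fill X ({#}, D1 @ Fm A # D2), B) \<Longrightarrow> okL r X (D1 @ Br ({#}, [Fm (Box A)]) # D2) B \<Longrightarrow> fder r c (fill X ({#}, D1 @ Br ({#}, [Fm (Box A)]) # D2), B)"
  using fI_ok[OF f_boxL[of r c X D1 A D2 B]] by simp

lemma FR_boxR: "fder r c (({#}, [Br Y]), A) \<Longrightarrow> fder r c (Y, Box A)"
proof -
  assume p: "fder r c (({#}, [Br Y]), A)"
  have sf: "sfree Y" using fder_sf[OF p] by (simp add: sfree_pair sfree_t_Br)
  have of: "r \<Longrightarrow> onefree_seq (Y, Box A)" using fder_of[OF p] by (simp add: onefree_seq_ofm ofm_pair onefree_t_Br)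
  show ?thesis by (rule fI[OF f_boxR]) (use p sf of in auto)
qed

lemma FR_diaL: "fder r c (fill X ({#}, D1 @ Br ({#}, [Fm A]) # D2), B) \<Longrightarrow> okL r X (D1 @ Fm (Dia A) # D2) B \<Longrightarrow> fder r c (fill X ({#}, D1 @ Fm (Dia A) # D2), B)"
  using fI_ok[OF f_diaL[of r c X D1 A D2 B]] by simp

lemma FR_diaR: "fder r c (Y, A) \<Longrightarrow> fder r c (({#}, [Br Y]), Dia A)"
proof -
  assume p: "fder r c (Y, A)"
  have sf: "sfree ({#}, [Br Y])" using fder_sf[OF p] by (simp add: sfree_pair sfree_t_Br)
  have of: "r \<Longrightarrow> onefree_seq (({#}, [Br Y]), Dia A)" using fder_of[OF p] by (simp add: onefree_seq_ofm ofm_pair onefree_t_Br)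
  show ?thesis by (rule fI[OF f_diaR]) (use p sf of in auto)
qed

lemma FR_bangL: "fder r c (fill X ({#}, D1 @ Fm A # D2), C) \<Longrightarrow> fder r c (fill X ({#}, D1 @ Fm (Bang A) # D2), C)"
proof -
  assume p: "fder r c (fill X ({#}, D1 @ Fm A # D2), C)"
  have "okL r X (D1 @ Fm (Bang A) # D2) C" using okL_fder[OF p] by (simp add: okL_iff)
  then show ?thesis using fI_ok[OF f_bangL[of r c X D1 A D2 C]] p by simp
qed

lemma FR_bangR: "fder r c (({#}, [Fm (Bang A)]), B) \<Longrightarrow> fder r c (({#}, [Fm (Bang A)]), Bang B)"
proof -
  assume p: "fder r c (({#}, [Fm (Bang A)]), B)"
  have sf: "sfree ({#}, [Fm (Bang A)])" by (simp add: sfree_pair)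
  have of: "r \<Longrightarrow> onefree_seq (({#}, [Fm (Bang A)]), Bang B)" using fder_of[OF p] by (simp add: onefree_seq_ofm ofm_pair)
  show ?thesis by (rule fI[OF f_bangR]) (use p sf of in auto)
qed

lemma FR_bangC: "(r \<longrightarrow> G2 \<noteq> []) \<Longrightarrow> fder r c (fill X ({#}, Fm (Bang A) # G1 @ Br ({#}, Fm (Bang A) # G2) # G3), C) \<Longrightarrow>
   fder r c (fill X ({#}, Fm (Bang A) # G1 @ Br ({#}, [Br ({#}, G2)]) # G3), C)"
proof -
  assume c: "r \<longrightarrow> G2 \<noteq> []" and p: "fder r c (fill X ({#}, Fm (Bang A) # G1 @ Br ({#}, Fm (Bang A) # G2) # G3), C)"
  have "okL r X (Fm (Bang A) # G1 @ Br ({#}, [Br ({#}, G2)]) # G3) C" using okL_fder[OF p]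
    by (simp add: okL_iff sfree_t_Br sfree_pair onefree_t_Br ofm_pair)
  then show ?thesis using fI_ok[OF f_bangC[of r G2 c X A G1 G3 C]] c p by simp
qed

lemma bangs_empty: "(bangs z = []) = (z = {#})"
  by (metis bl_simps(1) lst_empty map_is_Nil_conv bl_def mset_lst mset_zero_iff)

lemma okT: "(r \<Longrightarrow> onefree_seq (fill X (w, L), C)) \<Longrightarrow> okL r (trx X) (bangs w @ map trt L) C"
proof -
  assume a: "r \<Longrightarrow> onefree_seq (fill X (w, L), C)"
  have "sfree (trm (fill X (w, L)))" by (rule sfree_trm)
  moreover have "r \<Longrightarrow> onefree_seq (trm (fill X (w, L)), C)" using a onefree_seq_trm by blast
  ultimately show ?thesis unfolding okL_def by (simp add: trm_fill trm_pair)
qed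

lemma okH: "(r \<Longrightarrow> onefree_seq ((w, L), C)) \<Longrightarrow> okL r Hole (bangs w @ map trt L) C"
  using okT[of r Hole w L C] by simp

lemma m2f: "mder r False s \<Longrightarrow> fder r False (trm (fst s), snd s)"
proof (induction rule: mder.induct)
  case (1 ps s)
  have IH: "\<And>S0 C0. (S0, C0) \<in> set ps \<Longrightarrow> fder r False (trm S0, C0)" using 1(3) by fastforce
  have of: "r \<Longrightarrow> onefree_seq s" using 1(2) by simp
  from 1(1) show ?case
  proof (cases rule: mrule.cases)
    case (m_ax A)
    then show ?thesis using FR_ax[of r A False] of by (simp add: trm_pair onefree_seq_def)
  next
    case m_oneR
    then show ?thesis using FR_oneR[of r False] by (simp add: trm_pair)
  next
    case (m_overL z1 G B X z2 D1 C D2 D)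
    let ?X = "trx X" and ?D1 = "map trt D1" and ?D2 = "map trt D2" and ?G = "map trt G"
    have p1: "fder r False (({#}, bangs z1 @ ?G), B)" using IH[of "(z1, G)" B] m_overL by (simp add: trm_pair)
    have p2: "fder r False (fill ?X ({#}, (bangs z2 @ ?D1) @ Fm C # ?D2), D)"
      using IH[of "fill X (z2, D1 @ [Fm C] @ D2)" D] m_overL by (simp add: trm_pair trm_fill)
    have ok: "okL r ?X (bangs (z1 + z2) @ ?D1 @ Fm (Over C B) # ?G @ ?D2) D" using okT[of r X "z1 + z2" "D1 @ [Fm (Over C B)] @ G @ D2" D] of m_overL by simp
    have ok1: "okL r ?X ((bangs z2 @ ?D1) @ Fm (Over C B) # (bangs z1 @ ?G) @ ?D2) D"
      by (rule okL_mset[OF _ ok]) (simp add: mset_bl ac_simps)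
    have "fder r False (fill ?X ({#}, (bangs z2 @ ?D1) @ Fm (Over C B) # (bangs z1 @ ?G) @ ?D2), D)"
      by (rule FR_overL[OF p1 p2 ok1])
    then have "fder r False (fill ?X ({#}, [] @ (bangs z2 @ ?D1 @ [Fm (Over C B)]) @ bl (lst z1) @ (?G @ ?D2)), D)" by simp
    then have "fder r False (fill ?X ({#}, [] @ bl (lst z1) @ (bangs z2 @ ?D1 @ [Fm (Over C B)]) @ (?G @ ?D2)), D)" by (rule Mv)
    then have "fder r False (fill ?X ({#}, [] @ bl (lst z1 @ lst z2) @ (?D1 @ Fm (Over C B) # ?G @ ?D2)), D)" by simp
    then have "fder r False (fill ?X ({#}, [] @ bl (lst (z1 + z2)) @ (?D1 @ Fm (Over C B) # ?G @ ?D2)), D)" by (rule Ro[rotated]) simp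
    then show ?thesis using m_overL by (simp add: trm_fill trm_pair)
  next
    case (m_overR G z B C)
    have p: "fder r False (({#}, (bangs z @ map trt G) @ [Fm B]), C)" using IH[of "(z, G @ [Fm B])" C] m_overR by (simp add: trm_pair)
    have c: "r \<longrightarrow> bangs z @ map trt G \<noteq> []" using m_overR bangs_empty by auto
    have ok: "okL r Hole (bangs z @ map trt G) (Over C B)" using okH[of r z G "Over C B"] of m_overR by simp
    show ?thesis using FR_overR[OF c p ok] m_overR by (simp add: trm_pair)
  next
    case (m_underL z1 G A X z2 D1 C D2 D)
    let ?X = "trx X" and ?D1 = "map trt D1" and ?D2 = "map trt D2" and ?G = "map trt G"
    have p1: "fder r False (({#}, bangs z1 @ ?G), A)" using IH[of "(z1, G)" A] m_underL by (simp add: trm_pair)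
    have p2: "fder r False (fill ?X ({#}, (bangs z2 @ ?D1) @ Fm C # ?D2), D)"
      using IH[of "fill X (z2, D1 @ [Fm C] @ D2)" D] m_underL by (simp add: trm_pair trm_fill)
    have ok: "okL r ?X (bangs (z1 + z2) @ ?D1 @ ?G @ Fm (Under A C) # ?D2) D" using okT[of r X "z1 + z2" "D1 @ G @ [Fm (Under A C)] @ D2" D] of m_underL by simp
    have ok1: "okL r ?X ((bangs z2 @ ?D1) @ (bangs z1 @ ?G) @ Fm (Under A C) # ?D2) D"
      by (rule okL_mset[OF _ ok]) (simp add: mset_bl ac_simps)
    have "fder r False (fill ?X ({#}, (bangs z2 @ ?D1) @ (bangs z1 @ ?G) @ Fm (Under A C) # ?D2), D)"
      by (rule FR_underL[OF p1 p2 ok1])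
    then have "fder r False (fill ?X ({#}, [] @ (bangs z2 @ ?D1) @ bl (lst z1) @ (?G @ Fm (Under A C) # ?D2)), D)" by simp
    then have "fder r False (fill ?X ({#}, [] @ bl (lst z1) @ (bangs z2 @ ?D1) @ (?G @ Fm (Under A C) # ?D2)), D)" by (rule Mv)
    then have "fder r False (fill ?X ({#}, [] @ bl (lst z1 @ lst z2) @ (?D1 @ ?G @ Fm (Under A C) # ?D2)), D)" by simp
    then have "fder r False (fill ?X ({#}, [] @ bl (lst (z1 + z2)) @ (?D1 @ ?G @ Fm (Under A C) # ?D2)), D)" by (rule Ro[rotated]) simp
    then show ?thesis using m_underL by (simp add: trm_fill trm_pair)
  next
    case (m_underR G z A C)
    have p: "fder r False (fill Hole ({#}, [] @ bl (lst z) @ [Fm A] @ map trt G), C)" using IH[of "(z, Fm A # G)" C] m_underR by (simp add: trm_pair)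
    then have "fder r False (fill Hole ({#}, [] @ [Fm A] @ bl (lst z) @ map trt G), C)" by (rule MvR)
    then have p': "fder r False (({#}, Fm A # (bangs z @ map trt G)), C)" by simp
    have c: "r \<longrightarrow> bangs z @ map trt G \<noteq> []" using m_underR bangs_empty by auto
    have ok: "okL r Hole (bangs z @ map trt G) (Under A C)" using okH[of r z G "Under A C"] of m_underR by simp
    show ?thesis using FR_underR[OF c p' ok] m_underR by (simp add: trm_pair)
  next
    case (m_prodL X z D1 A B D2 D)
    have p: "fder r False (fill (trx X) ({#}, (bangs z @ map trt D1) @ Fm A # Fm B # map trt D2), D)"
      using IH[of "fill X (z, D1 @ [Fm A, Fm B] @ D2)" D] m_prodL by (simp add: trm_pair trm_fill)
    have ok: "okL r (trx X) ((bangs z @ map trt D1) @ Fm (Prod A B) # map trt D2) D" using okT[of r X z "D1 @ [Fm (Prod A B)] @ D2" D] of m_prodL by simp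
    show ?thesis using FR_prodL[OF p ok] m_prodL by (simp add: trm_fill trm_pair)
  next
    case (m_prodR z1 D A z2 G B)
    have p1: "fder r False (({#}, bangs z1 @ map trt D), A)" using IH[of "(z1, D)" A] m_prodR by (simp add: trm_pair)
    have p2: "fder r False (({#}, bangs z2 @ map trt G), B)" using IH[of "(z2, G)" B] m_prodR by (simp add: trm_pair)
    have ok: "okL r Hole (bangs (z1 + z2) @ map trt D @ map trt G) (Prod A B)" using okH[of r "z1 + z2" "D @ G" "Prod A B"] of m_prodR by simp
    have ok1: "okL r Hole ((bangs z1 @ map trt D) @ (bangs z2 @ map trt G)) (Prod A B)"
      by (rule okL_mset[OF _ ok]) (simp add: mset_bl ac_simps)
    have "fder r False (({#}, (bangs z1 @ map trt D) @ (bangs z2 @ map trt G)), Prod A B)" by (rule FR_prodR[OF p1 p2 ok1])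
    then have "fder r False (fill Hole ({#}, bangs z1 @ map trt D @ bl (lst z2) @ map trt G), Prod A B)" by simp
    then have "fder r False (fill Hole ({#}, bangs z1 @ bl (lst z2) @ map trt D @ map trt G), Prod A B)" by (rule Mv)
    then have "fder r False (fill Hole ({#}, [] @ bl (lst z1 @ lst z2) @ (map trt D @ map trt G)), Prod A B)" by simp
    then have "fder r False (fill Hole ({#}, [] @ bl (lst (z1 + z2)) @ (map trt D @ map trt G)), Prod A B)" by (rule Ro[rotated]) simp
    then show ?thesis using m_prodR by (simp add: trm_pair)
  next
    case (m_oneL X z D1 D2 A)
    have p: "fder r False (fill (trx X) ({#}, (bangs z @ map trt D1) @ map trt D2), A)"
      using IH[of "fill X (z, D1 @ D2)" A] m_oneL by (simp add: trm_pair trm_fill)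
    have ok: "okL r (trx X) ((bangs z @ map trt D1) @ Fm One # map trt D2) A" using okT[of r X z "D1 @ [Fm One] @ D2" A] of m_oneL by simp
    show ?thesis using FR_oneL[OF _ p ok] m_oneL by (simp add: trm_fill trm_pair)
  next
    case (m_orL X z D1 A1 D2 C A2)
    have p1: "fder r False (fill (trx X) ({#}, (bangs z @ map trt D1) @ Fm A1 # map trt D2), C)"
      using IH[of "fill X (z, D1 @ [Fm A1] @ D2)" C] m_orL by (simp add: trm_pair trm_fill)
    have p2: "fder r False (fill (trx X) ({#}, (bangs z @ map trt D1) @ Fm A2 # map trt D2), C)"
      using IH[of "fill X (z, D1 @ [Fm A2] @ D2)" C] m_orL by (simp add: trm_pair trm_fill)
    have ok: "okL r (trx X) ((bangs z @ map trt D1) @ Fm (Or A1 A2) # map trt D2) C" using okT[of r X z "D1 @ [Fm (Or A1 A2)] @ D2" C] of m_orL by simp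
    show ?thesis using FR_orL[OF p1 p2 ok] m_orL by (simp add: trm_fill trm_pair)
  next
    case (m_orR1 Y A1 A2)
    have p: "fder r False (trm Y, A1)" using IH[of Y A1] m_orR1 by simp
    show ?thesis using FR_orR1[OF p, of A2] of m_orR1 by (simp add: onefree_seq_ofm)
  next
    case (m_orR2 Y A2 A1)
    have p: "fder r False (trm Y, A2)" using IH[of Y A2] m_orR2 by simp
    show ?thesis using FR_orR2[OF p, of A1] of m_orR2 by (simp add: onefree_seq_ofm)
  next
    case (m_andL1 X z D1 A1 D2 C A2)
    have p: "fder r False (fill (trx X) ({#}, (bangs z @ map trt D1) @ Fm A1 # map trt D2), C)"
      using IH[of "fill X (z, D1 @ [Fm A1] @ D2)" C] m_andL1 by (simp add: trm_pair trm_fill)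
    have ok: "okL r (trx X) ((bangs z @ map trt D1) @ Fm (And A1 A2) # map trt D2) C" using okT[of r X z "D1 @ [Fm (And A1 A2)] @ D2" C] of m_andL1 by simp
    show ?thesis using FR_andL1[OF p ok] m_andL1 by (simp add: trm_fill trm_pair)
  next
    case (m_andL2 X z D1 A2 D2 C A1)
    have p: "fder r False (fill (trx X) ({#}, (bangs z @ map trt D1) @ Fm A2 # map trt D2), C)"
      using IH[of "fill X (z, D1 @ [Fm A2] @ D2)" C] m_andL2 by (simp add: trm_pair trm_fill)
    have ok: "okL r (trx X) ((bangs z @ map trt D1) @ Fm (And A1 A2) # map trt D2) C" using okT[of r X z "D1 @ [Fm (And A1 A2)] @ D2" C] of m_andL2 by simp
    show ?thesis using FR_andL2[OF p ok] m_andL2 by (simp add: trm_fill trm_pair)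
  next
    case (m_andR Y A1 A2)
    have p1: "fder r False (trm Y, A1)" using IH[of Y A1] m_andR by simp
    have p2: "fder r False (trm Y, A2)" using IH[of Y A2] m_andR by simp
    show ?thesis using FR_andR[OF p1 p2] m_andR by simp
  next
    case (m_boxL X z D1 A D2 B)
    have p: "fder r False (fill (trx X) ({#}, (bangs z @ map trt D1) @ Fm A # map trt D2), B)"
      using IH[of "fill X (z, D1 @ [Fm A] @ D2)" B] m_boxL by (simp add: trm_pair trm_fill)
    have ok: "okL r (trx X) ((bangs z @ map trt D1) @ Br ({#}, [Fm (Box A)]) # map trt D2) B" using okT[of r X z "D1 @ [Br ({#}, [Fm (Box A)])] @ D2" B] of m_boxL by simp
    show ?thesis using FR_boxL[OF p ok] m_boxL by (simp add: trm_fill trm_pair)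
  next
    case (m_boxR Y A)
    have p: "fder r False (({#}, [Br (trm Y)]), A)" using IH[of "({#}, [Br Y])" A] m_boxR by (simp add: trm_pair trt_Br)
    show ?thesis using FR_boxR[OF p] m_boxR by simp
  next
    case (m_diaL X z D1 A D2 B)
    have p: "fder r False (fill (trx X) ({#}, (bangs z @ map trt D1) @ Br ({#}, [Fm A]) # map trt D2), B)"
      using IH[of "fill X (z, D1 @ [Br ({#}, [Fm A])] @ D2)" B] m_diaL by (simp add: trm_pair trm_fill)
    have ok: "okL r (trx X) ((bangs z @ map trt D1) @ Fm (Dia A) # map trt D2) B" using okT[of r X z "D1 @ [Fm (Dia A)] @ D2" B] of m_diaL by simp
    show ?thesis using FR_diaL[OF p ok] m_diaL by (simp add: trm_fill trm_pair)
  next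
    case (m_diaR Y A)
    have p: "fder r False (trm Y, A)" using IH[of Y A] m_diaR by simp
    show ?thesis using FR_diaR[OF p] m_diaR by (simp add: trm_pair trt_Br)
  next
    case (m_bangL X z A G1 G2 B)
    let ?X = "trx X"
    have p: "fder r False (fill ?X ({#}, [] @ bangs (z + {#A#}) @ (map trt G1 @ map trt G2)), B)"
      using IH[of "fill X (z + {#A#}, G1 @ G2)" B] m_bangL by (simp add: trm_pair trm_fill)
    have "fder r False (fill ?X ({#}, [] @ bl (lst z @ [A]) @ (map trt G1 @ map trt G2)), B)"
      by (rule Ro_st'[OF _ p]) simp
    then have "fder r False (fill ?X ({#}, bangs z @ bl [A] @ map trt G1 @ map trt G2), B)" by simp
    then have "fder r False (fill ?X ({#}, bangs z @ map trt G1 @ bl [A] @ map trt G2), B)" by (rule MvR)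
    then show ?thesis using m_bangL by (simp add: trm_fill trm_pair)
  next
    case (m_bangP X z G1 A G2 B)
    let ?X = "trx X"
    have p: "fder r False (fill ?X ({#}, (bangs z @ map trt G1) @ Fm A # map trt G2), B)"
      using IH[of "fill X (z, G1 @ [Fm A] @ G2)" B] m_bangP by (simp add: trm_pair trm_fill)
    have "fder r False (fill ?X ({#}, (bangs z @ map trt G1) @ Fm (Bang A) # map trt G2), B)" by (rule FR_bangL[OF p])
    then have "fder r False (fill ?X ({#}, bangs z @ map trt G1 @ bl [A] @ map trt G2), B)" by simp
    then have "fder r False (fill ?X ({#}, bangs z @ bl [A] @ map trt G1 @ map trt G2), B)" by (rule Mv)
    then have "fder r False (fill ?X ({#}, [] @ bl (lst z @ [A]) @ (map trt G1 @ map trt G2)), B)" by simp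
    then have "fder r False (fill ?X ({#}, [] @ bangs (z + {#A#}) @ (map trt G1 @ map trt G2)), B)" by (rule Ro_st[rotated]) simp
    then show ?thesis using m_bangP by (simp add: trm_fill trm_pair)
  next
    case (m_bangR A B)
    have p: "fder r False (({#}, [Fm (Bang A)]), B)" using IH[of "({#A#}, [])" B] m_bangR by (simp add: trm_pair)
    show ?thesis using FR_bangR[OF p] m_bangR by (simp add: trm_pair)
  next
    case (m_bangC G2 z' X z A G1 G3 B)
    let ?X = "trx X" and ?G1 = "map trt G1" and ?G2 = "map trt G2" and ?G3 = "map trt G3"
    have p: "fder r False (fill ?X ({#}, [] @ bangs (z + {#A#}) @ (?G1 @ Br ({#}, bangs (z' + {#A#}) @ ?G2) # ?G3)), B)"
      using IH[of "fill X (z + {#A#}, G1 @ [Br (z' + {#A#}, G2)] @ G3)" B] m_bangC by (simp add: trm_pair trm_fill)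
    have "fder r False (fill ?X ({#}, [] @ bl (A # lst z) @ (?G1 @ Br ({#}, bangs (z' + {#A#}) @ ?G2) # ?G3)), B)"
      by (rule Ro_st'[OF _ p]) simp
    then have "fder r False (fill (cat ?X (CBr {#} (Fm (Bang A) # bangs z @ ?G1) Hole ?G3)) ({#}, [] @ bangs (z' + {#A#}) @ ?G2), B)"
      by (simp add: fill_cat)
    then have "fder r False (fill (cat ?X (CBr {#} (Fm (Bang A) # bangs z @ ?G1) Hole ?G3)) ({#}, [] @ bl (A # lst z') @ ?G2), B)"
      by (rule Ro_st'[rotated]) simp
    then have q: "fder r False (fill ?X ({#}, Fm (Bang A) # (bangs z @ ?G1) @ Br ({#}, Fm (Bang A) # (bangs z' @ ?G2)) # ?G3), B)"
      by (simp add: fill_cat)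
    have c: "r \<longrightarrow> bangs z' @ ?G2 \<noteq> []" using m_bangC bangs_empty by auto
    have "fder r False (fill ?X ({#}, Fm (Bang A) # (bangs z @ ?G1) @ Br ({#}, [Br ({#}, bangs z' @ ?G2)]) # ?G3), B)"
      by (rule FR_bangC[OF c q])
    then have "fder r False (fill ?X ({#}, [] @ bl (A # lst z) @ (?G1 @ Br ({#}, [Br ({#}, bangs z' @ ?G2)]) # ?G3)), B)" by simp
    then have "fder r False (fill ?X ({#}, [] @ bangs (z + {#A#}) @ (?G1 @ Br ({#}, [Br ({#}, bangs z' @ ?G2)]) # ?G3)), B)"
      by (rule Ro_st[rotated]) simp
    then show ?thesis using m_bangC by (simp add: trm_fill trm_pair)
  next
    case m_cut
    then show ?thesis by simp
  qed
qed

lemma frule_mono: "frule r False ps s \<Longrightarrow> frule r True ps s"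
  apply (induction rule: frule.induct)
                          prefer 25 apply simp
  apply (rule frule.intros, (assumption)?)+
  done

lemma mrule_mono: "mrule r False ps s \<Longrightarrow> mrule r True ps s"
  apply (induction rule: mrule.induct)
                         prefer 24 apply simp
  apply (rule mrule.intros, (assumption)?)+
  done

lemma fmono: "fder r False s \<Longrightarrow> fder r True s"
proof (induction rule: fder.induct)
  case (1 ps s)
  show ?case by (rule fder.intros[OF frule_mono[OF 1(1)]]) (use 1 in auto)
qed

lemma mmono: "mder r False s \<Longrightarrow> mder r True s"
proof (induction rule: mder.induct)
  case (1 ps s)
  show ?case by (rule mder.intros[OF mrule_mono[OF 1(1)]]) (use 1 in auto)
qed

lemma bangA: "(r \<Longrightarrow> onefree A) \<Longrightarrow> mder r True (({#A#}, []), Bang A)"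
proof -
  assume o: "r \<Longrightarrow> onefree A"
  have "mder r True (fill Hole ({#}, [] @ Fm A # []), A)" using R_axI[of r A True] o by simp
  then have "mder r True (fill Hole ({#} + {#A#}, [] @ []), A)"
    by (rule R_bangP) (use o in \<open>simp add: onefree_seq_def\<close>)
  then have "mder r True (({#A#}, []), A)" by simp
  then show ?thesis by (rule R_bangR) (use o in \<open>simp add: onefree_seq_def\<close>)
qed

lemma f2m: "fder r True s \<Longrightarrow> mder r True s"
proof (induction rule: fder.induct)
  case (1 ps s)
  have IH: "\<And>p. p \<in> set ps \<Longrightarrow> mder r True p" using 1(4) by blast
  have of: "r \<Longrightarrow> onefree_seq s" using 1(3) by simp
  from 1(1) show ?case
  proof (cases rule: frule.cases)
    case (f_ax A)
    then show ?thesis using R_axI[of r A True] of by (simp add: onefree_seq_def)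
  next
    case f_oneR
    then show ?thesis using mI[OF m_oneR[of r True]] by simp
  next
    case (f_overL G B X D1 C D2 D)
    then show ?thesis using R_overL[of r True "{#}" G B X "{#}" D1 C D2 D] IH of by simp
  next
    case (f_overR G B C)
    then show ?thesis using R_overR[of r G "{#}" True B C] IH of by simp
  next
    case (f_underL G A X D1 C D2 D)
    then show ?thesis using R_underL[of r True "{#}" G A X "{#}" D1 C D2 D] IH of by simp
  next
    case (f_underR G A C)
    then show ?thesis using R_underR[of r G "{#}" True A C] IH of by simp
  next
    case (f_prodL X D1 A B D2 D)
    then show ?thesis using R_prodL[of r True X "{#}" D1 A B D2 D] IH of by simp
  next
    case (f_prodR D A G B)
    then show ?thesis using R_prodR[of r True "{#}" D A "{#}" G B] IH of by simp
  next
    case (f_oneL X D1 D2 A)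
    then show ?thesis using R_oneL[of r True X "{#}" D1 D2 A] IH by simp
  next
    case (f_orL X D1 A1 D2 C A2)
    then show ?thesis using R_orL[of r True X "{#}" D1 A1 D2 C A2] IH of by simp
  next
    case (f_orR1 Y A1 A2)
    then show ?thesis using R_orR1[of r True Y A1 A2] IH of by simp
  next
    case (f_orR2 Y A2 A1)
    then show ?thesis using R_orR2[of r True Y A2 A1] IH of by simp
  next
    case (f_andL1 X D1 A1 D2 C A2)
    then show ?thesis using R_andL1[of r True X "{#}" D1 A1 D2 C A2] IH of by simp
  next
    case (f_andL2 X D1 A2 D2 C A1)
    then show ?thesis using R_andL2[of r True X "{#}" D1 A2 D2 C A1] IH of by simp
  next
    case (f_andR Y A1 A2)
    then show ?thesis using R_andR[of r True Y A1 A2] IH of by simp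
  next
    case (f_boxL X D1 A D2 B)
    then show ?thesis using R_boxL[of r True X "{#}" D1 A D2 B] IH of by simp
  next
    case (f_boxR Y A)
    then show ?thesis using R_boxR[of r True Y A] IH of by simp
  next
    case (f_diaL X D1 A D2 B)
    then show ?thesis using R_diaL[of r True X "{#}" D1 A D2 B] IH of by simp
  next
    case (f_diaR Y A)
    then show ?thesis using R_diaR[of r True Y A] IH of by simp
  next
    case (f_bangL X D1 A D2 C)
    have p: "mder r True (fill X ({#}, D1 @ Fm A # D2), C)" using IH f_bangL by simp
    have o: "r \<Longrightarrow> onefree_seq (fill X ({#}, D1 @ Fm (Bang A) # D2), C)" using of f_bangL by simp
    have "mder r True (fill X ({#} + {#A#}, D1 @ D2), C)"
      by (rule R_bangP[OF p]) (use o in \<open>simp add: onefree_seq_ofm ofm_fill ofm_pair\<close>)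
    then have "mder r True (fill X ({#}, D1 @ Fm (Bang A) # D2), C)"
      by (rule R_bangL) (use o in simp)
    then show ?thesis using f_bangL by simp
  next
    case (f_bangP1 X D1 A Phi D2 C)
    have p: "mder r True (fill X ({#}, D1 @ Fm (Bang A) # (Phi @ D2)), C)" using IH f_bangP1 by simp
    have o: "r \<Longrightarrow> onefree_seq (fill X ({#}, D1 @ Phi @ Fm (Bang A) # D2), C)" using of f_bangP1 by simp
    have oA: "r \<Longrightarrow> onefree A" using o by (simp add: onefree_seq_ofm ofm_fill ofm_pair)
    have "mder r True (fill X ({#A#} + {#}, D1 @ [] @ (Phi @ D2)), C)"
      by (rule R_cut[OF _ bangA[OF oA] p]) (use o in \<open>simp_all add: onefree_seq_ofm ofm_fill ofm_pair\<close>)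
    then have "mder r True (fill X ({#} + {#A#}, (D1 @ Phi) @ D2), C)" by simp
    then have "mder r True (fill X ({#}, (D1 @ Phi) @ Fm (Bang A) # D2), C)"
      by (rule R_bangL) (use o in simp)
    then show ?thesis using f_bangP1 by simp
  next
    case (f_bangP2 X D1 Phi A D2 C)
    have p: "mder r True (fill X ({#}, (D1 @ Phi) @ Fm (Bang A) # D2), C)" using IH f_bangP2 by simp
    have o: "r \<Longrightarrow> onefree_seq (fill X ({#}, D1 @ Fm (Bang A) # Phi @ D2), C)" using of f_bangP2 by simp
    have oA: "r \<Longrightarrow> onefree A" using o by (simp add: onefree_seq_ofm ofm_fill ofm_pair)
    have "mder r True (fill X ({#A#} + {#}, (D1 @ Phi) @ [] @ D2), C)"
      by (rule R_cut[OF _ bangA[OF oA] p]) (use o in \<open>simp_all add: onefree_seq_ofm ofm_fill ofm_pair\<close>)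
    then have "mder r True (fill X ({#} + {#A#}, D1 @ (Phi @ D2)), C)" by simp
    then have "mder r True (fill X ({#}, D1 @ Fm (Bang A) # (Phi @ D2)), C)"
      by (rule R_bangL) (use o in simp)
    then show ?thesis using f_bangP2 by simp
  next
    case (f_bangR A B)
    have p: "mder r True (fill Hole ({#}, [] @ Fm (Bang A) # []), B)" using IH f_bangR by simp
    have o: "r \<Longrightarrow> onefree_seq (({#}, [Fm (Bang A)]), Bang B)" using of f_bangR by simp
    have oA: "r \<Longrightarrow> onefree A" using o by (simp add: onefree_seq_ofm ofm_pair)
    have "mder r True (fill Hole ({#A#} + {#}, [] @ [] @ []), B)"
      by (rule R_cut[OF _ bangA[OF oA] p]) (use o in \<open>simp_all add: onefree_seq_ofm ofm_pair\<close>)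
    then have "mder r True (({#A#}, []), B)" by simp
    then have "mder r True (({#A#}, []), Bang B)" by (rule R_bangR) (use o in \<open>simp add: onefree_seq_ofm ofm_pair\<close>)
    then have "mder r True (fill Hole ({#} + {#A#}, [] @ []), Bang B)" by simp
    then have "mder r True (fill Hole ({#}, [] @ Fm (Bang A) # []), Bang B)" by (rule R_bangL) (use o in simp)
    then show ?thesis using f_bangR by simp
  next
    case (f_bangC G2 X A G1 G3 C)
    let ?Y = "cat X (CBr {#} (Fm (Bang A) # G1) Hole G3)"
    have p: "mder r True (fill ?Y ({#}, [] @ Fm (Bang A) # G2), C)" using IH f_bangC by (simp add: fill_cat)
    have o: "r \<Longrightarrow> onefree_seq (fill X ({#}, Fm (Bang A) # G1 @ Br ({#}, [Br ({#}, G2)]) # G3), C)" using of f_bangC by simp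
    have oX: "r \<Longrightarrow> ofx X \<and> onefree A \<and> (\<forall>t\<in>set G1. onefree_t t) \<and> (\<forall>t\<in>set G2. onefree_t t) \<and> (\<forall>t\<in>set G3. onefree_t t) \<and> onefree C"
      using o by (simp add: onefree_seq_ofm ofm_fill ofm_pair onefree_t_Br)
    have oA: "r \<Longrightarrow> onefree A" using oX by simp
    have "mder r True (fill ?Y ({#A#} + {#}, [] @ [] @ G2), C)"
      by (rule R_cut[OF _ bangA[OF oA] p]) (use oX in \<open>simp_all add: onefree_seq_ofm ofm_fill ofm_pair onefree_t_Br fill_cat, blast\<close>)
    then have q: "mder r True (fill X ({#}, [] @ Fm (Bang A) # (G1 @ Br ({#A#}, G2) # G3)), C)" by (simp add: fill_cat)
    have "mder r True (fill X ({#A#} + {#}, [] @ [] @ (G1 @ Br ({#A#}, G2) # G3)), C)"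
      by (rule R_cut[OF _ bangA[OF oA] q]) (use oX in \<open>simp_all add: onefree_seq_ofm ofm_fill ofm_pair onefree_t_Br, blast?\<close>)
    then have "mder r True (fill X ({#} + {#A#}, G1 @ Br ({#} + {#A#}, G2) # G3), C)" by simp
    then have "mder r True (fill X ({#} + {#A#}, G1 @ Br ({#}, [Br ({#}, G2)]) # G3), C)"
      by (rule R_bangC[rotated]) (use f_bangC oX in \<open>simp_all add: onefree_seq_ofm ofm_fill ofm_pair onefree_t_Br, blast?\<close>)
    then have "mder r True (fill X ({#} + {#A#}, [] @ (G1 @ Br ({#}, [Br ({#}, G2)]) # G3)), C)" by simp
    then have "mder r True (fill X ({#}, [] @ Fm (Bang A) # (G1 @ Br ({#}, [Br ({#}, G2)]) # G3)), C)"
      by (rule R_bangL) (use o in simp)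
    then show ?thesis using f_bangC by simp
  next
    case (f_cut P A X G1 G2 C)
    then show ?thesis using R_cut[of True r "{#}" P A X "{#}" G1 G2 C] IH of by simp
  qed
qed

theorem proposition1:
  fixes Xi :: meta and C :: formula
  assumes "sfree Xi"
  shows "\<forall>r::bool.
     (fder r False (Xi, C) \<longleftrightarrow> fder r True (Xi, C)) \<and>
     (fder r True (Xi, C) \<longleftrightarrow> mder r True (Xi, C)) \<and>
     (mder r True (Xi, C) \<longleftrightarrow> mder r False (Xi, C))"
proof
  fix r :: bool
  have m0f0: "mder r False (Xi, C) \<Longrightarrow> fder r False (Xi, C)"
    using m2f[of r "(Xi, C)"] trm_id[OF assms] by simp
  have f1m1: "fder r True (Xi, C) \<Longrightarrow> mder r True (Xi, C)" by (rule f2m)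
  have m1m0: "mder r True (Xi, C) \<Longrightarrow> mder r False (Xi, C)" by (rule cut_elim)
  show "(fder r False (Xi, C) \<longleftrightarrow> fder r True (Xi, C)) \<and>
     (fder r True (Xi, C) \<longleftrightarrow> mder r True (Xi, C)) \<and>
     (mder r True (Xi, C) \<longleftrightarrow> mder r False (Xi, C))"
    using m0f0 f1m1 m1m0 fmono[of r "(Xi, C)"] mmono[of r "(Xi, C)"] by blast
qed

end
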